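(* Let $K$ be a non-archimedean local field, $V$ a finite-dimensional $K$-vector space, $\mathcal S$ the space of equivalence classes of seminorms on $V$ (which is homeomorphic to the compactification $\overline X$ of the Bruhat–Tits building of $PGL(V)$), and ${\mathbb P}(V)^{an}$ the Berkovich analytic projective space. Let $r:{\mathbb P}(V)^{an}\to\mathcal S$ and $j:\mathcal S\to{\mathbb P}(V)^{an}$ be the maps defined in the context. Then $r$ and $j$ are continuous and $r\circ j=\mathrm{id}_{\mathcal S}$. Moreover, $j$ is a homeomorphism from $\mathcal S$ onto its image $j(\mathcal S)$, which is a closed subset of ${\mathbb P}(V)^{an}$.
   Context: $|\cdot|$ is the absolute value of $K$. A seminorm on $V$ is a map $\gamma:V\to\mathbb R_{\ge0}$, not identically zero, with $\gamma(\lambda x)=|\lambda|\gamma(x)$ and $\gamma(x+y)\le\max\{\gamma(x),\gamma(y)\}$; two seminorms are equivalent if they differ by a positive constant factor; $\mathcal S$ is the set of equivalence classes, with the quotient topology of the topology of pointwise convergence on seminorms. Every seminorm is canonical with respect to some basis $w_1,\dots,w_n$ of $V$, i.e. $\gamma(\sum\lambda_iw_i)=\max_i|\lambda_i|\gamma(w_i)$. ${\mathbb P}(V)=\mathrm{Proj}\,\mathrm{Sym}\,V$, and ${\mathbb P}(V)^{an}$ is its Berkovich analytic space, identified with the set of equivalence classes of multiplicative seminorms on the polynomial ring $\mathrm{Sym}\,V$ extending the absolute value of $K$ and not vanishing identically on $V$, where $\alpha,\beta$ are equivalent iff there is $c>0$ with $\alpha(f)=c^d\beta(f)$ for all homogeneous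 $f$ of degree $d$; it carries the Berkovich topology. The map $r$ sends the class of $\alpha$ to the class of the restriction $\alpha|_V$. The map $j$ sends the class of a seminorm $\gamma$, canonical with respect to a basis $w_1,\dots,w_n$, to the class of the multiplicative seminorm $\alpha(\sum_\nu a_\nu w_1^{\nu_1}\cdots w_n^{\nu_n})=\max_\nu |a_\nu|\gamma(w_1)^{\nu_1}\cdots\gamma(w_n)^{\nu_n}$ (this is well defined). Both maps are $PGL(V)$-equivariant. *)

theory Defs
  imports "HOL-Analysis.Analysis" "HOL-Library.Poly_Mapping"
begin

text \<open>A non-archimedean local field: a field with a nontrivial non-archimedean
absolute value whose closed unit ball is (sequentially) compact for the metric
induced by the absolute value (equivalently: locally compact, complete, discretely
valued with finite residue field).\<close>

definition nonarch_local_field :: "('k::field \<Rightarrow> real) \<Rightarrow> bool" where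
  "nonarch_local_field absK \<longleftrightarrow>
     (\<forall>x. absK x \<ge> 0) \<and> (\<forall>x. absK x = 0 \<longleftrightarrow> x = 0) \<and>
     (\<forall>x y. absK (x * y) = absK x * absK y) \<and>
     (\<forall>x y. absK (x + y) \<le> max (absK x) (absK y)) \<and>
     (\<exists>x. absK x \<noteq> 0 \<and> absK x \<noteq> 1) \<and>
     (\<forall>s::nat \<Rightarrow> 'k. (\<forall>m. absK (s m) \<le> 1) \<longrightarrow>
        (\<exists>l h. absK l \<le> 1 \<and> strict_mono h \<and>
               (\<lambda>m. absK (s (h m) - l)) \<longlonglongrightarrow> 0))"

text \<open>V is modelled as 'n \<Rightarrow> 'k for a finite index type 'n (n = CARD('n)).\<close>

definition vsmul :: "'k::field \<Rightarrow> ('n \<Rightarrow> 'k) \<Rightarrow> ('n \<Rightarrow> 'k)" where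
  "vsmul c v = (\<lambda>i. c * v i)"

definition vadd :: "('n \<Rightarrow> 'k::field) \<Rightarrow> ('n \<Rightarrow> 'k) \<Rightarrow> ('n \<Rightarrow> 'k)" where
  "vadd v w = (\<lambda>i. v i + w i)"

definition lincomb :: "('n::finite \<Rightarrow> 'k::field) \<Rightarrow> ('n \<Rightarrow> ('n \<Rightarrow> 'k)) \<Rightarrow> ('n \<Rightarrow> 'k)" where
  "lincomb l w = (\<lambda>i. \<Sum>j\<in>UNIV. l j * w j i)"

definition is_basis :: "('n::finite \<Rightarrow> ('n \<Rightarrow> 'k::field)) \<Rightarrow> bool" where
  "is_basis w \<longleftrightarrow> (\<forall>v. \<exists>!l. lincomb l w = v)"

definition seminorm :: "('k::field \<Rightarrow> real) \<Rightarrow> (('n \<Rightarrow> 'k) \<Rightarrow> real) \<Rightarrow> bool" where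
  "seminorm absK \<gamma> \<longleftrightarrow>
     (\<forall>x. \<gamma> x \<ge> 0) \<and> (\<exists>x. \<gamma> x \<noteq> 0) \<and>
     (\<forall>c x. \<gamma> (vsmul c x) = absK c * \<gamma> x) \<and>
     (\<forall>x y. \<gamma> (vadd x y) \<le> max (\<gamma> x) (\<gamma> y))"

definition canonical_wrt ::
  "('k::field \<Rightarrow> real) \<Rightarrow> (('n::finite \<Rightarrow> 'k) \<Rightarrow> real) \<Rightarrow> ('n \<Rightarrow> ('n \<Rightarrow> 'k)) \<Rightarrow> bool" where
  "canonical_wrt absK \<gamma> w \<longleftrightarrow>
     is_basis w \<and> (\<forall>l. \<gamma> (lincomb l w) = (MAX i\<in>UNIV. absK (l i) * \<gamma> (w i)))"

definition seminorm_class :: "('k::field \<Rightarrow> real) \<Rightarrow> (('n \<Rightarrow> 'k) \<Rightarrow> real) \<Rightarrow> (('n \<Rightarrow> 'k) \<Rightarrow> real) set" where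
  "seminorm_class absK \<gamma> = {\<delta>. seminorm absK \<delta> \<and> (\<exists>c>0. \<forall>x. \<delta> x = c * \<gamma> x)}"

definition quotient_topology :: "'a topology \<Rightarrow> ('a \<Rightarrow> 'b) \<Rightarrow> 'b topology" where
  "quotient_topology X f =
     topology (\<lambda>U. U \<subseteq> f ` topspace X \<and> openin X {x \<in> topspace X. f x \<in> U})"

definition seminorm_top :: "('k::field \<Rightarrow> real) \<Rightarrow> (('n \<Rightarrow> 'k) \<Rightarrow> real) topology" where
  "seminorm_top absK = subtopology (product_topology (\<lambda>_. euclideanreal) UNIV) {\<gamma>. seminorm absK \<gamma>}"

definition S_top :: "('k::field \<Rightarrow> real) \<Rightarrow> (('n \<Rightarrow> 'k) \<Rightarrow> real) set topology" where
  "S_top absK = quotient_topology (seminorm_top absK) (seminorm_class absK)"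

type_synonym ('n, 'k) sympoly = "('n \<Rightarrow>\<^sub>0 nat) \<Rightarrow>\<^sub>0 'k"

definition pconst :: "'k::field \<Rightarrow> ('n, 'k) sympoly" where
  "pconst c = Poly_Mapping.single 0 c"

definition pvar :: "'n \<Rightarrow> ('n, 'k::field) sympoly" where
  "pvar i = Poly_Mapping.single (Poly_Mapping.single i 1) 1"

definition lin :: "('n::finite \<Rightarrow> 'k::field) \<Rightarrow> ('n, 'k) sympoly" where
  "lin v = (\<Sum>i\<in>UNIV. pconst (v i) * pvar i)"

definition mdeg :: "('n::finite \<Rightarrow>\<^sub>0 nat) \<Rightarrow> nat" where
  "mdeg \<nu> = (\<Sum>i\<in>UNIV. Poly_Mapping.lookup \<nu> i)"

definition homogeneous :: "nat \<Rightarrow> ('n::finite, 'k::field) sympoly \<Rightarrow> bool" where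
  "homogeneous d f \<longleftrightarrow> (\<forall>\<nu>\<in>Poly_Mapping.keys f. mdeg \<nu> = d)"

definition mult_seminorm :: "('k::field \<Rightarrow> real) \<Rightarrow> (('n::finite, 'k) sympoly \<Rightarrow> real) \<Rightarrow> bool" where
  "mult_seminorm absK \<alpha> \<longleftrightarrow>
     (\<forall>f. \<alpha> f \<ge> 0) \<and>
     (\<forall>f g. \<alpha> (f + g) \<le> \<alpha> f + \<alpha> g) \<and>
     (\<forall>f g. \<alpha> (f * g) = \<alpha> f * \<alpha> g) \<and>
     (\<forall>c. \<alpha> (pconst c) = absK c) \<and>
     (\<exists>v. \<alpha> (lin v) \<noteq> 0)"

definition mult_class ::
  "('k::field \<Rightarrow> real) \<Rightarrow> (('n::finite, 'k) sympoly \<Rightarrow> real) \<Rightarrow> (('n, 'k) sympoly \<Rightarrow> real) set" where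
  "mult_class absK \<alpha> = {\<beta>. mult_seminorm absK \<beta> \<and>
      (\<exists>c>0. \<forall>d f. homogeneous d f \<longrightarrow> \<beta> f = c ^ d * \<alpha> f)}"

definition mult_seminorm_top ::
  "('k::field \<Rightarrow> real) \<Rightarrow> (('n::finite, 'k) sympoly \<Rightarrow> real) topology" where
  "mult_seminorm_top absK =
     subtopology (product_topology (\<lambda>_. euclideanreal) UNIV) {\<alpha>. mult_seminorm absK \<alpha>}"

text \<open>P(V)^an with its Berkovich topology, realised as the quotient of the space of
multiplicative seminorms (pointwise convergence) by the scaling equivalence.\<close>

definition Pan_top ::
  "('k::field \<Rightarrow> real) \<Rightarrow> (('n::finite, 'k) sympoly \<Rightarrow> real) set topology" where
  "Pan_top absK = quotient_topology (mult_seminorm_top absK) (mult_class absK)"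

definition r_map ::
  "('k::field \<Rightarrow> real) \<Rightarrow> (('n::finite, 'k) sympoly \<Rightarrow> real) set \<Rightarrow> (('n \<Rightarrow> 'k) \<Rightarrow> real) set" where
  "r_map absK A = (\<Union>\<alpha>\<in>A. seminorm_class absK (\<alpha> \<circ> lin))"

text \<open>Substitution X_i \<mapsto> w_i: the K-algebra map Sym V \<rightarrow> Sym V sending the i-th
variable to the basis vector w i; thus f = subst w g means f = \<Sum>\<nu> a_\<nu> w^\<nu>.\<close>

definition subst :: "('n::finite \<Rightarrow> ('n \<Rightarrow> 'k::field)) \<Rightarrow> ('n, 'k) sympoly \<Rightarrow> ('n, 'k) sympoly" where
  "subst w g = (\<Sum>\<nu>\<in>Poly_Mapping.keys g. pconst (Poly_Mapping.lookup g \<nu>) * (\<Prod>i\<in>UNIV. lin (w i) ^ Poly_Mapping.lookup \<nu> i))"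

definition gauss :: "('k::field \<Rightarrow> real) \<Rightarrow> ('n::finite \<Rightarrow> real) \<Rightarrow> ('n, 'k) sympoly \<Rightarrow> real" where
  "gauss absK \<rho> g = Max ({absK (Poly_Mapping.lookup g \<nu>) * (\<Prod>i\<in>UNIV. \<rho> i ^ Poly_Mapping.lookup \<nu> i) | \<nu>. \<nu> \<in> Poly_Mapping.keys g} \<union> {0})"

text \<open>The multiplicative seminorm attached to \<gamma> canonical w.r.t. the basis w:
 \<alpha>(\<Sum> a_\<nu> w^\<nu>) = max |a_\<nu>| \<gamma>(w_1)^\<nu>_1 ... \<gamma>(w_n)^\<nu>_n.\<close>

definition j_rep ::
  "('k::field \<Rightarrow> real) \<Rightarrow> (('n::finite \<Rightarrow> 'k) \<Rightarrow> real) \<Rightarrow> ('n \<Rightarrow> ('n \<Rightarrow> 'k)) \<Rightarrow> ('n, 'k) sympoly \<Rightarrow> real" where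
  "j_rep absK \<gamma> w f = gauss absK (\<lambda>i. \<gamma> (w i)) (THE g. subst w g = f)"

definition j_map ::
  "('k::field \<Rightarrow> real) \<Rightarrow> (('n::finite \<Rightarrow> 'k) \<Rightarrow> real) set \<Rightarrow> (('n, 'k) sympoly \<Rightarrow> real) set" where
  "j_map absK C = (\<Union>\<gamma>\<in>C. \<Union>w\<in>{w. canonical_wrt absK \<gamma> w}. mult_class absK (j_rep absK \<gamma> w))"

end

theory Submission
  imports Defs
begin

locale nlf =
  fixes absK :: "'k::field \<Rightarrow> real"
  assumes nlf: "nonarch_local_field absK"
begin

lemmas nlf_c = nlf[unfolded nonarch_local_field_def]
lemma abs_nonneg[simp]: "absK x \<ge> 0" using conjunct1[OF nlf_c] by blast
lemma abs_zero_iff[simp]: "absK x = 0 \<longleftrightarrow> x = 0" using conjunct1[OF conjunct2[OF nlf_c]] by blast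
lemma abs_mult[simp]: "absK (x * y) = absK x * absK y" using conjunct1[OF conjunct2[OF conjunct2[OF nlf_c]]] by blast
lemma abs_ultra: "absK (x + y) \<le> max (absK x) (absK y)"
  using conjunct1[OF conjunct2[OF conjunct2[OF conjunct2[OF nlf_c]]]] by blast
lemma abs_nontriv: "\<exists>x. absK x \<noteq> 0 \<and> absK x \<noteq> 1"
  using conjunct1[OF conjunct2[OF conjunct2[OF conjunct2[OF conjunct2[OF nlf_c]]]]] by blast
lemma abs_seqcompact: "(\<forall>m. absK ((s::nat\<Rightarrow>'k) m) \<le> 1) \<Longrightarrow> (\<exists>l h. absK l \<le> 1 \<and> strict_mono h \<and>
               (\<lambda>m. absK (s (h m) - l)) \<longlonglongrightarrow> 0)"
  using conjunct2[OF conjunct2[OF conjunct2[OF conjunct2[OF conjunct2[OF nlf_c]]]]] by blast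

lemma abs_0[simp]: "absK 0 = 0" by simp
lemma abs_1[simp]: "absK 1 = 1"
proof -
  have "absK 1 = absK 1 * absK 1" using abs_mult[of 1 1] by simp
  then have "absK 1 * (absK 1 - 1) = 0" by (simp add: algebra_simps)
  moreover have "absK 1 \<noteq> 0" by simp
  ultimately show ?thesis by simp
qed
lemma abs_pos[simp]: "absK x > 0 \<longleftrightarrow> x \<noteq> 0"
  using abs_nonneg[of x] abs_zero_iff[of x] by linarith
lemma abs_m1[simp]: "absK (-1) = 1"
proof -
  have h: "absK (-1) * absK (-1) = 1" using abs_mult[of "-1" "-1"] by simp
  have "(absK (-1) - 1) * (absK (-1) + 1) = 0" using h by (simp add: algebra_simps)
  moreover have "absK (-1) + 1 > 0" using abs_nonneg[of "-1"] by linarith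
  ultimately show ?thesis by simp
qed
lemma abs_minus[simp]: "absK (- x) = absK x"
  using abs_mult[of "-1" x] by simp
lemma abs_diff_sym: "absK (x - y) = absK (y - x)"
proof -
  have "x - y = - (y - x)" by simp
  then show ?thesis by (simp only: abs_minus)
qed
lemma abs_inverse[simp]: "absK (inverse x) = inverse (absK x)"
proof (cases "x = 0")
  case False
  then have "absK x * absK (inverse x) = 1" using abs_mult[of x "inverse x"] by simp
  then show ?thesis by (metis inverse_unique)
qed simp
lemma abs_divide[simp]: "absK (x / y) = absK x / absK y"
  by (simp add: divide_inverse)
lemma abs_power[simp]: "absK (x ^ n) = absK x ^ n"
  by (induction n) auto
lemma abs_ultra_diff: "absK (x - y) \<le> max (absK x) (absK y)"
  using abs_ultra[of x "-y"] by simp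
lemma abs_strict: assumes "absK x < absK y" shows "absK (x + y) = absK y"
proof -
  have "absK (x + y) \<le> absK y" using abs_ultra[of x y] assms by simp
  moreover have "absK y \<le> max (absK (x + y)) (absK x)"
    using abs_ultra[of "x + y" "-x"] by simp
  ultimately show ?thesis using assms by linarith
qed
lemma abs_strict': assumes "absK y < absK x" shows "absK (x + y) = absK x"
  using abs_strict[OF assms] by (simp add: add.commute)

lemma abs_sum_le: assumes "finite S" "\<And>i. i \<in> S \<Longrightarrow> absK (f i) \<le> M" "0 \<le> M"
  shows "absK (sum f S) \<le> M"
  using assms
proof (induction S rule: finite_induct)
  case (insert x F)
  have "absK (f x + sum f F) \<le> max (absK (f x)) (absK (sum f F))" by (rule abs_ultra)
  also have "\<dots> \<le> M" using insert by simp
  finally show ?case using insert by simp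
qed simp

lemma abs_of_nat: "absK (of_nat n) \<le> 1"
proof (induction n)
  case (Suc n)
  then show ?case using abs_ultra[of 1 "of_nat n"] by simp
qed simp

lemma abs_max_shift: assumes "absK c \<le> m"
  shows "max (absK (a + c)) m = max (absK a) m"
proof -
  have "absK (a + c) \<le> max (absK a) m" using abs_ultra[of a c] assms by simp
  moreover have "absK a \<le> max (absK (a + c)) m" using abs_ultra[of "a + c" "-c"] assms by simp
  ultimately show ?thesis by linarith
qed

lemma exists_small: "\<exists>p. 0 < absK p \<and> absK p < 1"
proof -
  obtain x where x: "absK x \<noteq> 0" "absK x \<noteq> 1" using abs_nontriv by blast
  show ?thesis
  proof (cases "absK x < 1")
    case True then show ?thesis using x by (intro exI[of _ x]) simp
  next
    case False
    then have "absK x > 1" using x by simp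
    then show ?thesis using x by (intro exI[of _ "inverse x"]) (simp add: inverse_less_1_iff)
  qed
qed

lemma exists_large: assumes "R \<ge> 0" shows "\<exists>c. absK c \<ge> R \<and> c \<noteq> 0"
proof -
  obtain p where p: "0 < absK p" "absK p < 1" using exists_small by blast
  have "inverse (absK p) > 1" using p by (simp add: one_less_inverse)
  then obtain n where "R < inverse (absK p) ^ n" using real_arch_pow by blast
  then show ?thesis using p
    by (intro exI[of _ "inverse p ^ n"]) (auto simp: power_inverse)
qed

lemma seqcompact_bounded:
  fixes s :: "nat \<Rightarrow> 'k"
  assumes "\<And>m. absK (s m) \<le> R"
  shows "\<exists>l h. absK l \<le> R \<and> strict_mono h \<and> (\<lambda>m. absK (s (h m) - l)) \<longlonglongrightarrow> 0"
proof -
  have R0: "R \<ge> 0" using assms[of 0] abs_nonneg[of "s 0"] by linarith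
  obtain c where c: "absK c \<ge> R" "c \<noteq> 0" using exists_large[OF R0] by blast
  have "absK (s m) \<le> absK c" for m using assms[of m] c(1) by linarith
  then have "\<forall>m. absK (s m / c) \<le> 1" using c by (simp add: divide_le_eq)
  then obtain l h where lh: "absK l \<le> 1" "strict_mono h" "(\<lambda>m. absK (s (h m) / c - l)) \<longlonglongrightarrow> 0"
    using abs_seqcompact[of "\<lambda>m. s m / c"] by blast
  have eq: "absK (s (h m) - c * l) = absK c * absK (s (h m) / c - l)" for m
  proof -
    have "s (h m) - c * l = c * (s (h m) / c - l)" using c by (simp add: field_simps)
    then show ?thesis by simp
  qed
  have lim: "(\<lambda>m. absK (s (h m) - c * l)) \<longlonglongrightarrow> 0"
    unfolding eq using tendsto_mult_right_zero[OF lh(3)] by simp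
  have "absK (c * l) \<le> R"
  proof (rule ccontr)
    assume "\<not> ?thesis"
    then have gt: "absK (c * l) > R" by simp
    then have "eventually (\<lambda>m. absK (s (h m) - c * l) < absK (c * l) - R) sequentially"
      using lim by (simp add: order_tendstoD(2))
    then obtain m where m: "absK (s (h m) - c * l) < absK (c * l) - R" by (meson eventually_sequentially order.refl)
    have "absK (c * l) \<le> max (absK (s (h m))) (absK (s (h m) - c * l))"
      using abs_ultra_diff[of "s (h m)" "s (h m) - c * l"] by simp
    then show False using m assms[of "h m"] gt R0 unfolding max_def by (auto split: if_splits)
  qed
  then show ?thesis using lh lim by blast
qed

end

definition sn :: "('k::field \<Rightarrow> real) \<Rightarrow> (('n \<Rightarrow> 'k) \<Rightarrow> real) \<Rightarrow> bool" where
  "sn absK \<gamma> \<longleftrightarrow> (\<forall>x. \<gamma> x \<ge> 0) \<and> (\<forall>c x. \<gamma> (vsmul c x) = absK c * \<gamma> x) \<and>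
     (\<forall>x y. \<gamma> (vadd x y) \<le> max (\<gamma> x) (\<gamma> y))"

definition nrm :: "('k::field \<Rightarrow> real) \<Rightarrow> ('n::finite \<Rightarrow> 'k) \<Rightarrow> real" where
  "nrm absK x = (MAX i\<in>UNIV. absK (x i))"

definition lcI :: "'n set \<Rightarrow> ('n \<Rightarrow> 'k::field) \<Rightarrow> ('n \<Rightarrow> ('n \<Rightarrow> 'k)) \<Rightarrow> ('n \<Rightarrow> 'k)" where
  "lcI I l k = (\<lambda>i. \<Sum>j\<in>I. l j * k j i)"

definition VI :: "'n set \<Rightarrow> ('n \<Rightarrow> 'k::zero) set" where
  "VI I = {x. \<forall>i. i \<notin> I \<longrightarrow> x i = 0}"

definition Mx :: "'n set \<Rightarrow> ('n \<Rightarrow> real) \<Rightarrow> real" where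
  "Mx I f = Max (insert 0 (f ` I))"

definition ev :: "'n \<Rightarrow> ('n \<Rightarrow> 'k::{zero,one})" where
  "ev j = (\<lambda>i. if i = j then 1 else 0)"

lemma Mx_ge: "finite I \<Longrightarrow> j \<in> I \<Longrightarrow> f j \<le> Mx I f"
  unfolding Mx_def by (rule Max_ge) auto
lemma Mx_nonneg: "finite I \<Longrightarrow> 0 \<le> Mx I f"
  unfolding Mx_def by (rule Max_ge) auto
lemma Mx_le: "finite I \<Longrightarrow> (\<And>j. j \<in> I \<Longrightarrow> f j \<le> M) \<Longrightarrow> 0 \<le> M \<Longrightarrow> Mx I f \<le> M"
  unfolding Mx_def by (rule Max.boundedI) auto
lemma Mx_attained: "finite I \<Longrightarrow> Mx I f = 0 \<or> (\<exists>j\<in>I. Mx I f = f j)"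
proof -
  assume "finite I"
  then have "Mx I f \<in> insert 0 (f ` I)" unfolding Mx_def by (intro Max_in) auto
  then show ?thesis by auto
qed
lemma Mx_eq_MAX: assumes "finite I" "I \<noteq> {}" "\<And>j. j \<in> I \<Longrightarrow> f j \<ge> 0"
  shows "Mx I f = (MAX j\<in>I. f j)"
proof (rule antisym)
  show "Mx I f \<le> (MAX j\<in>I. f j)"
  proof (rule Mx_le[OF assms(1)])
    show "f j \<le> (MAX j\<in>I. f j)" if "j \<in> I" for j using assms that by (intro Max_ge) auto
    obtain j where "j \<in> I" using assms by blast
    then show "0 \<le> (MAX j\<in>I. f j)" using assms by (meson Max_ge finite_imageI image_eqI order_trans)
  qed
  show "(MAX j\<in>I. f j) \<le> Mx I f" using assms by (intro Max.boundedI) (auto intro: Mx_ge)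
qed
lemma Mx_mono: "finite I \<Longrightarrow> (\<And>j. j \<in> I \<Longrightarrow> f j \<le> g j) \<Longrightarrow> Mx I f \<le> Mx I g"
  by (rule Mx_le) (auto intro: Mx_ge Mx_nonneg order_trans)
lemma Mx_insert: assumes "finite I" shows "Mx (insert p I) f = max (f p) (Mx I f)"
proof (rule antisym)
  show "Mx (insert p I) f \<le> max (f p) (Mx I f)"
    using assms by (intro Mx_le) (auto intro: Mx_ge Mx_nonneg max.coboundedI2)
  show "max (f p) (Mx I f) \<le> Mx (insert p I) f"
    using assms by (auto intro!: Mx_ge Mx_le Mx_nonneg)
qed
lemma Mx_empty[simp]: "Mx {} f = 0" unfolding Mx_def by simp
lemma Mx_scale: assumes "finite I" "c \<ge> 0" shows "Mx I (\<lambda>j. c * f j) = c * Mx I f"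
proof (rule antisym)
  show "Mx I (\<lambda>j. c * f j) \<le> c * Mx I f"
    using assms by (intro Mx_le) (auto intro: mult_left_mono Mx_ge Mx_nonneg mult_nonneg_nonneg)
  show "c * Mx I f \<le> Mx I (\<lambda>j. c * f j)"
  proof (cases "Mx I f = 0")
    case True then show ?thesis using Mx_nonneg[OF assms(1)] by simp
  next
    case False
    then obtain j where "j \<in> I" "Mx I f = f j" using Mx_attained[OF assms(1), of f] by auto
    then show ?thesis using Mx_ge[OF assms(1), of j "\<lambda>j. c * f j"] by simp
  qed
qed

lemma vsmul_apply: "vsmul c x = (\<lambda>i. c * x i)" by (simp add: vsmul_def)
lemma vadd_apply: "vadd x y = (\<lambda>i. x i + y i)" by (simp add: vadd_def)

lemma lincomb_lcI: "lincomb l w = lcI UNIV l w" unfolding lincomb_def lcI_def by simp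

context nlf
begin

lemma sn_nonneg: "sn absK \<gamma> \<Longrightarrow> \<gamma> x \<ge> 0" unfolding sn_def by blast
lemma sn_smul: "sn absK \<gamma> \<Longrightarrow> \<gamma> (\<lambda>i. c * x i) = absK c * \<gamma> x"
  unfolding sn_def vsmul_def by blast
lemma sn_add: "sn absK \<gamma> \<Longrightarrow> \<gamma> (\<lambda>i. x i + y i) \<le> max (\<gamma> x) (\<gamma> y)"
  unfolding sn_def vadd_def by blast
lemma sn_zero: assumes "sn absK \<gamma>" shows "\<gamma> (\<lambda>_. 0) = 0"
  using sn_smul[OF assms, of 0 "\<lambda>_. 0"] by simp
lemma sn_neg: assumes "sn absK \<gamma>" shows "\<gamma> (\<lambda>i. - x i) = \<gamma> x"
  using sn_smul[OF assms, of "-1" x] by simp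
lemma sn_diff: assumes "sn absK \<gamma>" shows "\<gamma> (\<lambda>i. x i - y i) \<le> max (\<gamma> x) (\<gamma> y)"
  using sn_add[OF assms, of x "\<lambda>i. - y i"] sn_neg[OF assms, of y] by simp
lemma sn_diff_sym: assumes "sn absK \<gamma>" shows "\<gamma> (\<lambda>i. x i - y i) = \<gamma> (\<lambda>i. y i - x i)"
  using sn_neg[OF assms, of "\<lambda>i. y i - x i"] by simp
lemma sn_lip: assumes "sn absK \<gamma>" shows "\<bar>\<gamma> x - \<gamma> y\<bar> \<le> \<gamma> (\<lambda>i. x i - y i)"
proof -
  have 1: "\<gamma> x \<le> max (\<gamma> (\<lambda>i. x i - y i)) (\<gamma> y)" using sn_add[OF assms, of "\<lambda>i. x i - y i" y] by simp
  have 2: "\<gamma> y \<le> max (\<gamma> (\<lambda>i. y i - x i)) (\<gamma> x)" using sn_add[OF assms, of "\<lambda>i. y i - x i" x] by simp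
  have 3: "\<gamma> (\<lambda>i. y i - x i) = \<gamma> (\<lambda>i. x i - y i)" using sn_diff_sym[OF assms, of y x] by simp
  have 4: "\<gamma> (\<lambda>i. x i - y i) \<ge> 0" using sn_nonneg[OF assms] .
  have 5: "\<gamma> x \<ge> 0" "\<gamma> y \<ge> 0" using sn_nonneg[OF assms] by auto
  show ?thesis using 1 2 3 4 5 unfolding max_def by (auto split: if_splits)
qed
lemma sn_strict: assumes "sn absK \<gamma>" "\<gamma> x < \<gamma> y" shows "\<gamma> (\<lambda>i. x i + y i) = \<gamma> y"
proof -
  have "\<gamma> (\<lambda>i. x i + y i) \<le> \<gamma> y" using sn_add[OF assms(1), of x y] assms by simp
  moreover have "\<gamma> y \<le> max (\<gamma> (\<lambda>i. x i + y i)) (\<gamma> x)"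
    using sn_diff[OF assms(1), of "\<lambda>i. x i + y i" x] by simp
  ultimately show ?thesis using assms by linarith
qed
lemma sn_sum: assumes "sn absK \<gamma>" "finite I" "\<And>j. j \<in> I \<Longrightarrow> \<gamma> (f j) \<le> M" "0 \<le> M"
  shows "\<gamma> (\<lambda>i. \<Sum>j\<in>I. f j i) \<le> M"
  using assms(2,3)
proof (induction I rule: finite_induct)
  case empty then show ?case using sn_zero[OF assms(1)] assms(4) by simp
next
  case (insert x F)
  have "\<gamma> (\<lambda>i. \<Sum>j\<in>insert x F. f j i) = \<gamma> (\<lambda>i. f x i + (\<Sum>j\<in>F. f j i))" using insert by simp
  also have "\<dots> \<le> max (\<gamma> (f x)) (\<gamma> (\<lambda>i. \<Sum>j\<in>F. f j i))" using sn_add[OF assms(1)] by simp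
  also have "\<dots> \<le> M" using insert by simp
  finally show ?case .
qed
lemma sn_lc: assumes "sn absK \<gamma>" "finite I"
  shows "\<gamma> (lcI I l k) \<le> Mx I (\<lambda>j. absK (l j) * \<gamma> (k j))"
  unfolding lcI_def
  by (rule sn_sum[OF assms]) (auto simp: sn_smul[OF assms(1)] intro: Mx_ge Mx_nonneg assms(2))

lemma nrm_ge: "absK (x i) \<le> nrm absK x" unfolding nrm_def by (rule Max_ge) auto
lemma nrm_le: "(\<And>i. absK (x i) \<le> M) \<Longrightarrow> nrm absK x \<le> M" unfolding nrm_def by (rule Max.boundedI) auto
lemma nrm_attained: "\<exists>i. nrm absK x = absK (x i)"
proof -
  have "nrm absK x \<in> range (\<lambda>i. absK (x i))" unfolding nrm_def by (rule Max_in) auto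
  then show ?thesis by auto
qed
lemma nrm_nonneg: "nrm absK x \<ge> 0" using nrm_ge[of x] abs_nonneg order_trans by blast
lemma sn_nrm: "sn absK (nrm absK :: ('n::finite \<Rightarrow> 'k) \<Rightarrow> real)"
  unfolding sn_def
proof (intro conjI allI)
  fix x :: "'n \<Rightarrow> 'k" show "nrm absK x \<ge> 0" by (rule nrm_nonneg)
next
  fix c and x :: "'n \<Rightarrow> 'k"
  show "nrm absK (vsmul c x) = absK c * nrm absK x"
  proof (rule antisym)
    show "nrm absK (vsmul c x) \<le> absK c * nrm absK x"
      by (rule nrm_le) (auto simp: vsmul_def intro: mult_left_mono nrm_ge)
    obtain i where "nrm absK x = absK (x i)" using nrm_attained by blast
    then show "absK c * nrm absK x \<le> nrm absK (vsmul c x)"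
      using nrm_ge[of "vsmul c x" i] by (simp add: vsmul_def)
  qed
next
  fix x y :: "'n \<Rightarrow> 'k"
  show "nrm absK (vadd x y) \<le> max (nrm absK x) (nrm absK y)"
  proof (rule nrm_le)
    fix i
    have "absK (vadd x y i) \<le> max (absK (x i)) (absK (y i))" by (simp add: vadd_def abs_ultra)
    also have "\<dots> \<le> max (nrm absK x) (nrm absK y)" using nrm_ge[of x i] nrm_ge[of y i] by (rule max.mono)
    finally show "absK (vadd x y i) \<le> max (nrm absK x) (nrm absK y)" .
  qed
qed

lemma lcI_ev: "(x :: 'n::finite \<Rightarrow> 'k) = lcI UNIV x ev"
  unfolding lcI_def ev_def by (rule ext) (simp add: if_distrib sum.delta sum.delta' cong: if_cong)

lemma sn_bound_nrm: assumes "sn absK \<gamma>"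
  shows "\<gamma> (x :: 'n::finite \<Rightarrow> 'k) \<le> nrm absK x * Mx UNIV (\<lambda>i. \<gamma> (ev i))"
proof -
  have "\<gamma> x = \<gamma> (lcI UNIV x ev)" using lcI_ev[of x] by simp
  also have "\<dots> \<le> Mx UNIV (\<lambda>j. absK (x j) * \<gamma> (ev j))" by (rule sn_lc[OF assms]) simp
  also have "\<dots> \<le> Mx UNIV (\<lambda>j. nrm absK x * \<gamma> (ev j))"
    by (rule Mx_mono) (auto intro: mult_right_mono nrm_ge sn_nonneg[OF assms])
  also have "\<dots> = nrm absK x * Mx UNIV (\<lambda>i. \<gamma> (ev i))" by (rule Mx_scale) (auto simp: nrm_nonneg)
  finally show ?thesis .
qed

lemma sn_cont_bound: assumes "sn absK \<gamma>"
  shows "\<bar>\<gamma> (x :: 'n::finite \<Rightarrow> 'k) - \<gamma> y\<bar> \<le> nrm absK (\<lambda>i. x i - y i) * Mx UNIV (\<lambda>i. \<gamma> (ev i))"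
  using sn_lip[OF assms, of x y] sn_bound_nrm[OF assms, of "\<lambda>i. x i - y i"] by linarith

lemma nrm_sum_bound: "nrm absK x \<le> (\<Sum>i\<in>UNIV. absK (x i))"
  by (rule nrm_le) (rule member_le_sum, auto)

lemma nrm_tendsto: assumes "\<And>i. (\<lambda>m. absK (s m i)) \<longlonglongrightarrow> 0"
  shows "(\<lambda>m. nrm absK (s m :: 'n::finite \<Rightarrow> 'k)) \<longlonglongrightarrow> 0"
proof -
  have "(\<lambda>m. \<Sum>i\<in>UNIV. absK (s m i)) \<longlonglongrightarrow> (\<Sum>i\<in>(UNIV::'n set). 0)"
    by (rule tendsto_sum) (use assms in auto)
  then have "(\<lambda>m. \<Sum>i\<in>UNIV. absK (s m i)) \<longlonglongrightarrow> 0" by simp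
  then show ?thesis
    by (rule Lim_null_comparison[rotated]) (auto simp: nrm_nonneg nrm_sum_bound)
qed

lemma vec_seqcompact:
  fixes s :: "nat \<Rightarrow> ('n::finite \<Rightarrow> 'k)"
  assumes "\<And>m i. absK (s m i) \<le> R"
  shows "\<exists>l h. strict_mono h \<and> (\<forall>i. absK (l i) \<le> R) \<and> (\<forall>i. (\<lambda>m. absK (s (h m) i - l i)) \<longlonglongrightarrow> 0)"
proof -
  have R0: "R \<ge> 0" using assms[of 0] abs_nonneg order_trans by blast
  have "\<exists>l h. strict_mono (h::nat\<Rightarrow>nat) \<and> (\<forall>i. absK (l i) \<le> R) \<and> (\<forall>i\<in>S. (\<lambda>m. absK (s (h m) i - l i)) \<longlonglongrightarrow> 0)"
    if "finite S" for S :: "'n set"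
    using that
  proof (induction S rule: finite_induct)
    case empty
    show ?case by (intro exI[of _ "\<lambda>_. 0"] exI[of _ id]) (auto simp: strict_mono_def R0)
  next
    case (insert j S)
    then obtain l h where lh: "strict_mono (h::nat\<Rightarrow>nat)" "\<forall>i. absK (l i) \<le> R"
        "\<forall>i\<in>S. (\<lambda>m. absK (s (h m) i - l i)) \<longlonglongrightarrow> 0" by blast
    obtain a h2 where ah: "absK a \<le> R" "strict_mono h2" "(\<lambda>m. absK (s (h (h2 m)) j - a)) \<longlonglongrightarrow> 0"
      using seqcompact_bounded[of "\<lambda>m. s (h m) j" R] assms by blast
    define l' where "l' = l(j := a)"
    show ?case
    proof (intro exI[of _ l'] exI[of _ "h \<circ> h2"] conjI ballI allI)
      show "strict_mono (h \<circ> h2)" using lh(1) ah(2) by (rule strict_mono_o)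
      show "absK (l' i) \<le> R" for i using lh ah unfolding l'_def by auto
      fix i assume i: "i \<in> insert j S"
      show "(\<lambda>m. absK (s ((h \<circ> h2) m) i - l' i)) \<longlonglongrightarrow> 0"
      proof (cases "i = j")
        case True then show ?thesis using ah unfolding l'_def by simp
      next
        case False
        then have "i \<in> S" using i by simp
        then have "(\<lambda>m. absK (s (h m) i - l i)) \<longlonglongrightarrow> 0" using lh by blast
        from LIMSEQ_subseq_LIMSEQ[OF this ah(2)] show ?thesis using False unfolding l'_def by (simp add: o_def)
      qed
    qed
  qed
  from this[of UNIV] show ?thesis by auto
qed

end

context nlf
begin

lemma lim_le_aux: fixes x m :: real
  assumes "\<And>k. x \<le> m + e k" "e \<longlonglongrightarrow> 0" shows "x \<le> m"
proof -
  have "(\<lambda>k. m + e k) \<longlonglongrightarrow> m" using tendsto_add[OF tendsto_const assms(2), of m] by simp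
  then show ?thesis by (rule LIMSEQ_le_const) (use assms(1) in auto)
qed

lemma inv_suc_subseq: "strict_mono h \<Longrightarrow> (\<lambda>k. 1 / real (Suc (h k))) \<longlonglongrightarrow> 0"
  using LIMSEQ_subseq_LIMSEQ[OF LIMSEQ_inverse_real_of_nat] by (simp add: o_def divide_inverse)

lemma nrm_ev: "nrm absK (ev j :: 'n::finite \<Rightarrow> 'k) = 1"
proof (rule antisym)
  show "nrm absK (ev j :: 'n \<Rightarrow> 'k) \<le> 1" by (rule nrm_le) (simp add: ev_def)
  show "1 \<le> nrm absK (ev j :: 'n \<Rightarrow> 'k)" using nrm_ge[of "ev j :: 'n \<Rightarrow> 'k" j] by (simp add: ev_def)
qed

lemma sn_min_sphere:
  fixes \<gamma> :: "('n::finite \<Rightarrow> 'k) \<Rightarrow> real"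
  assumes sn: "sn absK \<gamma>" and I: "I \<noteq> {}"
  shows "\<exists>v\<in>VI I. nrm absK v = 1 \<and> (\<forall>x\<in>VI I. nrm absK x = 1 \<longrightarrow> \<gamma> v \<le> \<gamma> x)"
proof -
  define S where "S = {x \<in> VI I. nrm absK x = 1}"
  obtain j where j: "j \<in> I" using I by blast
  have "ev j \<in> VI I" using j unfolding VI_def by (auto simp: ev_def)
  then have "ev j \<in> S" using nrm_ev[of j] unfolding S_def by simp
  then have Sne: "\<gamma> ` S \<noteq> {}" by blast
  define m where "m = Inf (\<gamma> ` S)"
  have bdd: "bdd_below (\<gamma> ` S)" using sn_nonneg[OF sn] by (intro bdd_belowI[of _ 0]) auto
  have mle: "m \<le> \<gamma> x" if "x \<in> S" for x unfolding m_def using bdd that by (intro cInf_lower) auto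
  have "\<exists>x\<in>S. \<gamma> x < m + 1 / real (Suc k)" for k
  proof -
    have "Inf (\<gamma> ` S) < m + 1 / real (Suc k)" unfolding m_def by simp
    from cInf_lessD[OF Sne this] show ?thesis by blast
  qed
  then obtain s where s: "\<And>k. s k \<in> S" "\<And>k. \<gamma> (s k) < m + 1 / real (Suc k)" by metis
  have sb: "absK (s k i) \<le> 1" for k i using s(1)[of k] nrm_ge[of "s k" i] unfolding S_def by auto
  obtain l h where lh: "strict_mono h" "\<And>i. (\<lambda>k. absK (s (h k) i - l i)) \<longlonglongrightarrow> 0"
    using vec_seqcompact[of s 1, OF sb] by blast
  have lim1: "(\<lambda>k. nrm absK (\<lambda>i. s (h k) i - l i)) \<longlonglongrightarrow> 0" by (rule nrm_tendsto) (use lh in auto)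
  have lim2: "(\<lambda>k. nrm absK (\<lambda>i. l i - s (h k) i)) \<longlonglongrightarrow> 0"
    using lim1 by (simp only: sn_diff_sym[OF sn_nrm, of l])
  have lVI: "l \<in> VI I" unfolding VI_def
  proof (intro CollectI allI impI)
    fix i assume "i \<notin> I"
    then have "\<And>k. s (h k) i = 0" using s(1) unfolding S_def VI_def by auto
    then have "(\<lambda>k. absK (l i)) \<longlonglongrightarrow> 0" using lh(2)[of i] by simp
    then have "absK (l i) = 0" by (simp only: LIMSEQ_const_iff)
    then show "l i = 0" by simp
  qed
  have "nrm absK l = 1"
  proof -
    have "\<bar>1 - nrm absK l\<bar> \<le> nrm absK (\<lambda>i. s (h k) i - l i)" for k
      using sn_lip[OF sn_nrm, of "s (h k)" l] s(1)[of "h k"] unfolding S_def by auto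
    then have "\<bar>1 - nrm absK l\<bar> \<le> 0 + nrm absK (\<lambda>i. s (h k) i - l i)" for k by simp
    from lim_le_aux[OF this lim1] show ?thesis by simp
  qed
  moreover have "\<gamma> l \<le> m"
  proof (rule lim_le_aux)
    define C where "C = Mx UNIV (\<lambda>i. \<gamma> (ev i :: 'n \<Rightarrow> 'k))"
    show "\<gamma> l \<le> m + (1 / real (Suc (h k)) + nrm absK (\<lambda>i. l i - s (h k) i) * C)" for k
      using sn_cont_bound[OF sn, of l "s (h k)"] s(2)[of "h k"] unfolding C_def by linarith
    show "(\<lambda>k. 1 / real (Suc (h k)) + nrm absK (\<lambda>i. l i - s (h k) i) * C) \<longlonglongrightarrow> 0"
      using tendsto_add[OF inv_suc_subseq[OF lh(1)] tendsto_mult_left_zero[OF lim2, of C]] by simp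
  qed
  ultimately show ?thesis using lVI mle unfolding S_def by (intro bexI[of _ l]) force+
qed

lemma sn_min_line:
  fixes \<gamma> :: "('n::finite \<Rightarrow> 'k) \<Rightarrow> real"
  assumes sn: "sn absK \<gamma>"
  shows "\<exists>a. \<forall>b. \<gamma> (\<lambda>i. y i + a * v i) \<le> \<gamma> (\<lambda>i. y i + b * v i)"
proof (cases "\<gamma> v = 0")
  case True
  show ?thesis
  proof (intro exI[of _ 0] allI)
    fix b
    have "\<gamma> y \<le> max (\<gamma> (\<lambda>i. y i + b * v i)) (\<gamma> (\<lambda>i. b * v i))"
      using sn_diff[OF sn, of "\<lambda>i. y i + b * v i" "\<lambda>i. b * v i"] by simp
    then show "\<gamma> (\<lambda>i. y i + 0 * v i) \<le> \<gamma> (\<lambda>i. y i + b * v i)"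
      using True sn_smul[OF sn, of b v] sn_nonneg[OF sn, of "\<lambda>i. y i + b * v i"] by simp
  qed
next
  case False
  then have gv: "\<gamma> v > 0" using sn_nonneg[OF sn, of v] by simp
  define \<phi> where "\<phi> b = \<gamma> (\<lambda>i. y i + b * v i)" for b
  define R where "R = \<gamma> y / \<gamma> v"
  have far: "\<phi> b > \<phi> 0" if "absK b > R" for b
  proof -
    have "\<gamma> y < absK b * \<gamma> v" using that gv unfolding R_def by (simp add: divide_less_eq)
    then have "\<gamma> (\<lambda>i. y i + b * v i) = \<gamma> (\<lambda>i. b * v i)"
      using sn_strict[OF sn, of y "\<lambda>i. b * v i"] sn_smul[OF sn, of b v] by simp
    then show ?thesis unfolding \<phi>_def using sn_smul[OF sn, of b v] \<open>\<gamma> y < absK b * \<gamma> v\<close> by simp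
  qed
  define T where "T = {a. absK a \<le> R}"
  have R0: "R \<ge> 0" unfolding R_def using sn_nonneg[OF sn, of y] gv by simp
  have "0 \<in> T" unfolding T_def using R0 by simp
  then have Tne: "\<phi> ` T \<noteq> {}" by blast
  define m where "m = Inf (\<phi> ` T)"
  have bdd: "bdd_below (\<phi> ` T)" unfolding \<phi>_def using sn_nonneg[OF sn] by (intro bdd_belowI[of _ 0]) auto
  have mle: "m \<le> \<phi> b" if "b \<in> T" for b unfolding m_def using bdd that by (intro cInf_lower) auto
  have "\<exists>a\<in>T. \<phi> a < m + 1 / real (Suc k)" for k
  proof -
    have "Inf (\<phi> ` T) < m + 1 / real (Suc k)" unfolding m_def by simp
    from cInf_lessD[OF Tne this] show ?thesis by blast
  qed
  then obtain s where s: "\<And>k. s k \<in> T" "\<And>k. \<phi> (s k) < m + 1 / real (Suc k)" by metis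
  obtain a h where ah: "absK a \<le> R" "strict_mono h" "(\<lambda>k. absK (s (h k) - a)) \<longlonglongrightarrow> 0"
    using seqcompact_bounded[of s R] s(1) unfolding T_def by blast
  have lip: "\<phi> a \<le> \<phi> b + absK (a - b) * \<gamma> v" for b
  proof -
    have "\<bar>\<phi> a - \<phi> b\<bar> \<le> \<gamma> (\<lambda>i. (y i + a * v i) - (y i + b * v i))"
      unfolding \<phi>_def by (rule sn_lip[OF sn])
    also have "(\<lambda>i. (y i + a * v i) - (y i + b * v i)) = (\<lambda>i. (a - b) * v i)" by (simp add: algebra_simps)
    finally show ?thesis using sn_smul[OF sn, of "a - b" v] by simp
  qed
  have "\<phi> a \<le> m"
  proof (rule lim_le_aux)
    show "\<phi> a \<le> m + (1 / real (Suc (h k)) + absK (s (h k) - a) * \<gamma> v)" for k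
    proof -
      have "absK (a - s (h k)) * \<gamma> v = absK (s (h k) - a) * \<gamma> v" by (simp add: abs_diff_sym)
      then show ?thesis using lip[of "s (h k)"] s(2)[of "h k"] by linarith
    qed
    show "(\<lambda>k. 1 / real (Suc (h k)) + absK (s (h k) - a) * \<gamma> v) \<longlonglongrightarrow> 0"
      using tendsto_add[OF inv_suc_subseq[OF ah(2)] tendsto_mult_left_zero[OF ah(3), of "\<gamma> v"]] by simp
  qed
  have "\<phi> a \<le> \<phi> b" for b
  proof (cases "b \<in> T")
    case True then show ?thesis using mle \<open>\<phi> a \<le> m\<close> by fastforce
  next
    case False
    then have "\<phi> b > \<phi> 0" using far unfolding T_def by simp
    then show ?thesis using mle[OF \<open>0 \<in> T\<close>] \<open>\<phi> a \<le> m\<close> by linarith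
  qed
  then show ?thesis unfolding \<phi>_def by blast
qed

end

lemma lcI_VI: "(\<And>j. j \<in> I \<Longrightarrow> k j \<in> VI I) \<Longrightarrow> lcI I l k \<in> VI I"
  unfolding VI_def lcI_def by (auto intro!: sum.neutral)

lemma VI_mono: "I \<subseteq> J \<Longrightarrow> VI I \<subseteq> VI J" unfolding VI_def by auto

lemma lcI_empty: "lcI {} l k = (\<lambda>_. 0)" unfolding lcI_def by simp

lemma lcI_cong: "(\<And>j. j \<in> I \<Longrightarrow> l j = l' j) \<Longrightarrow> lcI I l k = lcI I l' k"
  unfolding lcI_def by auto

lemma lcI_decomp:
  assumes "finite J" "p \<notin> J"
    and "\<And>j. j \<in> J \<Longrightarrow> k' j = (\<lambda>i. k j i + A j * v i)" "k' p = v"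
  shows "lcI (insert p J) l k' = (\<lambda>i. (l p + (\<Sum>j\<in>J. l j * A j)) * v i + lcI J l k i)"
proof
  fix i
  have "lcI (insert p J) l k' i = l p * v i + (\<Sum>j\<in>J. l j * (k j i + A j * v i))"
    unfolding lcI_def using assms by simp
  also have "\<dots> = (l p + (\<Sum>j\<in>J. l j * A j)) * v i + lcI J l k i"
    unfolding lcI_def by (simp add: algebra_simps sum.distrib sum_distrib_left mult_ac)
  finally show "lcI (insert p J) l k' i = (l p + (\<Sum>j\<in>J. l j * A j)) * v i + lcI J l k i" .
qed

context nlf
begin

lemma nrm_zero: "nrm absK (\<lambda>_::'n::finite. 0::'k) = 0"
  using sn_zero[OF sn_nrm] by simp

lemma GI_step_props:
  fixes \<gamma> :: "('n::finite \<Rightarrow> 'k) \<Rightarrow> real"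
  assumes sn: "sn absK \<gamma>" and I: "I \<noteq> {}"
    and IH: "\<And>J g. J \<subset> I \<Longrightarrow> sn absK g \<Longrightarrow> \<exists>k. (\<forall>j\<in>J. k j \<in> VI J \<and> nrm absK (k j) = 1) \<and>
            (\<forall>l. nrm absK (lcI J l k) = Mx J (\<lambda>j. absK (l j))) \<and>
            (\<forall>l. (g :: ('n \<Rightarrow> 'k) \<Rightarrow> real) (lcI J l k) = Mx J (\<lambda>j. absK (l j) * g (k j))) \<and>
            (\<forall>x\<in>VI J. \<exists>l. x = lcI J l k)"
  shows "\<exists>k. (\<forall>j\<in>I. k j \<in> VI I \<and> nrm absK (k j) = 1) \<and>
            (\<forall>l. nrm absK (lcI I l k) = Mx I (\<lambda>j. absK (l j))) \<and>
            (\<forall>l. \<gamma> (lcI I l k) = Mx I (\<lambda>j. absK (l j) * \<gamma> (k j))) \<and>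
            (\<forall>x\<in>VI I. \<exists>l. x = lcI I l k)"
proof -
  obtain v where v: "v \<in> VI I" "nrm absK v = 1" "\<And>x. x \<in> VI I \<Longrightarrow> nrm absK x = 1 \<Longrightarrow> \<gamma> v \<le> \<gamma> x"
    using sn_min_sphere[OF sn I] by blast
  obtain p where p: "nrm absK v = absK (v p)" using nrm_attained by blast
  have vp: "absK (v p) = 1" using p v by simp
  then have "v p \<noteq> 0" by auto
  then have pI: "p \<in> I" using v(1) unfolding VI_def by auto
  define J where "J = I - {p}"
  have IJ: "I = insert p J" "p \<notin> J" "J \<subset> I" using pI unfolding J_def by auto
  have finJ: "finite J" by simp
  \<comment> \<open>minimality gives a lower bound\<close>
  have lowb: "\<gamma> z \<ge> nrm absK z * \<gamma> v" if z: "z \<in> VI I" for z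
  proof (cases "z = (\<lambda>_. 0)")
    case True
    have "nrm absK z = 0" unfolding True by (rule nrm_zero)
    moreover have "\<gamma> z = 0" unfolding True by (rule sn_zero[OF sn])
    ultimately show ?thesis by simp
  next
    case False
    obtain i where i: "nrm absK z = absK (z i)" using nrm_attained by blast
    have "z i \<noteq> 0"
    proof
      assume "z i = 0"
      then have nrm0: "nrm absK z = 0" using i by simp
      have "absK (z t) = 0" for t using nrm_ge[of z t] abs_nonneg[of "z t"] nrm0 by linarith
      then have "\<forall>t. absK (z t) = 0" by blast
      then show False using False by auto
    qed
    define z' where "z' = (\<lambda>t. inverse (z i) * z t)"
    have "z' \<in> VI I" using z unfolding z'_def VI_def by auto
    moreover have "nrm absK z' = 1"
      unfolding z'_def using sn_smul[OF sn_nrm, of "inverse (z i)" z] i \<open>z i \<noteq> 0\<close> by simp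
    ultimately have "\<gamma> v \<le> \<gamma> z'" using v(3) by blast
    moreover have "\<gamma> z = absK (z i) * \<gamma> z'"
    proof -
      have "z = (\<lambda>t. z i * z' t)" unfolding z'_def using \<open>z i \<noteq> 0\<close> by auto
      then show ?thesis using sn_smul[OF sn, of "z i" z'] by metis
    qed
    ultimately show ?thesis using i by (simp add: mult_left_mono)
  qed
  \<comment> \<open>the quotient seminorm\<close>
  define amin where "amin y = (SOME a. \<forall>b. \<gamma> (\<lambda>i. y i + a * v i) \<le> \<gamma> (\<lambda>i. y i + b * v i))" for y
  define gb where "gb y = \<gamma> (\<lambda>i. y i + amin y * v i)" for y
  have gb_le: "gb y \<le> \<gamma> (\<lambda>i. y i + b * v i)" for y b
  proof -
    have "\<exists>a. \<forall>b. \<gamma> (\<lambda>i. y i + a * v i) \<le> \<gamma> (\<lambda>i. y i + b * v i)" by (rule sn_min_line[OF sn])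
    then show ?thesis unfolding gb_def amin_def by (rule someI_ex[where P = "\<lambda>a. \<forall>b. _ a b", THEN spec])
  qed
  have sn_gb: "sn absK gb"
    unfolding sn_def
  proof (intro conjI allI)
    fix x show "gb x \<ge> 0" unfolding gb_def using sn_nonneg[OF sn] by simp
  next
    fix c x
    show "gb (vsmul c x) = absK c * gb x"
    proof (rule antisym)
      have "gb (vsmul c x) \<le> \<gamma> (\<lambda>i. vsmul c x i + (c * amin x) * v i)" by (rule gb_le)
      also have "(\<lambda>i. vsmul c x i + (c * amin x) * v i) = (\<lambda>i. c * (x i + amin x * v i))"
        by (simp add: vsmul_def algebra_simps)
      also have "\<gamma> \<dots> = absK c * gb x" unfolding gb_def by (rule sn_smul[OF sn])
      finally show "gb (vsmul c x) \<le> absK c * gb x" .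
    next
      show "absK c * gb x \<le> gb (vsmul c x)"
      proof (cases "c = 0")
        case True then show ?thesis unfolding gb_def using sn_nonneg[OF sn] by simp
      next
        case False
        have "gb x \<le> \<gamma> (\<lambda>i. x i + (amin (vsmul c x) / c) * v i)" by (rule gb_le)
        moreover have "(\<lambda>i. vsmul c x i + amin (vsmul c x) * v i) = (\<lambda>i. c * (x i + (amin (vsmul c x) / c) * v i))"
          using False by (intro ext) (simp add: vsmul_def distrib_left)
        then have "gb (vsmul c x) = absK c * \<gamma> (\<lambda>i. x i + (amin (vsmul c x) / c) * v i)"
          unfolding gb_def using sn_smul[OF sn] by simp
        ultimately show ?thesis by (simp add: mult_left_mono)
      qed
    qed
  next
    fix x y
    have "gb (vadd x y) \<le> \<gamma> (\<lambda>i. vadd x y i + (amin x + amin y) * v i)" by (rule gb_le)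
    also have "(\<lambda>i. vadd x y i + (amin x + amin y) * v i) = (\<lambda>i. (x i + amin x * v i) + (y i + amin y * v i))"
      by (simp add: vadd_def algebra_simps)
    also have "\<gamma> \<dots> \<le> max (gb x) (gb y)" unfolding gb_def by (rule sn_add[OF sn])
    finally show "gb (vadd x y) \<le> max (gb x) (gb y)" .
  qed
  have goodlift: "\<exists>a. absK a \<le> 1 \<and> \<gamma> (\<lambda>i. y i + a * v i) = gb y" if y: "y \<in> VI J" for y
  proof (cases "absK (amin y) \<le> 1")
    case True then show ?thesis unfolding gb_def by blast
  next
    case False
    define z where "z = (\<lambda>i. y i + amin y * v i)"
    have zI: "z \<in> VI I" using y v(1) unfolding z_def VI_def J_def by auto
    have "y p = 0" using y IJ unfolding VI_def by auto
    then have "nrm absK z \<ge> absK (amin y)" using nrm_ge[of z p] vp unfolding z_def by simp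
    then have "\<gamma> z \<ge> absK (amin y) * \<gamma> v"
      using lowb[OF zI] sn_nonneg[OF sn, of v] by (meson mult_right_mono order_trans)
    moreover have "\<gamma> y \<le> max (\<gamma> z) (\<gamma> (\<lambda>i. amin y * v i))"
      using sn_diff[OF sn, of z "\<lambda>i. amin y * v i"] unfolding z_def by simp
    ultimately have "\<gamma> y \<le> \<gamma> z" using sn_smul[OF sn, of "amin y" v] by simp
    moreover have "gb y \<le> \<gamma> y" using gb_le[of y 0] by simp
    moreover have "gb y = \<gamma> z" unfolding gb_def z_def ..
    ultimately have "\<gamma> (\<lambda>i. y i + 0 * v i) = gb y" by simp
    then show ?thesis by (intro exI[of _ 0]) simp
  qed
  have ND: "nrm absK (\<lambda>i. b * v i + y i) = max (absK b) (nrm absK y)" if y: "y \<in> VI J" for b y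
  proof -
    have yp: "y p = 0" using y IJ unfolding VI_def by auto
    have 1: "nrm absK (\<lambda>i. b * v i + y i) \<ge> absK b" using nrm_ge[of "\<lambda>i. b * v i + y i" p] yp vp by simp
    have 2: "nrm absK y \<le> max (nrm absK (\<lambda>i. b * v i + y i)) (nrm absK (\<lambda>i. b * v i))"
      using sn_diff[OF sn_nrm, of "\<lambda>i. b * v i + y i" "\<lambda>i. b * v i"] by simp
    have 3: "nrm absK (\<lambda>i. b * v i) = absK b" using sn_smul[OF sn_nrm, of b v] v(2) by simp
    have 4: "nrm absK (\<lambda>i. b * v i + y i) \<le> max (nrm absK (\<lambda>i. b * v i)) (nrm absK y)"
      by (rule sn_add[OF sn_nrm])
    show ?thesis using 1 2 3 4 unfolding max_def by (auto split: if_splits)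
  qed
  obtain k where k: "\<forall>j\<in>J. k j \<in> VI J \<and> nrm absK (k j) = 1"
      "\<forall>l. nrm absK (lcI J l k) = Mx J (\<lambda>j. absK (l j))"
      "\<forall>l. gb (lcI J l k) = Mx J (\<lambda>j. absK (l j) * gb (k j))"
      "\<forall>x\<in>VI J. \<exists>l. x = lcI J l k"
    using IH[OF IJ(3) sn_gb] by blast
  define A where "A j = (SOME a. absK a \<le> 1 \<and> \<gamma> (\<lambda>i. k j i + a * v i) = gb (k j))" for j
  have A: "absK (A j) \<le> 1" "\<gamma> (\<lambda>i. k j i + A j * v i) = gb (k j)" if "j \<in> J" for j
    using someI_ex[OF goodlift[of "k j"]] k(1) that unfolding A_def by auto
  define k' where "k' j = (if j = p then v else (\<lambda>i. k j i + A j * v i))" for j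
  have k'J: "k' j = (\<lambda>i. k j i + A j * v i)" if "j \<in> J" for j using that IJ unfolding k'_def by auto
  have k'p: "k' p = v" unfolding k'_def by simp
  have dec: "lcI I l k' = (\<lambda>i. (l p + (\<Sum>j\<in>J. l j * A j)) * v i + lcI J l k i)" for l
    unfolding IJ(1) by (rule lcI_decomp[where k=k and A=A, OF finJ IJ(2) k'J k'p])
  have lcJ: "lcI J l k \<in> VI J" for l by (rule lcI_VI) (use k(1) in auto)
  have sumA: "absK (\<Sum>j\<in>J. l j * A j) \<le> Mx J (\<lambda>j. absK (l j))" for l
    by (rule abs_sum_le[OF finJ]) (auto simp: A(1) intro!: Mx_ge Mx_nonneg mult_left_le[OF A(1)] order_trans[OF _ Mx_ge])
  have nrmI: "nrm absK (lcI I l k') = Mx I (\<lambda>j. absK (l j))" for l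
  proof -
    have "nrm absK (lcI I l k') = max (absK (l p + (\<Sum>j\<in>J. l j * A j))) (Mx J (\<lambda>j. absK (l j)))"
      unfolding dec using ND[OF lcJ] k(2) by simp
    also have "\<dots> = max (absK (l p)) (Mx J (\<lambda>j. absK (l j)))" by (rule abs_max_shift[OF sumA])
    also have "\<dots> = Mx I (\<lambda>j. absK (l j))" unfolding IJ(1) by (rule Mx_insert[OF finJ, symmetric])
    finally show ?thesis .
  qed
  have k'VI: "k' j \<in> VI I" if "j \<in> I" for j
  proof (cases "j = p")
    case True then show ?thesis using v(1) k'p by simp
  next
    case False
    then have "j \<in> J" using that unfolding J_def by auto
    then show ?thesis using k(1) v(1) VI_mono[of J I] IJ unfolding k'J[OF \<open>j \<in> J\<close>] VI_def by auto
  qed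
  show ?thesis
  proof (intro exI[of _ k'] conjI ballI allI)
    fix j assume j: "j \<in> I"
    show "k' j \<in> VI I" using k'VI[OF j] .
    show "nrm absK (k' j) = 1"
    proof (cases "j = p")
      case True then show ?thesis using k'p v(2) by simp
    next
      case False
      then have jJ: "j \<in> J" using j unfolding J_def by auto
      have "k' j = (\<lambda>i. A j * v i + k j i)" using k'J[OF jJ] by (auto simp: add.commute)
      then show ?thesis using ND[of "k j" "A j"] k(1) jJ A(1)[OF jJ] by simp
    qed
  next
    fix l show "nrm absK (lcI I l k') = Mx I (\<lambda>j. absK (l j))" by (rule nrmI)
  next
    fix l
    have zI: "lcI I l k' \<in> VI I" by (rule lcI_VI) (rule k'VI)
    show "\<gamma> (lcI I l k') = Mx I (\<lambda>j. absK (l j) * \<gamma> (k' j))"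
    proof (rule antisym)
      show "\<gamma> (lcI I l k') \<le> Mx I (\<lambda>j. absK (l j) * \<gamma> (k' j))" by (rule sn_lc[OF sn]) simp
      have "Mx I (\<lambda>j. absK (l j) * \<gamma> (k' j)) = max (absK (l p) * \<gamma> v) (Mx J (\<lambda>j. absK (l j) * \<gamma> (k' j)))"
        unfolding IJ(1) using Mx_insert[OF finJ] k'p by simp
      also have "Mx J (\<lambda>j. absK (l j) * \<gamma> (k' j)) = Mx J (\<lambda>j. absK (l j) * gb (k j))"
        unfolding Mx_def using A(2) k'J by (auto intro!: arg_cong[where f = Max] image_cong)
      also have "\<dots> = gb (lcI J l k)" using k(3) by simp
      finally have eq: "Mx I (\<lambda>j. absK (l j) * \<gamma> (k' j)) = max (absK (l p) * \<gamma> v) (gb (lcI J l k))" .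
      have 1: "gb (lcI J l k) \<le> \<gamma> (lcI I l k')"
        using gb_le[of "lcI J l k" "l p + (\<Sum>j\<in>J. l j * A j)"] unfolding dec by (simp add: add.commute)
      have "absK (l p) \<le> nrm absK (lcI I l k')" unfolding nrmI using IJ by (auto intro: Mx_ge)
      then have 2: "absK (l p) * \<gamma> v \<le> \<gamma> (lcI I l k')"
        using lowb[OF zI] sn_nonneg[OF sn, of v] by (meson mult_right_mono order_trans)
      show "Mx I (\<lambda>j. absK (l j) * \<gamma> (k' j)) \<le> \<gamma> (lcI I l k')" unfolding eq using 1 2 by simp
    qed
  next
    fix x :: "'n \<Rightarrow> 'k" assume x: "x \<in> VI I"
    define y where "y = (\<lambda>i. x i - (x p / v p) * v i)"
    have "y \<in> VI J" using x v(1) \<open>v p \<noteq> 0\<close> unfolding y_def VI_def J_def by auto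
    then obtain l where l: "y = lcI J l k" using k(4) by blast
    define l' where "l' = l(p := x p / v p - (\<Sum>j\<in>J. l j * A j))"
    have "lcI J l' k = lcI J l k" using IJ(2) unfolding l'_def by (intro lcI_cong) auto
    moreover have "(\<Sum>j\<in>J. l' j * A j) = (\<Sum>j\<in>J. l j * A j)" using IJ(2) unfolding l'_def by (intro sum.cong) auto
    ultimately have "lcI I l' k' = (\<lambda>i. (x p / v p) * v i + y i)"
      unfolding dec l by (simp add: l'_def)
    also have "\<dots> = x" unfolding y_def by auto
    finally show "\<exists>l. x = lcI I l k'" by metis
  qed
qed

lemma GI_gen:
  fixes \<gamma> :: "('n::finite \<Rightarrow> 'k) \<Rightarrow> real"
  assumes sn: "sn absK \<gamma>"
  shows "\<exists>k. (\<forall>j\<in>I. k j \<in> VI I \<and> nrm absK (k j) = 1) \<and>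
            (\<forall>l. nrm absK (lcI I l k) = Mx I (\<lambda>j. absK (l j))) \<and>
            (\<forall>l. \<gamma> (lcI I l k) = Mx I (\<lambda>j. absK (l j) * \<gamma> (k j))) \<and>
            (\<forall>x\<in>VI I. \<exists>l. x = lcI I l k)"
proof -
  have fin: "finite I" by simp
  show ?thesis using fin sn
proof (induction I arbitrary: \<gamma> rule: finite_psubset_induct)
  case (psubset I)
  show ?case
  proof (cases "I = {}")
    case True
    show ?thesis
    proof (intro exI[of _ "\<lambda>_ _. 0::'k"] conjI allI ballI)
      fix l show "nrm absK (lcI I l (\<lambda>_ _. 0::'k)) = Mx I (\<lambda>j. absK (l j))"
        using True by (simp add: lcI_empty nrm_zero)
      show "\<gamma> (lcI I l (\<lambda>_ _. 0::'k)) = Mx I (\<lambda>j. absK (l j) * \<gamma> ((\<lambda>_ _. 0::'k) j))"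
        using True sn_zero[OF psubset.prems] by (simp add: lcI_empty)
    next
      fix x :: "'n \<Rightarrow> 'k" assume "x \<in> VI I"
      then have "x = (\<lambda>_. 0)" using True unfolding VI_def by auto
      then show "\<exists>l. x = lcI I l (\<lambda>_ _. 0::'k)" using True by (simp add: lcI_empty)
    qed (use True in auto)
  next
    case False
    show ?thesis by (rule GI_step_props[OF psubset.prems False]) (rule psubset.IH)
  qed
qed
qed

end

abbreviation lk where "lk \<equiv> Poly_Mapping.lookup"
abbreviation sg where "sg \<equiv> Poly_Mapping.single"
abbreviation ks where "ks \<equiv> Poly_Mapping.keys"

definition xpow :: "('n::finite \<Rightarrow> ('n, 'k::field) sympoly) \<Rightarrow> ('n \<Rightarrow>\<^sub>0 nat) \<Rightarrow> ('n, 'k) sympoly" where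
  "xpow x \<nu> = (\<Prod>i\<in>UNIV. x i ^ lk \<nu> i)"

definition peval :: "('n::finite \<Rightarrow> ('n, 'k::field) sympoly) \<Rightarrow> ('n, 'k) sympoly \<Rightarrow> ('n, 'k) sympoly" where
  "peval x g = (\<Sum>\<nu>\<in>ks g. pconst (lk g \<nu>) * xpow x \<nu>)"

lemma subst_peval: "subst w g = peval (\<lambda>i. lin (w i)) g"
  unfolding subst_def peval_def xpow_def ..

lemma pconst_0[simp]: "pconst 0 = 0" unfolding pconst_def by simp
lemma pconst_1[simp]: "pconst 1 = 1" unfolding pconst_def by simp
lemma pconst_add: "pconst (a + b) = pconst a + pconst b" unfolding pconst_def by (simp add: single_add)
lemma pconst_mult: "pconst (a * b) = pconst a * pconst b" unfolding pconst_def by (simp add: mult_single)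
lemma pconst_sum: "pconst (sum f A) = (\<Sum>a\<in>A. pconst (f a))"
  by (induction A rule: infinite_finite_induct) (auto simp: pconst_add)
lemma pconst_of_nat: "pconst (of_nat n) = of_nat n" unfolding pconst_def by simp
lemma lookup_pconst_mult: "lk (pconst c * f) \<nu> = c * lk f \<nu>"
  unfolding pconst_def mult_map_scale_conv_mult[symmetric] by (simp add: Poly_Mapping.map.rep_eq when_def)
lemma pconst_single: "pconst c * sg \<nu> 1 = sg \<nu> c"
  unfolding pconst_def by (simp add: mult_single)

lemma expand_superset: assumes "finite S" "ks g \<subseteq> S"
  shows "g = (\<Sum>\<nu>\<in>S. sg \<nu> (lk g \<nu>))"
proof (rule poly_mapping_eqI)
  fix \<kappa>
  have "lk (\<Sum>\<nu>\<in>S. sg \<nu> (lk g \<nu>)) \<kappa> = (\<Sum>\<nu>\<in>S. (lk g \<nu> when \<nu> = \<kappa>))"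
    by (simp add: lookup_sum lookup_single)
  also have "\<dots> = lk g \<kappa>"
  proof (cases "\<kappa> \<in> S")
    case True then show ?thesis using assms(1) by (simp add: when_def sum.delta)
  next
    case False then have "lk g \<kappa> = 0" using assms(2) by (auto simp: in_keys_iff)
    then show ?thesis using False assms(1) by (simp add: when_def sum.delta)
  qed
  finally show "lk g \<kappa> = lk (\<Sum>\<nu>\<in>S. sg \<nu> (lk g \<nu>)) \<kappa>" by simp
qed

lemma expand: "g = (\<Sum>\<nu>\<in>ks g. sg \<nu> (lk g \<nu>))"
  by (rule expand_superset) auto

lemma peval_superset: assumes "finite S" "ks g \<subseteq> S"
  shows "peval x g = (\<Sum>\<nu>\<in>S. pconst (lk g \<nu>) * xpow x \<nu>)"
  unfolding peval_def using assms
  by (intro sum.mono_neutral_left) (auto simp: in_keys_iff)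

lemma peval_0[simp]: "peval x 0 = 0" unfolding peval_def by simp

lemma peval_add: "peval x (g + h) = peval x g + peval x h"
proof -
  let ?S = "ks g \<union> ks h"
  have "peval x (g + h) = (\<Sum>\<nu>\<in>?S. pconst (lk (g + h) \<nu>) * xpow x \<nu>)"
    by (rule peval_superset) (use keys_add[of g h] in auto)
  also have "\<dots> = (\<Sum>\<nu>\<in>?S. pconst (lk g \<nu>) * xpow x \<nu>) + (\<Sum>\<nu>\<in>?S. pconst (lk h \<nu>) * xpow x \<nu>)"
    by (simp add: lookup_add pconst_add distrib_right sum.distrib)
  also have "\<dots> = peval x g + peval x h"
    by (simp add: peval_superset[symmetric])
  finally show ?thesis .
qed

lemma peval_sum: "peval x (sum f A) = (\<Sum>a\<in>A. peval x (f a))"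
  by (induction A rule: infinite_finite_induct) (auto simp: peval_add)

lemma peval_single: "peval x (sg \<nu> c) = pconst c * xpow x \<nu>"
proof -
  have "peval x (sg \<nu> c) = (\<Sum>\<mu>\<in>{\<nu>}. pconst (lk (sg \<nu> c) \<mu>) * xpow x \<mu>)"
    by (rule peval_superset) auto
  then show ?thesis by simp
qed

lemma xpow_0[simp]: "xpow x 0 = 1" unfolding xpow_def by simp
lemma xpow_add: "xpow x (\<nu> + \<mu>) = xpow x \<nu> * xpow x \<mu>"
  unfolding xpow_def by (simp add: lookup_add power_add prod.distrib)

lemma sum_prod_expand: "(\<Sum>a\<in>A. (f a :: 'r::semiring_0)) * (\<Sum>b\<in>B. g b) = (\<Sum>a\<in>A. \<Sum>b\<in>B. f a * g b)"
  by (rule sum_product)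

lemma peval_mult: "peval x (g * h) = peval x g * peval x h"
proof -
  have "g * h = (\<Sum>\<nu>\<in>ks g. sg \<nu> (lk g \<nu>)) * (\<Sum>\<mu>\<in>ks h. sg \<mu> (lk h \<mu>))"
    using expand[of g] expand[of h] by simp
  also have "\<dots> = (\<Sum>\<nu>\<in>ks g. \<Sum>\<mu>\<in>ks h. sg (\<nu> + \<mu>) (lk g \<nu> * lk h \<mu>))"
    by (simp add: sum_prod_expand mult_single)
  finally have gh: "g * h = \<dots>" .
  have "peval x (g * h) = (\<Sum>\<nu>\<in>ks g. \<Sum>\<mu>\<in>ks h. pconst (lk g \<nu> * lk h \<mu>) * xpow x (\<nu> + \<mu>))"
    unfolding gh by (simp add: peval_sum peval_single)
  also have "\<dots> = (\<Sum>\<nu>\<in>ks g. \<Sum>\<mu>\<in>ks h. (pconst (lk g \<nu>) * xpow x \<nu>) * (pconst (lk h \<mu>) * xpow x \<mu>))"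
    by (simp add: pconst_mult xpow_add mult_ac)
  also have "\<dots> = peval x g * peval x h"
    unfolding peval_def by (simp add: sum_prod_expand)
  finally show ?thesis .
qed

lemma peval_pconst: "peval x (pconst c) = pconst c"
  unfolding pconst_def peval_single by (simp add: pconst_def[symmetric])

lemma peval_1[simp]: "peval x 1 = 1"
  using peval_pconst[of x 1] by simp

lemma peval_power: "peval x (g ^ n) = peval x g ^ n"
  by (induction n) (auto simp: peval_mult)

lemma peval_prod: "peval x (prod f A) = (\<Prod>a\<in>A. peval x (f a))"
  by (induction A rule: infinite_finite_induct) (auto simp: peval_mult)

lemma peval_pconst_mult: "peval x (pconst c * g) = pconst c * peval x g"
  by (simp add: peval_mult peval_pconst)

lemma lookup_single_i: "lk (sg i (1::nat)) j = (if i = j then 1 else 0)"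
  by (simp add: lookup_single when_def)

lemma xpow_single: "xpow x (sg i 1) = x i"
proof -
  have "xpow x (sg i 1) = (\<Prod>j\<in>UNIV. if i = j then x j else 1)"
    unfolding xpow_def by (intro prod.cong) (auto simp: lookup_single when_def)
  then show ?thesis by simp
qed

lemma peval_pvar: "peval x (pvar i) = x i"
  unfolding pvar_def peval_single xpow_single by simp

lemma lin_def': "lin v = (\<Sum>i\<in>UNIV. pconst (v i) * pvar i)" unfolding lin_def ..

lemma peval_lin: "peval x (lin v) = (\<Sum>i\<in>UNIV. pconst (v i) * x i)"
  unfolding lin_def by (simp add: peval_sum peval_pconst_mult peval_pvar)

lemma lin_add: "lin (\<lambda>i. a i + b i) = lin a + lin b"
  unfolding lin_def by (simp add: pconst_add distrib_right sum.distrib)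
lemma lin_smul: "lin (\<lambda>i. c * a i) = pconst c * lin a"
  unfolding lin_def by (simp add: pconst_mult sum_distrib_left mult_ac)
lemma lin_vadd: "lin (vadd a b) = lin a + lin b" unfolding vadd_def by (rule lin_add)
lemma lin_vsmul: "lin (vsmul c a) = pconst c * lin a" unfolding vsmul_def by (rule lin_smul)

lemma lin_ev: "lin (ev j) = pvar j"
proof -
  have "lin (ev j) = (\<Sum>i\<in>UNIV. if i = j then pvar i else 0)"
    unfolding lin_def ev_def by (intro sum.cong) auto
  then show ?thesis by simp
qed

lemma peval_lin_lin: "peval (\<lambda>i. lin (w i)) (lin v) = lin (lincomb v w)"
proof -
  have "peval (\<lambda>i. lin (w i)) (lin v) = (\<Sum>i\<in>UNIV. pconst (v i) * (\<Sum>k\<in>UNIV. pconst (w i k) * pvar k))"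
    unfolding peval_lin by (simp only: lin_def)
  also have "\<dots> = (\<Sum>i\<in>UNIV. \<Sum>k\<in>UNIV. pconst (v i * w i k) * pvar k)"
    by (simp add: sum_distrib_left pconst_mult mult_ac)
  also have "\<dots> = (\<Sum>k\<in>UNIV. \<Sum>i\<in>UNIV. pconst (v i * w i k) * pvar k)"
    by (rule sum.swap)
  also have "\<dots> = lin (lincomb v w)"
    unfolding lin_def lincomb_def by (simp add: pconst_sum sum_distrib_right)
  finally show ?thesis .
qed

lemma peval_comp: "peval x (peval y g) = peval (\<lambda>i. peval x (y i)) g"
  unfolding peval_def[of y g] by (simp add: peval_sum peval_pconst_mult peval_prod peval_power xpow_def peval_def[of _ g])

lemma pvar_power: "pvar i ^ m = sg (sg i m) (1::'k::field)"
proof (induction m)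
  case 0 then show ?case by simp
next
  case (Suc m)
  have "pvar i ^ Suc m = sg (sg i 1 + sg i m) (1::'k)" using Suc by (simp add: pvar_def mult_single)
  also have "sg i 1 + sg i m = sg i (Suc m)" by (simp add: single_add[symmetric])
  finally show ?case .
qed

lemma prod_single: "finite A \<Longrightarrow> (\<Prod>i\<in>A. sg (f i) (1::'k::field)) = sg (\<Sum>i\<in>A. f i) 1"
  by (induction A rule: finite_induct) (auto simp: mult_single)

lemma sum_single_lookup: "(\<Sum>i\<in>UNIV. sg i (lk \<nu> i)) = (\<nu> :: 'n::finite \<Rightarrow>\<^sub>0 nat)"
proof (rule poly_mapping_eqI)
  fix j
  show "lk (\<Sum>i\<in>UNIV. sg i (lk \<nu> i)) j = lk \<nu> j"
    by (simp add: lookup_sum lookup_single when_def)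
qed

lemma xpow_pvar: "xpow pvar \<nu> = sg \<nu> (1::'k::field)"
  unfolding xpow_def pvar_power by (simp add: prod_single sum_single_lookup)

lemma peval_id: "peval pvar g = (g :: ('n::finite, 'k::field) sympoly)"
proof -
  have "peval pvar g = (\<Sum>\<nu>\<in>ks g. sg \<nu> (lk g \<nu>))"
    unfolding peval_def xpow_pvar pconst_single ..
  then show ?thesis using expand[of g] by simp
qed

lemma subst_comp: "subst w (subst u g) = subst (\<lambda>j. lincomb (u j) w) g"
  unfolding subst_peval peval_comp peval_lin_lin ..

lemma subst_ev: "subst ev g = g"
  unfolding subst_peval lin_ev by (rule peval_id)

lemma lincomb_lincomb: "lincomb (lincomb v u) w = lincomb v (\<lambda>j. lincomb (u j) w)"
proof
  fix i
  have "lincomb (lincomb v u) w i = (\<Sum>j\<in>UNIV. \<Sum>t\<in>UNIV. v t * u t j * w j i)"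
    unfolding lincomb_def by (simp add: sum_distrib_right)
  also have "\<dots> = (\<Sum>t\<in>UNIV. \<Sum>j\<in>UNIV. v t * u t j * w j i)" by (rule sum.swap)
  also have "\<dots> = lincomb v (\<lambda>j. lincomb (u j) w) i"
    unfolding lincomb_def by (simp add: sum_distrib_left mult_ac)
  finally show "lincomb (lincomb v u) w i = lincomb v (\<lambda>j. lincomb (u j) w) i" .
qed

lemma lincomb_ev: "lincomb (ev k) w = w k"
proof
  fix i
  have "lincomb (ev k) w i = (\<Sum>j\<in>UNIV. if j = k then w j i else 0)"
    unfolding lincomb_def ev_def by (intro sum.cong) auto
  then show "lincomb (ev k) w i = w k i" by simp
qed

lemma lincomb_ev2: "lincomb v ev = v"
proof
  fix i
  have "lincomb v ev i = (\<Sum>j\<in>UNIV. if i = j then v j else 0)"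
    unfolding lincomb_def ev_def by (intro sum.cong) auto
  then show "lincomb v ev i = v i" by simp
qed

definition winv :: "('n::finite \<Rightarrow> ('n \<Rightarrow> 'k::field)) \<Rightarrow> 'n \<Rightarrow> ('n \<Rightarrow> 'k)" where
  "winv w j = (THE l. lincomb l w = ev j)"

lemma winv_left: assumes "is_basis w" shows "lincomb (winv w j) w = ev j"
proof -
  have "\<exists>!l. lincomb l w = ev j" using assms unfolding is_basis_def by blast
  then show ?thesis unfolding winv_def by (rule theI')
qed

lemma basis_unique: "is_basis w \<Longrightarrow> lincomb l w = lincomb l' w \<Longrightarrow> l = l'"
  unfolding is_basis_def by metis

lemma winv_right: assumes "is_basis w" shows "lincomb (w k) (winv w) = ev k"
proof (rule basis_unique[OF assms])
  have "lincomb (lincomb (w k) (winv w)) w = lincomb (w k) (\<lambda>j. lincomb (winv w j) w)"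
    by (rule lincomb_lincomb)
  also have "\<dots> = w k" using winv_left[OF assms] lincomb_ev2 by simp
  finally show "lincomb (lincomb (w k) (winv w)) w = lincomb (ev k) w" by (simp add: lincomb_ev)
qed

lemma subst_inv1: "is_basis w \<Longrightarrow> subst w (subst (winv w) g) = g"
  unfolding subst_comp by (simp add: winv_left subst_ev[unfolded ev_def] ev_def)

lemma subst_inv2: "is_basis w \<Longrightarrow> subst (winv w) (subst w g) = g"
  unfolding subst_comp by (simp add: winv_right subst_ev[unfolded ev_def] ev_def)

lemma subst_THE: assumes "is_basis w" shows "(THE g. subst w g = f) = subst (winv w) f"
proof (rule the_equality)
  show "subst w (subst (winv w) f) = f" by (rule subst_inv1[OF assms])
  fix g assume "subst w g = f"
  then show "g = subst (winv w) f" using subst_inv2[OF assms, of g] by simp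
qed

lemma subst_add: "subst w (f + g) = subst w f + subst w g" unfolding subst_peval by (rule peval_add)
lemma subst_mult: "subst w (f * g) = subst w f * subst w g" unfolding subst_peval by (rule peval_mult)
lemma subst_pconst: "subst w (pconst c) = pconst c" unfolding subst_peval by (rule peval_pconst)
lemma subst_lin: "subst w (lin v) = lin (lincomb v w)" unfolding subst_peval by (rule peval_lin_lin)

section \<open>Homogeneity\<close>

lemma mdeg_add: "mdeg (\<nu> + \<mu>) = mdeg \<nu> + mdeg \<mu>"
  unfolding mdeg_def by (simp add: lookup_add sum.distrib)
lemma mdeg_0[simp]: "mdeg 0 = 0" unfolding mdeg_def by simp
lemma mdeg_single: "mdeg (sg i m) = m"
proof -
  have "mdeg (sg i m) = (\<Sum>j\<in>UNIV. if i = j then m else 0)"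
    unfolding mdeg_def by (intro sum.cong) (auto simp: lookup_single when_def)
  then show ?thesis by simp
qed

lemma hom_zero: "homogeneous d 0" unfolding homogeneous_def by simp
lemma hom_add: "homogeneous d f \<Longrightarrow> homogeneous d g \<Longrightarrow> homogeneous d (f + g)"
  unfolding homogeneous_def using keys_add[of f g] by blast
lemma hom_sum: "(\<And>a. a \<in> A \<Longrightarrow> homogeneous d (f a)) \<Longrightarrow> homogeneous d (sum f A)"
  by (induction A rule: infinite_finite_induct) (auto intro: hom_add hom_zero)
lemma hom_mult: assumes "homogeneous a f" "homogeneous b g" shows "homogeneous (a + b) (f * g)"
  unfolding homogeneous_def
proof
  fix \<kappa> assume "\<kappa> \<in> ks (f * g)"
  then obtain x y where "\<kappa> = x + y" "x \<in> ks f" "y \<in> ks g" using keys_mult[of f g] by blast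
  then show "mdeg \<kappa> = a + b" using assms unfolding homogeneous_def by (simp add: mdeg_add)
qed
lemma hom_one: "homogeneous 0 (1 :: ('n::finite, 'k::field) sympoly)"
  unfolding homogeneous_def by simp
lemma hom_power: "homogeneous a f \<Longrightarrow> homogeneous (n * a) (f ^ n)"
  by (induction n) (auto intro: hom_one dest: hom_mult)
lemma hom_prod: "(\<And>i. i \<in> A \<Longrightarrow> homogeneous (d i) (f i)) \<Longrightarrow> homogeneous (\<Sum>i\<in>A. d i) (prod f A)"
proof (induction A rule: infinite_finite_induct)
  case (insert x F) then show ?case by (auto intro: hom_mult)
qed (auto intro: hom_one)
lemma hom_pconst: "homogeneous 0 (pconst c :: ('n::finite, 'k::field) sympoly)"
  unfolding homogeneous_def pconst_def by (cases "c = 0") auto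
lemma hom_single: "homogeneous (mdeg \<nu>) (sg \<nu> c :: ('n::finite, 'k::field) sympoly)"
  unfolding homogeneous_def by (cases "c = 0") auto
lemma hom_pvar: "homogeneous 1 (pvar i :: ('n::finite, 'k::field) sympoly)"
  unfolding pvar_def using hom_single[of "sg i 1"] by (simp add: mdeg_single)
lemma hom_lin: "homogeneous 1 (lin v :: ('n::finite, 'k::field) sympoly)"
  unfolding lin_def using hom_mult[OF hom_pconst hom_pvar] by (auto intro!: hom_sum)
lemma hom_xpow: assumes "\<And>i. homogeneous 1 (x i)" shows "homogeneous (mdeg \<nu>) (xpow x \<nu>)"
proof -
  have "homogeneous (\<Sum>i\<in>UNIV. lk \<nu> i * 1) (\<Prod>i\<in>UNIV. x i ^ lk \<nu> i)"
    by (rule hom_prod) (rule hom_power[OF assms])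
  then show ?thesis unfolding xpow_def mdeg_def by simp
qed

lemma keys_peval:
  assumes "\<And>i. homogeneous 1 (x i)" "\<mu> \<in> ks (peval x g)"
  shows "\<exists>\<nu>\<in>ks g. mdeg \<mu> = mdeg \<nu>"
proof -
  have "\<mu> \<in> (\<Union>\<nu>\<in>ks g. ks (pconst (lk g \<nu>) * xpow x \<nu>))"
    using assms(2) keys_sum[of "\<lambda>\<nu>. pconst (lk g \<nu>) * xpow x \<nu>" "ks g"] unfolding peval_def by (meson subsetD)
  then obtain \<nu> where \<nu>: "\<nu> \<in> ks g" "\<mu> \<in> ks (pconst (lk g \<nu>) * xpow x \<nu>)" by blast
  have "homogeneous (0 + mdeg \<nu>) (pconst (lk g \<nu>) * xpow x \<nu>)"
    by (rule hom_mult[OF hom_pconst hom_xpow[OF assms(1)]])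
  then show ?thesis using \<nu> unfolding homogeneous_def by auto
qed

lemma hom_subst: assumes "homogeneous d g" shows "homogeneous d (subst w g)"
  unfolding homogeneous_def
proof
  fix \<mu> assume "\<mu> \<in> ks (subst w g)"
  then obtain \<nu> where "\<nu> \<in> ks g" "mdeg \<mu> = mdeg \<nu>"
    using keys_peval[OF hom_lin, of \<mu> w g] unfolding subst_peval by blast
  then show "mdeg \<mu> = d" using assms unfolding homogeneous_def by simp
qed

definition degle :: "nat \<Rightarrow> ('n::finite, 'k::field) sympoly \<Rightarrow> bool" where
  "degle D g \<longleftrightarrow> (\<forall>\<nu>\<in>ks g. mdeg \<nu> \<le> D)"

lemma degle_subst: assumes "degle D g" shows "degle D (subst w g)"
  unfolding degle_def
proof
  fix \<mu> assume "\<mu> \<in> ks (subst w g)"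
  then obtain \<nu> where "\<nu> \<in> ks g" "mdeg \<mu> = mdeg \<nu>"
    using keys_peval[OF hom_lin, of \<mu> w g] unfolding subst_peval by blast
  then show "mdeg \<mu> \<le> D" using assms unfolding degle_def by simp
qed

lemma degle_exists: "\<exists>D. degle D (g :: ('n::finite, 'k::field) sympoly)"
proof -
  have "\<forall>\<nu>\<in>ks g. mdeg \<nu> \<le> Max (mdeg ` ks g)" by (auto intro: Max_ge)
  then show ?thesis unfolding degle_def by blast
qed

lemma lk_le_mdeg: "lk \<nu> i \<le> mdeg (\<nu> :: 'n::finite \<Rightarrow>\<^sub>0 nat)"
  unfolding mdeg_def by (rule member_le_sum) auto

lemma finite_bounded_funs: "finite {f :: 'n::finite \<Rightarrow> nat. \<forall>i. f i \<le> D}"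
proof -
  have "finite {f :: 'n \<Rightarrow> nat. \<forall>x. (x \<in> UNIV \<longrightarrow> f x \<in> {..D}) \<and> (x \<notin> UNIV \<longrightarrow> f x = 0)}"
    by (rule finite_set_of_finite_funs) auto
  moreover have "{f :: 'n \<Rightarrow> nat. \<forall>x. (x \<in> UNIV \<longrightarrow> f x \<in> {..D}) \<and> (x \<notin> UNIV \<longrightarrow> f x = 0)}
     = {f. \<forall>i. f i \<le> D}" by auto
  ultimately show ?thesis by simp
qed

lemma finite_degle_set: "finite {\<nu> :: 'n::finite \<Rightarrow>\<^sub>0 nat. mdeg \<nu> \<le> D}"
proof (rule finite_subset)
  show "{\<nu> :: 'n \<Rightarrow>\<^sub>0 nat. mdeg \<nu> \<le> D} \<subseteq> lk -` {f. \<forall>i. f i \<le> D}"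
  proof
    fix \<nu> :: "'n \<Rightarrow>\<^sub>0 nat" assume "\<nu> \<in> {\<nu>. mdeg \<nu> \<le> D}"
    then have "lk \<nu> i \<le> D" for i using lk_le_mdeg[of \<nu> i] by simp
    then show "\<nu> \<in> lk -` {f. \<forall>i. f i \<le> D}" by simp
  qed
  show "finite (lk -` {f :: 'n \<Rightarrow> nat. \<forall>i. f i \<le> D})"
  proof (rule finite_vimageI)
    show "finite {f :: 'n \<Rightarrow> nat. \<forall>i. f i \<le> D}" by (rule finite_bounded_funs)
    show "inj (lk :: ('n \<Rightarrow>\<^sub>0 nat) \<Rightarrow> _)" by (rule injI) (rule poly_mapping_eqI, simp)
  qed
qed

lemma lin_expand: "lin l = (\<Sum>i\<in>UNIV. sg (sg i 1) (l i))"
  unfolding lin_def pvar_def pconst_single ..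

lemma lookup_lin: "lk (lin l) \<kappa> = (\<Sum>i\<in>UNIV. if sg i 1 = \<kappa> then l i else 0)"
  unfolding lin_expand by (simp add: lookup_sum lookup_single when_def)

lemma keys_lin: "ks (lin l) \<subseteq> range (\<lambda>i. sg i (1::nat))"
proof -
  have "ks (lin l) \<subseteq> (\<Union>i\<in>UNIV. ks (sg (sg i 1) (l i)))" unfolding lin_expand by (rule keys_sum)
  also have "\<dots> \<subseteq> range (\<lambda>i. sg i (1::nat))" by auto
  finally show ?thesis .
qed

lemma single_key_inj: "sg j (1::nat) = sg i 1 \<longleftrightarrow> j = i"
proof
  assume "sg j (1::nat) = sg i 1"
  then have "lk (sg j (1::nat)) i = lk (sg i 1) i" by simp
  then show "j = i" by (simp add: lookup_single when_def split: if_splits)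
qed simp

lemmas single_key_inj' = single_key_inj[simplified]

lemma lookup_lin_single: "lk (lin l) (sg i 1) = l i"
proof -
  have "(\<Sum>j\<in>UNIV. if sg j (1::nat) = sg i 1 then l j else 0) = (\<Sum>j\<in>UNIV. if j = i then l j else 0)"
    by (intro sum.cong) (auto simp: single_key_inj single_key_inj')
  then show ?thesis unfolding lookup_lin by simp
qed

section \<open>Gauss norms\<close>

definition wt :: "('n::finite \<Rightarrow> real) \<Rightarrow> ('n \<Rightarrow>\<^sub>0 nat) \<Rightarrow> real" where
  "wt \<rho> \<nu> = (\<Prod>i\<in>UNIV. \<rho> i ^ lk \<nu> i)"

lemma wt_add: "wt \<rho> (\<nu> + \<mu>) = wt \<rho> \<nu> * wt \<rho> \<mu>"
  unfolding wt_def by (simp add: lookup_add power_add prod.distrib)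
lemma wt_0[simp]: "wt \<rho> 0 = 1" unfolding wt_def by simp
lemma wt_nonneg: "(\<And>i. \<rho> i \<ge> 0) \<Longrightarrow> wt \<rho> \<nu> \<ge> 0" unfolding wt_def by (auto intro!: prod_nonneg)
lemma wt_single: "wt \<rho> (sg i 1) = \<rho> i"
proof -
  have "wt \<rho> (sg i 1) = (\<Prod>j\<in>UNIV. if i = j then \<rho> j else 1)"
    unfolding wt_def by (intro prod.cong) (auto simp: lookup_single when_def)
  then show ?thesis by simp
qed
lemma wt_scale: "wt (\<lambda>i. c * \<rho> i) \<nu> = c ^ mdeg \<nu> * wt \<rho> \<nu>"
  unfolding wt_def mdeg_def by (simp add: power_mult_distrib prod.distrib power_sum)

lemmas wt_single' = wt_single[simplified]
lemmas lookup_lin_single' = lookup_lin_single[simplified]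

context nlf
begin

definition trm where "trm \<rho> g \<nu> = absK (lk g \<nu>) * wt \<rho> \<nu>"

lemma gauss_Mx: "gauss absK \<rho> g = Mx (ks g) (trm \<rho> g)"
proof -
  have "{absK (lk g \<nu>) * (\<Prod>i\<in>UNIV. \<rho> i ^ lk \<nu> i) | \<nu>. \<nu> \<in> ks g} \<union> {0} = insert 0 (trm \<rho> g ` ks g)"
    unfolding trm_def wt_def by auto
  then show ?thesis unfolding gauss_def Mx_def by simp
qed

lemma gauss_superset: assumes "finite S" "ks g \<subseteq> S" "\<And>i. \<rho> i \<ge> 0"
  shows "gauss absK \<rho> g = Mx S (trm \<rho> g)"
proof -
  have "insert 0 (trm \<rho> g ` S) = insert 0 (trm \<rho> g ` ks g)"
    using assms(2) by (auto simp: trm_def in_keys_iff)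
  then show ?thesis unfolding gauss_Mx Mx_def by simp
qed

lemma trm_nonneg: "(\<And>i. \<rho> i \<ge> 0) \<Longrightarrow> trm \<rho> g \<nu> \<ge> 0"
  unfolding trm_def by (simp add: wt_nonneg)

lemma gauss_nonneg: "gauss absK \<rho> g \<ge> 0" unfolding gauss_Mx by (rule Mx_nonneg) simp

lemma gauss_zero[simp]: "gauss absK \<rho> 0 = 0" unfolding gauss_Mx by simp

lemma gauss_ge: "trm \<rho> g \<nu> \<le> gauss absK \<rho> g"
proof (cases "\<nu> \<in> ks g")
  case True then show ?thesis unfolding gauss_Mx by (intro Mx_ge) auto
next
  case False then show ?thesis using gauss_nonneg by (simp add: trm_def in_keys_iff)
qed

lemma gauss_le: "(\<And>\<nu>. \<nu> \<in> ks g \<Longrightarrow> trm \<rho> g \<nu> \<le> M) \<Longrightarrow> 0 \<le> M \<Longrightarrow> gauss absK \<rho> g \<le> M"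
  unfolding gauss_Mx by (rule Mx_le) auto

lemma gauss_attained: "gauss absK \<rho> g = 0 \<or> (\<exists>\<nu>\<in>ks g. gauss absK \<rho> g = trm \<rho> g \<nu>)"
  unfolding gauss_Mx by (rule Mx_attained) simp

lemma gauss_add: assumes "\<And>i. \<rho> i \<ge> 0"
  shows "gauss absK \<rho> (g + h) \<le> max (gauss absK \<rho> g) (gauss absK \<rho> h)"
proof (rule gauss_le)
  fix \<nu>
  have "trm \<rho> (g + h) \<nu> \<le> max (absK (lk g \<nu>)) (absK (lk h \<nu>)) * wt \<rho> \<nu>"
    unfolding trm_def lookup_add by (rule mult_right_mono[OF abs_ultra wt_nonneg[OF assms]])
  also have "\<dots> = max (trm \<rho> g \<nu>) (trm \<rho> h \<nu>)"
    unfolding trm_def using wt_nonneg[of \<rho> \<nu>, OF assms] by (simp add: max_mult_distrib_right)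
  also have "\<dots> \<le> max (gauss absK \<rho> g) (gauss absK \<rho> h)" by (intro max.mono gauss_ge)
  finally show "trm \<rho> (g + h) \<nu> \<le> max (gauss absK \<rho> g) (gauss absK \<rho> h)" .
qed (simp add: gauss_nonneg le_max_iff_disj)

lemma gauss_sum_le: assumes "\<And>i. \<rho> i \<ge> 0" "\<And>a. a \<in> A \<Longrightarrow> gauss absK \<rho> (f a) \<le> M" "0 \<le> M"
  shows "gauss absK \<rho> (sum f A) \<le> M"
  using assms(2)
proof (induction A rule: infinite_finite_induct)
  case (insert x F)
  have 1: "gauss absK \<rho> (f x) \<le> M" using insert.prems by simp
  have 2: "gauss absK \<rho> (sum f F) \<le> M" using insert by simp
  show ?case using gauss_add[of \<rho> "f x" "sum f F", OF assms(1)] 1 2 insert(1,2) by simp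
qed (use assms(3) gauss_zero in auto)

lemma keys_pconst_mult: "ks (pconst c * g) \<subseteq> ks g"
  by (auto simp: in_keys_iff lookup_pconst_mult)

lemma gauss_pconst_mult: assumes "\<And>i. \<rho> i \<ge> 0"
  shows "gauss absK \<rho> (pconst c * g) = absK c * gauss absK \<rho> g"
proof -
  have "gauss absK \<rho> (pconst c * g) = Mx (ks g) (trm \<rho> (pconst c * g))"
    by (rule gauss_superset[OF _ keys_pconst_mult assms]) simp
  also have "\<dots> = Mx (ks g) (\<lambda>\<nu>. absK c * trm \<rho> g \<nu>)"
    unfolding trm_def lookup_pconst_mult by (simp add: mult_ac)
  also have "\<dots> = absK c * gauss absK \<rho> g" unfolding gauss_Mx by (rule Mx_scale) auto
  finally show ?thesis .
qed

lemma gauss_one: "gauss absK \<rho> 1 = 1"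
  unfolding gauss_Mx by (simp add: Mx_def trm_def)

lemma gauss_pconst: assumes "\<And>i. \<rho> i \<ge> 0" shows "gauss absK \<rho> (pconst c) = absK c"
proof -
  have "gauss absK \<rho> 1 = 1" by (rule gauss_one)
  then show ?thesis using gauss_pconst_mult[of \<rho> c 1, OF assms] by simp
qed

lemma gauss_lin: assumes "\<And>i. \<rho> i \<ge> 0"
  shows "gauss absK \<rho> (lin l) = Mx UNIV (\<lambda>i. absK (l i) * \<rho> i)"
proof -
  have "gauss absK \<rho> (lin l) = Mx (range (\<lambda>i. sg i 1)) (trm \<rho> (lin l))"
    by (rule gauss_superset[OF _ keys_lin assms]) simp
  also have "\<dots> = Mx UNIV (\<lambda>i. absK (l i) * \<rho> i)"
    unfolding Mx_def trm_def by (simp add: image_image lookup_lin_single wt_single lookup_lin_single' wt_single')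
  finally show ?thesis .
qed

lemma gauss_scale: assumes "homogeneous d g" "c \<ge> 0"
  shows "gauss absK (\<lambda>i. c * \<rho> i) g = c ^ d * gauss absK \<rho> g"
proof -
  have "gauss absK (\<lambda>i. c * \<rho> i) g = Mx (ks g) (\<lambda>\<nu>. c ^ d * trm \<rho> g \<nu>)"
    unfolding gauss_Mx Mx_def trm_def wt_scale using assms(1) unfolding homogeneous_def
    by (intro arg_cong[where f = Max] arg_cong[where f = "insert 0"] image_cong) (auto simp: mult_ac)
  also have "\<dots> = c ^ d * gauss absK \<rho> g" unfolding gauss_Mx by (rule Mx_scale) (auto simp: assms)
  finally show ?thesis .
qed

end

definition lexless :: "('n \<Rightarrow> nat) \<Rightarrow> ('n \<Rightarrow>\<^sub>0 nat) \<Rightarrow> ('n \<Rightarrow>\<^sub>0 nat) \<Rightarrow> bool" where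
  "lexless idx \<nu> \<mu> \<longleftrightarrow> (\<exists>i. lk \<nu> i < lk \<mu> i \<and> (\<forall>j. idx j < idx i \<longrightarrow> lk \<nu> j = lk \<mu> j))"

lemma lexless_irrefl: "\<not> lexless idx \<nu> \<nu>" unfolding lexless_def by auto

lemma lexless_trans: assumes "inj idx" "lexless idx a b" "lexless idx b c" shows "lexless idx a c"
proof -
  obtain i where i: "lk a i < lk b i" "\<And>j. idx j < idx i \<Longrightarrow> lk a j = lk b j"
    using assms(2) unfolding lexless_def by blast
  obtain i' where i': "lk b i' < lk c i'" "\<And>j. idx j < idx i' \<Longrightarrow> lk b j = lk c j"
    using assms(3) unfolding lexless_def by blast
  consider "idx i < idx i'" | "idx i' < idx i" | "idx i = idx i'" by linarith
  then show ?thesis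
  proof cases
    case 1
    then have "lk a i < lk c i" using i i'(2)[of i] by simp
    moreover have "lk a j = lk c j" if "idx j < idx i" for j using i(2)[OF that] i'(2)[of j] that 1 by simp
    ultimately show ?thesis unfolding lexless_def by blast
  next
    case 2
    then have "lk a i' < lk c i'" using i' i(2)[of i'] by simp
    moreover have "lk a j = lk c j" if "idx j < idx i'" for j using i'(2)[OF that] i(2)[of j] that 2 by simp
    ultimately show ?thesis unfolding lexless_def by blast
  next
    case 3
    then have "i = i'" using assms(1) by (simp add: inj_eq)
    then show ?thesis using i i' unfolding lexless_def by (metis less_trans)
  qed
qed

lemma lexless_total: assumes "\<nu> \<noteq> \<mu>" shows "lexless idx \<nu> \<mu> \<or> lexless idx \<mu> \<nu>"
proof -
  have "\<exists>i. lk \<nu> i \<noteq> lk \<mu> i"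
  proof (rule ccontr)
    assume "\<not> ?thesis"
    then have "\<nu> = \<mu>" by (intro poly_mapping_eqI) auto
    then show False using assms by simp
  qed
  then obtain i0 where "lk \<nu> i0 \<noteq> lk \<mu> i0" by blast
  then obtain i where i: "lk \<nu> i \<noteq> lk \<mu> i" "\<And>j. lk \<nu> j \<noteq> lk \<mu> j \<Longrightarrow> idx i \<le> idx j"
    using ex_has_least_nat[of "\<lambda>i. lk \<nu> i \<noteq> lk \<mu> i" i0 idx] by blast
  have eq: "lk \<nu> j = lk \<mu> j" if "idx j < idx i" for j using i(2)[of j] that by linarith
  show ?thesis
  proof (cases "lk \<nu> i < lk \<mu> i")
    case True then show ?thesis using eq unfolding lexless_def by blast
  next
    case False then have "lk \<mu> i < lk \<nu> i" using i(1) by simp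
    then show ?thesis using eq unfolding lexless_def by (metis)
  qed
qed

lemma lexless_add: "lexless idx \<nu> \<mu> \<Longrightarrow> lexless idx (\<nu> + \<kappa>) (\<mu> + \<kappa>)"
  unfolding lexless_def by (auto simp: lookup_add)

lemma lexless_max: assumes "inj idx" "finite S" "S \<noteq> {}"
  shows "\<exists>m\<in>S. \<forall>\<nu>\<in>S. \<nu> \<noteq> m \<longrightarrow> lexless idx \<nu> m"
  using assms(2,3)
proof (induction S rule: finite_ne_induct)
  case (singleton x) then show ?case by auto
next
  case (insert x F)
  then obtain m where m: "m \<in> F" "\<And>\<nu>. \<nu> \<in> F \<Longrightarrow> \<nu> \<noteq> m \<Longrightarrow> lexless idx \<nu> m" by blast
  have "x \<noteq> m" using insert m by auto
  then consider "lexless idx x m" | "lexless idx m x" using lexless_total by blast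
  then show ?case
  proof cases
    case 1 then show ?thesis using m by (intro bexI[of _ m]) auto
  next
    case 2
    have "lexless idx \<nu> x" if "\<nu> \<in> insert x F" "\<nu> \<noteq> x" for \<nu>
    proof -
      have "\<nu> \<in> F" using that by simp
      show ?thesis
      proof (cases "\<nu> = m")
        case True then show ?thesis using 2 by simp
      next
        case False then show ?thesis using m(2)[OF \<open>\<nu> \<in> F\<close>] 2 lexless_trans[OF assms(1)] by blast
      qed
    qed
    then show ?thesis by blast
  qed
qed

lemma mult_expand: "g * h = (\<Sum>\<nu>\<in>ks g. \<Sum>\<mu>\<in>ks h. sg (\<nu> + \<mu>) (lk g \<nu> * lk h \<mu>))"
proof -
  have "g * h = (\<Sum>\<nu>\<in>ks g. sg \<nu> (lk g \<nu>)) * (\<Sum>\<mu>\<in>ks h. sg \<mu> (lk h \<mu>))"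
    using expand[of g] expand[of h] by simp
  also have "\<dots> = (\<Sum>\<nu>\<in>ks g. \<Sum>\<mu>\<in>ks h. sg (\<nu> + \<mu>) (lk g \<nu> * lk h \<mu>))"
    by (simp add: sum_prod_expand mult_single)
  finally show ?thesis .
qed

lemma lookup_mult_fin: "lk (g * h) \<kappa> =
   (\<Sum>p\<in>ks g \<times> ks h. if fst p + snd p = \<kappa> then lk g (fst p) * lk h (snd p) else 0)"
proof -
  have "lk (g * h) \<kappa> = (\<Sum>\<nu>\<in>ks g. \<Sum>\<mu>\<in>ks h. if \<nu> + \<mu> = \<kappa> then lk g \<nu> * lk h \<mu> else 0)"
    unfolding mult_expand by (simp add: lookup_sum lookup_single when_def)
  also have "\<dots> = (\<Sum>p\<in>ks g \<times> ks h. if fst p + snd p = \<kappa> then lk g (fst p) * lk h (snd p) else 0)"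
    by (subst sum.cartesian_product) (simp add: case_prod_beta)
  finally show ?thesis .
qed

context nlf
begin

lemma abs_sum_less: assumes "finite S" "\<And>i. i \<in> S \<Longrightarrow> absK (f i) < T" "0 < T"
  shows "absK (sum f S) < T"
  using assms(1,2)
proof (induction S rule: finite_induct)
  case (insert x F)
  have "absK (f x + sum f F) \<le> max (absK (f x)) (absK (sum f F))" by (rule abs_ultra)
  moreover have "absK (f x) < T" "absK (sum f F) < T" using insert by auto
  ultimately show ?case using insert(1,2) by simp
qed (use assms(3) in simp)

lemma gauss_mult: assumes rho: "\<And>i. \<rho> i \<ge> 0"
  shows "gauss absK \<rho> (g * h) = gauss absK \<rho> g * gauss absK \<rho> h"
proof (rule antisym)
  define Mg where "Mg = gauss absK \<rho> g"
  define Mh where "Mh = gauss absK \<rho> h"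
  have Mg0: "Mg \<ge> 0" "Mh \<ge> 0" unfolding Mg_def Mh_def by (auto intro: gauss_nonneg)
  define c where "c \<kappa> p = (if fst p + snd p = \<kappa> then lk g (fst p) * lk h (snd p) else 0)" for \<kappa> p
  have lk_gh: "lk (g * h) \<kappa> = (\<Sum>p\<in>ks g \<times> ks h. c \<kappa> p)" for \<kappa>
    unfolding c_def by (rule lookup_mult_fin)
  have cbound: "absK (c \<kappa> p) * wt \<rho> \<kappa> \<le> Mg * Mh" for \<kappa> p
  proof (cases "fst p + snd p = \<kappa>")
    case True
    then have "absK (c \<kappa> p) * wt \<rho> \<kappa> = trm \<rho> g (fst p) * trm \<rho> h (snd p)"
      unfolding c_def trm_def by (auto simp: wt_add mult_ac)
    also have "\<dots> \<le> Mg * Mh" unfolding Mg_def Mh_def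
      by (intro mult_mono gauss_ge gauss_nonneg trm_nonneg rho)
    finally show ?thesis .
  next
    case False then show ?thesis unfolding c_def using Mg0 by simp
  qed
  show "gauss absK \<rho> (g * h) \<le> Mg * Mh"
  proof (rule gauss_le)
    fix \<kappa>
    show "trm \<rho> (g * h) \<kappa> \<le> Mg * Mh"
    proof (cases "wt \<rho> \<kappa> = 0")
      case True then show ?thesis unfolding trm_def using Mg0 by simp
    next
      case False
      then have wpos: "wt \<rho> \<kappa> > 0" using wt_nonneg[of \<rho> \<kappa>, OF rho] by simp
      have "absK (lk (g * h) \<kappa>) \<le> Mg * Mh / wt \<rho> \<kappa>"
        unfolding lk_gh
      proof (rule abs_sum_le)
        show "absK (c \<kappa> p) \<le> Mg * Mh / wt \<rho> \<kappa>" for p using cbound[of \<kappa> p] wpos by (simp add: le_divide_eq)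
        show "0 \<le> Mg * Mh / wt \<rho> \<kappa>" using Mg0 wpos by simp
      qed simp
      then show ?thesis unfolding trm_def using wpos by (simp add: le_divide_eq)
    qed
  qed (use Mg0 in simp)
  show "Mg * Mh \<le> gauss absK \<rho> (g * h)"
  proof (cases "Mg = 0 \<or> Mh = 0")
    case True then show ?thesis using gauss_nonneg by auto
  next
    case False
    then have Mpos: "Mg > 0" "Mh > 0" using Mg0 by auto
    define Sg where "Sg = {\<nu>\<in>ks g. trm \<rho> g \<nu> = Mg}"
    define Sh where "Sh = {\<nu>\<in>ks h. trm \<rho> h \<nu> = Mh}"
    have "Sg \<noteq> {}" using gauss_attained[of \<rho> g] False unfolding Sg_def Mg_def by auto
    moreover have "Sh \<noteq> {}" using gauss_attained[of \<rho> h] False unfolding Sh_def Mh_def by auto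
    moreover have "finite Sg" "finite Sh" unfolding Sg_def Sh_def by auto
    moreover obtain idx :: "'a \<Rightarrow> nat" where idx: "inj idx"
      using finite_imp_inj_to_nat_seg[of "UNIV :: 'a set"] by auto
    ultimately obtain \<nu>0 \<mu>0 where
      \<nu>0: "\<nu>0 \<in> Sg" "\<And>\<nu>. \<nu> \<in> Sg \<Longrightarrow> \<nu> \<noteq> \<nu>0 \<Longrightarrow> lexless idx \<nu> \<nu>0" and
      \<mu>0: "\<mu>0 \<in> Sh" "\<And>\<mu>. \<mu> \<in> Sh \<Longrightarrow> \<mu> \<noteq> \<mu>0 \<Longrightarrow> lexless idx \<mu> \<mu>0"
      using lexless_max[OF idx] by meson
    define \<kappa> where "\<kappa> = \<nu>0 + \<mu>0"
    define T where "T = absK (lk g \<nu>0 * lk h \<mu>0)"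
    have tg: "trm \<rho> g \<nu>0 = Mg" and th: "trm \<rho> h \<mu>0 = Mh" and kg: "\<nu>0 \<in> ks g" and kh: "\<mu>0 \<in> ks h"
      using \<nu>0(1) \<mu>0(1) unfolding Sg_def Sh_def by auto
    have "T * wt \<rho> \<kappa> = (absK (lk g \<nu>0) * wt \<rho> \<nu>0) * (absK (lk h \<mu>0) * wt \<rho> \<mu>0)"
      unfolding T_def \<kappa>_def by (simp add: wt_add mult_ac)
    then have TW: "T * wt \<rho> \<kappa> = Mg * Mh" using tg th unfolding trm_def by simp
    then have wpos: "wt \<rho> \<kappa> > 0" and Tpos: "T > 0"
      using Mpos wt_nonneg[of \<rho> \<kappa>, OF rho] unfolding T_def
      by (metis abs_nonneg mult_pos_pos mult_eq_0_iff order_le_less)+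
    have uniq: "\<nu> = \<nu>0 \<and> \<mu> = \<mu>0" if "\<nu> \<in> Sg" "\<mu> \<in> Sh" "\<nu> + \<mu> = \<kappa>" for \<nu> \<mu>
    proof (rule ccontr)
      assume ne: "\<not> (\<nu> = \<nu>0 \<and> \<mu> = \<mu>0)"
      have "\<nu> \<noteq> \<nu>0 \<and> \<mu> \<noteq> \<mu>0"
        using ne that(3) unfolding \<kappa>_def by (auto simp: add.commute)
      then have "lexless idx \<nu> \<nu>0" "lexless idx \<mu> \<mu>0" using \<nu>0(2) \<mu>0(2) that by auto
      then have "lexless idx (\<nu> + \<mu>) (\<nu>0 + \<mu>)" "lexless idx (\<mu> + \<nu>0) (\<mu>0 + \<nu>0)"
        by (auto intro: lexless_add)
      then have "lexless idx (\<nu> + \<mu>) (\<nu>0 + \<mu>0)"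
        using lexless_trans[OF idx] by (metis add.commute)
      then show False using that(3) lexless_irrefl unfolding \<kappa>_def by metis
    qed
    have small: "absK (c \<kappa> p) < T" if p: "p \<in> ks g \<times> ks h - {(\<nu>0, \<mu>0)}" for p
    proof (cases "fst p + snd p = \<kappa>")
      case False then show ?thesis unfolding c_def using Tpos by simp
    next
      case True
      have eq: "absK (c \<kappa> p) * wt \<rho> \<kappa> = trm \<rho> g (fst p) * trm \<rho> h (snd p)"
        using True unfolding c_def trm_def by (auto simp: wt_add mult_ac)
      have le1: "trm \<rho> g (fst p) \<le> Mg" "trm \<rho> h (snd p) \<le> Mh" unfolding Mg_def Mh_def by (auto intro: gauss_ge)
      have "\<not> (fst p \<in> Sg \<and> snd p \<in> Sh)" using uniq[of "fst p" "snd p"] True p by (cases p) auto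
      then have "trm \<rho> g (fst p) < Mg \<or> trm \<rho> h (snd p) < Mh" using p le1 unfolding Sg_def Sh_def by auto
      moreover have n1: "trm \<rho> g (fst p) \<ge> 0" "trm \<rho> h (snd p) \<ge> 0" by (auto intro: trm_nonneg rho)
      ultimately have "trm \<rho> g (fst p) * trm \<rho> h (snd p) < Mg * Mh"
      proof (elim disjE)
        assume a: "trm \<rho> g (fst p) < Mg"
        have "trm \<rho> g (fst p) * trm \<rho> h (snd p) \<le> trm \<rho> g (fst p) * Mh"
          using le1 n1 by (intro mult_left_mono) auto
        also have "\<dots> < Mg * Mh" using a Mpos by (intro mult_strict_right_mono) auto
        finally show ?thesis .
      next
        assume b: "trm \<rho> h (snd p) < Mh"
        have "trm \<rho> g (fst p) * trm \<rho> h (snd p) \<le> Mg * trm \<rho> h (snd p)"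
          using le1 n1 by (intro mult_right_mono) auto
        also have "\<dots> < Mg * Mh" using b Mpos by (intro mult_strict_left_mono) auto
        finally show ?thesis .
      qed
      then have "absK (c \<kappa> p) * wt \<rho> \<kappa> < T * wt \<rho> \<kappa>" using eq TW by simp
      then show ?thesis using wpos by simp
    qed
    have mem: "(\<nu>0, \<mu>0) \<in> ks g \<times> ks h" using kg kh by simp
    have "lk (g * h) \<kappa> = c \<kappa> (\<nu>0, \<mu>0) + (\<Sum>p\<in>ks g \<times> ks h - {(\<nu>0, \<mu>0)}. c \<kappa> p)"
      unfolding lk_gh by (rule sum.remove[OF _ mem]) simp
    moreover have "absK (\<Sum>p\<in>ks g \<times> ks h - {(\<nu>0, \<mu>0)}. c \<kappa> p) < T"
      by (rule abs_sum_less) (auto intro: small Tpos)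
    moreover have "absK (c \<kappa> (\<nu>0, \<mu>0)) = T" unfolding c_def T_def \<kappa>_def by simp
    ultimately have "absK (lk (g * h) \<kappa>) = T" using abs_strict' by simp
    then have "trm \<rho> (g * h) \<kappa> = Mg * Mh" using TW unfolding trm_def by simp
    then show ?thesis using gauss_ge[of \<rho> "g * h" \<kappa>] by simp
  qed
qed

end

lemma lincomb_sub: "lincomb (\<lambda>j. l j - l' j) w = (\<lambda>i. lincomb l w i - lincomb l' w i)"
  unfolding lincomb_def by (rule ext) (simp add: algebra_simps sum_subtractf)

lemma lincomb_winv: "is_basis w \<Longrightarrow> lincomb (lincomb v (winv w)) w = v"
  by (simp add: lincomb_lincomb winv_left lincomb_ev2)

lemma winv_ev: "winv (ev :: 'n::finite \<Rightarrow> 'n \<Rightarrow> 'k::field) = ev"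
proof
  fix j
  have "is_basis (ev :: 'n \<Rightarrow> 'n \<Rightarrow> 'k)"
    unfolding is_basis_def using lincomb_ev2 by metis
  then have "lincomb (winv ev j) (ev :: 'n \<Rightarrow> 'n \<Rightarrow> 'k) = ev j" by (rule winv_left)
  then show "winv ev j = (ev j :: 'n \<Rightarrow> 'k)" using lincomb_ev2 by metis
qed

context nlf
begin

lemma GI_UNIV:
  fixes \<gamma> :: "('n::finite \<Rightarrow> 'k) \<Rightarrow> real"
  assumes sn: "sn absK \<gamma>"
  shows "\<exists>k. canonical_wrt absK \<gamma> k \<and> canonical_wrt absK (nrm absK) k \<and> (\<forall>j. nrm absK (k j) = 1)"
proof -
  obtain k where k: "\<forall>j\<in>UNIV. k j \<in> VI UNIV \<and> nrm absK (k j) = 1"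
      "\<forall>l. nrm absK (lcI UNIV l k) = Mx UNIV (\<lambda>j. absK (l j))"
      "\<forall>l. \<gamma> (lcI UNIV l k) = Mx UNIV (\<lambda>j. absK (l j) * \<gamma> (k j))"
      "\<forall>x\<in>VI UNIV. \<exists>l. x = lcI UNIV l k"
    using GI_gen[OF sn, of UNIV] by blast
  have basis: "is_basis k" unfolding is_basis_def
  proof
    fix v :: "'n \<Rightarrow> 'k"
    obtain l where l: "v = lincomb l k" using k(4) unfolding VI_def lincomb_lcI by auto
    show "\<exists>!l. lincomb l k = v"
    proof (rule ex1I[of _ l])
      show "lincomb l k = v" using l by simp
      fix l' assume l': "lincomb l' k = v"
      have "nrm absK (lincomb (\<lambda>j. l' j - l j) k) = 0"
        unfolding lincomb_sub using l l' nrm_zero by simp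
      then have "Mx UNIV (\<lambda>j. absK (l' j - l j)) = 0" using k(2) unfolding lincomb_lcI by simp
      then have "absK (l' j - l j) \<le> 0" for j using Mx_ge[of UNIV j "\<lambda>j. absK (l' j - l j)"] by simp
      then have "absK (l' j - l j) = 0" for j using abs_nonneg[of "l' j - l j"] by (meson antisym)
      then show "l' = l" by (intro ext) simp
    qed
  qed
  have cg: "canonical_wrt absK \<gamma> k" unfolding canonical_wrt_def
    using basis k(3) sn_nonneg[OF sn] by (simp add: lincomb_lcI Mx_eq_MAX)
  have cn: "canonical_wrt absK (nrm absK) k" unfolding canonical_wrt_def
    using basis k(1,2) by (simp add: lincomb_lcI Mx_eq_MAX)
  show ?thesis using cg cn k(1) by blast
qed

definition Jr :: "(('n::finite \<Rightarrow> 'k) \<Rightarrow> real) \<Rightarrow> ('n \<Rightarrow> ('n \<Rightarrow> 'k)) \<Rightarrow> ('n, 'k) sympoly \<Rightarrow> real" where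
  "Jr \<gamma> w f = gauss absK (\<lambda>i. \<gamma> (w i)) (subst (winv w) f)"

lemma canonical_basis: "canonical_wrt absK \<gamma> w \<Longrightarrow> is_basis w" unfolding canonical_wrt_def by blast

lemma j_rep_eq: "is_basis w \<Longrightarrow> j_rep absK \<gamma> w f = Jr \<gamma> w f"
  unfolding j_rep_def Jr_def by (simp add: subst_THE)

lemma Jr_nonneg: "Jr \<gamma> w f \<ge> 0" unfolding Jr_def by (rule gauss_nonneg)

lemma Jr_add: "sn absK \<gamma> \<Longrightarrow> Jr \<gamma> w (f + g) \<le> max (Jr \<gamma> w f) (Jr \<gamma> w g)"
  unfolding Jr_def subst_add by (rule gauss_add) (simp add: sn_nonneg)

lemma Jr_mult: "sn absK \<gamma> \<Longrightarrow> Jr \<gamma> w (f * g) = Jr \<gamma> w f * Jr \<gamma> w g"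
  unfolding Jr_def subst_mult by (rule gauss_mult) (simp add: sn_nonneg)

lemma Jr_pconst: "sn absK \<gamma> \<Longrightarrow> Jr \<gamma> w (pconst c) = absK c"
  unfolding Jr_def subst_pconst by (rule gauss_pconst) (simp add: sn_nonneg)

lemma Jr_lin: assumes sn: "sn absK \<gamma>" and c: "canonical_wrt absK \<gamma> w"
  shows "Jr \<gamma> w (lin v) = \<gamma> v"
proof -
  have b: "is_basis w" using c by (rule canonical_basis)
  define l where "l = lincomb v (winv w)"
  have "Jr \<gamma> w (lin v) = Mx UNIV (\<lambda>i. absK (l i) * \<gamma> (w i))"
    unfolding Jr_def subst_lin l_def by (rule gauss_lin) (simp add: sn_nonneg[OF sn])
  also have "\<dots> = (MAX i\<in>UNIV. absK (l i) * \<gamma> (w i))" by (rule Mx_eq_MAX) (auto simp: sn_nonneg[OF sn])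
  also have "\<dots> = \<gamma> (lincomb l w)" using c unfolding canonical_wrt_def by simp
  also have "lincomb l w = v" unfolding l_def by (rule lincomb_winv[OF b])
  finally show ?thesis .
qed

lemma alpha_sum: assumes "\<alpha> 0 = 0" "\<And>f g. \<alpha> (f + g) \<le> max (\<alpha> f) (\<alpha> g)" "\<And>f. \<alpha> f \<ge> 0"
    and fin: "finite S"
  shows "\<alpha> (sum F S) \<le> Mx S (\<lambda>s. \<alpha> (F s))"
  using fin
proof (induction S rule: finite_induct)
  case empty then show ?case using assms by simp
next
  case (insert x F')
  have "\<alpha> (sum F (insert x F')) \<le> max (\<alpha> (F x)) (\<alpha> (sum F F'))" using insert assms(2) by simp
  also have "\<dots> \<le> max (\<alpha> (F x)) (Mx F' (\<lambda>s. \<alpha> (F s)))" using insert by simp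
  also have "\<dots> = Mx (insert x F') (\<lambda>s. \<alpha> (F s))" using Mx_insert[OF insert(1)] by simp
  finally show ?case .
qed

lemma alpha_bound:
  fixes \<alpha> :: "('n::finite, 'k) sympoly \<Rightarrow> real"
  assumes nn: "\<And>f. \<alpha> f \<ge> 0" and ul: "\<And>f g. \<alpha> (f + g) \<le> max (\<alpha> f) (\<alpha> g)"
    and mu: "\<And>f g. \<alpha> (f * g) = \<alpha> f * \<alpha> g" and pc: "\<And>c. \<alpha> (pconst c) = absK c"
  shows "\<alpha> (subst u g) \<le> gauss absK (\<lambda>i. \<alpha> (lin (u i))) g"
proof -
  have a0: "\<alpha> 0 = 0" using pc[of 0] by simp
  have a1: "\<alpha> 1 = 1" using pc[of 1] by simp
  have apow: "\<alpha> (x ^ n) = \<alpha> x ^ n" for x n by (induction n) (auto simp: mu a1)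
  have aprod: "\<alpha> (prod F S) = (\<Prod>s\<in>S. \<alpha> (F s))" for F and S :: "'n set"
    by (induction S rule: infinite_finite_induct) (auto simp: mu a1)
  have "\<alpha> (subst u g) \<le> Mx (ks g) (\<lambda>\<nu>. \<alpha> (pconst (lk g \<nu>) * xpow (\<lambda>i. lin (u i)) \<nu>))"
    unfolding subst_peval peval_def by (rule alpha_sum[OF a0 ul nn]) simp
  also have "\<dots> = Mx (ks g) (trm (\<lambda>i. \<alpha> (lin (u i))) g)"
    unfolding trm_def wt_def xpow_def by (simp add: mu pc aprod apow)
  also have "\<dots> = gauss absK (\<lambda>i. \<alpha> (lin (u i))) g" by (simp add: gauss_Mx)
  finally show ?thesis .
qed

lemma Jr_min:
  assumes sn: "sn absK \<gamma>" and c: "canonical_wrt absK \<gamma> w" and u: "is_basis u"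
  shows "Jr \<gamma> w f \<le> gauss absK (\<lambda>i. \<gamma> (u i)) (subst (winv u) f)"
proof -
  have "Jr \<gamma> w (subst u (subst (winv u) f)) \<le> gauss absK (\<lambda>i. Jr \<gamma> w (lin (u i))) (subst (winv u) f)"
    by (rule alpha_bound) (auto simp: Jr_nonneg Jr_add[OF sn] Jr_mult[OF sn] Jr_pconst[OF sn])
  then show ?thesis using subst_inv1[OF u] Jr_lin[OF sn c] by simp
qed

lemma Jr_indep:
  assumes sn: "sn absK \<gamma>" and c: "canonical_wrt absK \<gamma> w" and c': "canonical_wrt absK \<gamma> w'"
  shows "Jr \<gamma> w f = Jr \<gamma> w' f"
  using Jr_min[OF sn c canonical_basis[OF c'], of f] Jr_min[OF sn c' canonical_basis[OF c], of f]
  unfolding Jr_def by simp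

lemma sn_scale: assumes "sn absK \<gamma>" "c \<ge> 0" shows "sn absK (\<lambda>x. c * \<gamma> x)"
  unfolding sn_def
proof (intro conjI allI)
  fix x show "c * \<gamma> x \<ge> 0" using assms(2) sn_nonneg[OF assms(1), of x] by simp
next
  fix a x show "c * \<gamma> (vsmul a x) = absK a * (c * \<gamma> x)"
    using assms(1) unfolding sn_def by simp
next
  fix x y
  have "c * \<gamma> (vadd x y) \<le> c * max (\<gamma> x) (\<gamma> y)"
    using assms unfolding sn_def by (intro mult_left_mono) auto
  also have "\<dots> = max (c * \<gamma> x) (c * \<gamma> y)" using assms(2) by (simp add: max_mult_distrib_left)
  finally show "c * \<gamma> (vadd x y) \<le> max (c * \<gamma> x) (c * \<gamma> y)" .
qed

lemma canonical_scale: "sn absK \<gamma> \<Longrightarrow> canonical_wrt absK \<gamma> w \<Longrightarrow> c \<ge> 0 \<Longrightarrow> canonical_wrt absK (\<lambda>x. c * \<gamma> x) w"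
  unfolding canonical_wrt_def
proof (elim conjE, intro conjI allI)
  fix l assume sn: "sn absK \<gamma>" and "is_basis w" "\<forall>l. \<gamma> (lincomb l w) = (MAX i\<in>UNIV. absK (l i) * \<gamma> (w i))" "c \<ge> 0"
  then have "c * \<gamma> (lincomb l w) = c * (MAX i\<in>UNIV. absK (l i) * \<gamma> (w i))" by simp
  also have "\<dots> = c * Mx UNIV (\<lambda>i. absK (l i) * \<gamma> (w i))"
    by (subst Mx_eq_MAX) (auto simp: sn_nonneg[OF sn])
  also have "\<dots> = Mx UNIV (\<lambda>i. c * (absK (l i) * \<gamma> (w i)))"
    by (rule Mx_scale[symmetric]) (auto simp: \<open>c \<ge> 0\<close>)
  also have "\<dots> = (MAX i\<in>UNIV. c * (absK (l i) * \<gamma> (w i)))"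
    by (subst Mx_eq_MAX) (auto simp: sn_nonneg[OF sn] \<open>c \<ge> 0\<close>)
  finally show "c * \<gamma> (lincomb l w) = (MAX i\<in>UNIV. absK (l i) * (c * \<gamma> (w i)))" by (simp add: mult_ac)
qed

lemma Jr_scale: assumes "homogeneous d f" "c \<ge> 0"
  shows "Jr (\<lambda>x. c * \<gamma> x) w f = c ^ d * Jr \<gamma> w f"
  unfolding Jr_def by (rule gauss_scale[OF hom_subst[OF assms(1)] assms(2)])

definition Jb :: "(('n::finite \<Rightarrow> 'k) \<Rightarrow> real) \<Rightarrow> ('n \<Rightarrow> ('n \<Rightarrow> 'k))" where
  "Jb \<gamma> = (SOME k. canonical_wrt absK \<gamma> k \<and> canonical_wrt absK (nrm absK) k \<and> (\<forall>j. nrm absK (k j) = 1))"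

lemma Jb: assumes "sn absK \<gamma>"
  shows "canonical_wrt absK \<gamma> (Jb \<gamma>)" "canonical_wrt absK (nrm absK) (Jb \<gamma>)" "nrm absK (Jb \<gamma> j) = 1"
  using someI_ex[OF GI_UNIV[OF assms]] unfolding Jb_def by blast+

definition J :: "(('n::finite \<Rightarrow> 'k) \<Rightarrow> real) \<Rightarrow> ('n, 'k) sympoly \<Rightarrow> real" where
  "J \<gamma> f = Jr \<gamma> (Jb \<gamma>) f"

lemma J_eq: "sn absK \<gamma> \<Longrightarrow> canonical_wrt absK \<gamma> w \<Longrightarrow> J \<gamma> f = Jr \<gamma> w f"
  unfolding J_def using Jr_indep Jb(1) by blast

lemma canonical_ev: "canonical_wrt absK (nrm absK) (ev :: 'n::finite \<Rightarrow> 'n \<Rightarrow> 'k)"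
  unfolding canonical_wrt_def
proof (intro conjI allI)
  show "is_basis (ev :: 'n \<Rightarrow> 'n \<Rightarrow> 'k)" unfolding is_basis_def using lincomb_ev2 by metis
  fix l :: "'n \<Rightarrow> 'k"
  have "nrm absK (lincomb l ev) = nrm absK l" by (simp add: lincomb_ev2)
  also have "\<dots> = (MAX i\<in>UNIV. absK (l i))" by (simp add: nrm_def)
  also have "\<dots> = (MAX i\<in>UNIV. absK (l i) * nrm absK (ev i :: 'n \<Rightarrow> 'k))" by (simp add: nrm_ev)
  finally show "nrm absK (lincomb l ev) = (MAX i\<in>UNIV. absK (l i) * nrm absK (ev i :: 'n \<Rightarrow> 'k))" .
qed

lemma coeff_bound: fixes k :: "'n::finite \<Rightarrow> 'n \<Rightarrow> 'k"
  assumes "canonical_wrt absK (nrm absK) k" "\<And>j. nrm absK (k j) = 1"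
  shows "gauss absK (\<lambda>_. 1) (subst (winv k) f) = gauss absK (\<lambda>_. 1) f"
proof -
  have "Jr (nrm absK) k f = Jr (nrm absK) ev f"
    by (rule Jr_indep[OF sn_nrm assms(1) canonical_ev])
  moreover have "(\<lambda>i. nrm absK (ev i :: 'n \<Rightarrow> 'k)) = (\<lambda>_. 1)" by (simp add: nrm_ev)
  moreover have "(\<lambda>i. nrm absK (k i)) = (\<lambda>_. 1)" using assms(2) by simp
  ultimately show ?thesis unfolding Jr_def winv_ev subst_ev by simp
qed

end

lemma pow_diff: fixes a b M \<delta> :: real
  assumes "0 \<le> a" "a \<le> M" "0 \<le> b" "b \<le> M" "1 \<le> M" "\<bar>a - b\<bar> \<le> \<delta>"
  shows "\<bar>a ^ n - b ^ n\<bar> \<le> n * M ^ n * \<delta>"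
proof (induction n)
  case 0 then show ?case by simp
next
  case (Suc n)
  have d0: "\<delta> \<ge> 0" using assms(6) by linarith
  have "a ^ Suc n - b ^ Suc n = a * (a ^ n - b ^ n) + b ^ n * (a - b)" by (simp add: algebra_simps)
  then have "\<bar>a ^ Suc n - b ^ Suc n\<bar> \<le> a * \<bar>a ^ n - b ^ n\<bar> + b ^ n * \<bar>a - b\<bar>"
    using assms by (simp add: abs_mult abs_triangle_ineq order_trans[OF abs_triangle_ineq])
  also have "\<dots> \<le> M * (n * M ^ n * \<delta>) + M ^ n * \<delta>"
    using assms Suc by (intro add_mono mult_mono power_mono) auto
  also have "M ^ n * \<delta> \<le> M ^ Suc n * \<delta>" using assms d0 by (intro mult_right_mono) (auto simp: power_increasing)
  then have "M * (n * M ^ n * \<delta>) + M ^ n * \<delta> \<le> Suc n * M ^ Suc n * \<delta>" by (simp add: algebra_simps)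
  finally show ?case .
qed

lemma prod_diff: fixes x y :: "'a \<Rightarrow> real" and M \<delta> :: real
  assumes "finite S" "1 \<le> M"
    and "\<And>i. i \<in> S \<Longrightarrow> 0 \<le> x i \<and> x i \<le> M ^ n i \<and> 0 \<le> y i \<and> y i \<le> M ^ n i"
    and "\<And>i. i \<in> S \<Longrightarrow> \<bar>x i - y i\<bar> \<le> n i * M ^ n i * \<delta>"
  shows "\<bar>prod x S - prod y S\<bar> \<le> (\<Sum>i\<in>S. n i) * M ^ (\<Sum>i\<in>S. n i) * \<delta>"
  using assms(1,3,4)
proof (induction S rule: finite_induct)
  case empty then show ?case by simp
next
  case (insert j F)
  define N where "N = (\<Sum>i\<in>F. n i)"
  have xj: "0 \<le> x j" "x j \<le> M ^ n j" "0 \<le> y j" "y j \<le> M ^ n j" using insert.prems(1)[of j] by auto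
  have Y0: "0 \<le> prod y F" using insert.prems(1) by (auto intro: prod_nonneg)
  have "prod y F \<le> (\<Prod>i\<in>F. M ^ n i)" by (rule prod_mono) (use insert.prems(1) in auto)
  also have "\<dots> = M ^ N" unfolding N_def by (simp add: power_sum)
  finally have Y: "0 \<le> prod y F" "prod y F \<le> M ^ N" using Y0 by auto
  have X: "0 \<le> prod x F" using insert.prems(1) by (auto intro: prod_nonneg)
  have IH: "\<bar>prod x F - prod y F\<bar> \<le> N * M ^ N * \<delta>" unfolding N_def using insert by auto
  have dj: "\<bar>x j - y j\<bar> \<le> n j * M ^ n j * \<delta>" using insert.prems(2) by simp
  have "prod x (insert j F) - prod y (insert j F) = (x j - y j) * prod y F + x j * (prod x F - prod y F)"
    using insert by (simp add: algebra_simps)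
  then have "\<bar>prod x (insert j F) - prod y (insert j F)\<bar> \<le> \<bar>x j - y j\<bar> * prod y F + x j * \<bar>prod x F - prod y F\<bar>"
    using xj Y by (simp add: abs_mult order_trans[OF abs_triangle_ineq])
  also have "\<dots> \<le> (n j * M ^ n j * \<delta>) * M ^ N + M ^ n j * (N * M ^ N * \<delta>)"
    using xj Y IH dj by (intro add_mono mult_mono) (auto intro: order_trans[OF abs_ge_zero])
  also have "\<dots> = (n j + N) * M ^ (n j + N) * \<delta>" by (simp add: algebra_simps power_add)
  finally show ?case using insert unfolding N_def by simp
qed

lemma wt_lip: fixes \<rho> \<rho>' :: "'n::finite \<Rightarrow> real" and M \<delta> :: real
  assumes "\<And>i. 0 \<le> \<rho> i \<and> \<rho> i \<le> M \<and> 0 \<le> \<rho>' i \<and> \<rho>' i \<le> M" "1 \<le> M" "\<And>i. \<bar>\<rho> i - \<rho>' i\<bar> \<le> \<delta>"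
  shows "\<bar>wt \<rho> \<nu> - wt \<rho>' \<nu>\<bar> \<le> mdeg \<nu> * M ^ mdeg \<nu> * \<delta>"
proof -
  have "\<bar>(\<Prod>i\<in>UNIV. \<rho> i ^ lk \<nu> i) - (\<Prod>i\<in>UNIV. \<rho>' i ^ lk \<nu> i)\<bar>
      \<le> (\<Sum>i\<in>UNIV. real (lk \<nu> i)) * M ^ (\<Sum>i\<in>UNIV. lk \<nu> i) * \<delta>"
  proof (rule prod_diff)
    show "finite (UNIV :: 'n set)" by simp
    show "1 \<le> M" by (rule assms(2))
    fix i
    show "0 \<le> \<rho> i ^ lk \<nu> i \<and> \<rho> i ^ lk \<nu> i \<le> M ^ lk \<nu> i \<and> 0 \<le> \<rho>' i ^ lk \<nu> i \<and> \<rho>' i ^ lk \<nu> i \<le> M ^ lk \<nu> i"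
      using assms(1)[of i] by (auto intro: power_mono)
    show "\<bar>\<rho> i ^ lk \<nu> i - \<rho>' i ^ lk \<nu> i\<bar> \<le> real (lk \<nu> i) * M ^ lk \<nu> i * \<delta>"
      using assms(1)[of i] assms(2,3) by (intro pow_diff) auto
  qed
  then show ?thesis unfolding wt_def mdeg_def by (simp add: of_nat_sum)
qed

primrec Lseq :: "('k list \<Rightarrow> 'k) \<Rightarrow> nat \<Rightarrow> 'k list" where
  "Lseq p 0 = []"
| "Lseq p (Suc n) = Lseq p n @ [p (Lseq p n)]"

lemma length_Lseq: "length (Lseq p n) = n" by (induction n) auto

lemma nth_Lseq: "j < n \<Longrightarrow> Lseq p n ! j = p (Lseq p j)"
proof (induction n)
  case (Suc n)
  show ?case
  proof (cases "j < n")
    case True then show ?thesis using Suc by (simp add: nth_append length_Lseq)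
  next
    case False then have "j = n" using Suc.prems by simp
    then show ?thesis by (simp add: nth_append length_Lseq)
  qed
qed simp

context nlf
begin

lemma gauss_lip: fixes \<rho> \<rho>' :: "'n::finite \<Rightarrow> real"
  assumes "\<And>i. 0 \<le> \<rho> i \<and> \<rho> i \<le> M \<and> 0 \<le> \<rho>' i \<and> \<rho>' i \<le> M" "1 \<le> M" "\<And>i. \<bar>\<rho> i - \<rho>' i\<bar> \<le> \<delta>"
    and "degle D g"
  shows "\<bar>gauss absK \<rho> g - gauss absK \<rho>' g\<bar> \<le> gauss absK (\<lambda>_. 1) g * (D * M ^ D * \<delta>)"
proof -
  have d0: "\<delta> \<ge> 0" using assms(3) by (meson abs_ge_zero order_trans)
  define E where "E = gauss absK (\<lambda>_. 1) g * (D * M ^ D * \<delta>)"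
  have E0: "E \<ge> 0" unfolding E_def using d0 assms(2) by (auto intro!: mult_nonneg_nonneg gauss_nonneg)
  have tdiff: "\<bar>trm \<rho> g \<nu> - trm \<rho>' g \<nu>\<bar> \<le> E" if "\<nu> \<in> ks g" for \<nu>
  proof -
    have md: "mdeg \<nu> \<le> D" using assms(4) that unfolding degle_def by auto
    have "trm \<rho> g \<nu> - trm \<rho>' g \<nu> = absK (lk g \<nu>) * (wt \<rho> \<nu> - wt \<rho>' \<nu>)"
      unfolding trm_def by (simp add: algebra_simps)
    then have "\<bar>trm \<rho> g \<nu> - trm \<rho>' g \<nu>\<bar> = absK (lk g \<nu>) * \<bar>wt \<rho> \<nu> - wt \<rho>' \<nu>\<bar>"
      by (simp add: Rings.abs_mult)
    also have "\<dots> \<le> absK (lk g \<nu>) * (mdeg \<nu> * M ^ mdeg \<nu> * \<delta>)"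
      by (intro mult_left_mono wt_lip[OF assms(1-3)]) auto
    also have "\<dots> \<le> gauss absK (\<lambda>_. 1) g * (D * M ^ D * \<delta>)"
    proof -
      have "trm (\<lambda>_. 1) g \<nu> = absK (lk g \<nu>)" unfolding trm_def wt_def by simp
      then have a: "absK (lk g \<nu>) \<le> gauss absK (\<lambda>_. 1) g" using gauss_ge[of "\<lambda>_. 1" g \<nu>] by simp
      have "M ^ mdeg \<nu> \<le> M ^ D" using md assms(2) by (intro power_increasing) auto
      then have b: "real (mdeg \<nu>) * M ^ mdeg \<nu> * \<delta> \<le> real D * M ^ D * \<delta>"
        using md assms(2) d0 by (intro mult_right_mono mult_mono) auto
      show ?thesis by (rule mult_mono[OF a b]) (use d0 assms(2) gauss_nonneg in auto)
    qed
    finally show ?thesis unfolding E_def .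
  qed
  have "gauss absK \<rho> g \<le> gauss absK \<rho>' g + E"
  proof (rule gauss_le)
    fix \<nu> assume "\<nu> \<in> ks g"
    then show "trm \<rho> g \<nu> \<le> gauss absK \<rho>' g + E" using tdiff[of \<nu>] gauss_ge[of \<rho>' g \<nu>] by linarith
  qed (use E0 gauss_nonneg in \<open>auto intro: add_nonneg_nonneg\<close>)
  moreover have "gauss absK \<rho>' g \<le> gauss absK \<rho> g + E"
  proof (rule gauss_le)
    fix \<nu> assume "\<nu> \<in> ks g"
    then show "trm \<rho>' g \<nu> \<le> gauss absK \<rho> g + E" using tdiff[of \<nu>] gauss_ge[of \<rho> g \<nu>] by linarith
  qed (use E0 gauss_nonneg in \<open>auto intro: add_nonneg_nonneg\<close>)
  ultimately show ?thesis unfolding E_def by linarith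
qed

lemma tot_bdd: assumes "t > 0"
  shows "\<exists>E. finite E \<and> (\<forall>e\<in>E. absK e \<le> 1) \<and> (\<forall>a. absK a \<le> 1 \<longrightarrow> (\<exists>e\<in>E. absK (a - e) < t))"
proof (rule ccontr)
  assume na: "\<not> ?thesis"
  have far: "\<exists>a. absK a \<le> 1 \<and> (\<forall>e\<in>E. absK (a - e) \<ge> t)" if "finite E" "\<forall>e\<in>E. absK e \<le> 1" for E
    using na that by (meson not_le)
  define p where "p L = (SOME a. absK a \<le> 1 \<and> (\<forall>e\<in>set L \<inter> {e. absK e \<le> 1}. absK (a - e) \<ge> t))" for L
  have p: "absK (p L) \<le> 1 \<and> (\<forall>e\<in>set L \<inter> {e. absK e \<le> 1}. absK (p L - e) \<ge> t)" for L
    unfolding p_def by (rule someI_ex) (rule far, auto)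
  define s where "s n = p (Lseq p n)" for n
  have sO: "absK (s n) \<le> 1" for n using p unfolding s_def by blast
  have sep: "absK (s n - s j) \<ge> t" if "j < n" for j n
  proof -
    have "s j \<in> set (Lseq p n)" using nth_Lseq[OF that, of p] that length_Lseq[of p n]
      unfolding s_def by (metis nth_mem)
    then show ?thesis using p[of "Lseq p n"] sO[of j] unfolding s_def by auto
  qed
  obtain l h where lh: "strict_mono h" "(\<lambda>m. absK (s (h m) - l)) \<longlonglongrightarrow> 0"
    using abs_seqcompact[of s] sO by blast
  have "eventually (\<lambda>m. absK (s (h m) - l) < t) sequentially"
    using lh(2) assms by (simp add: order_tendstoD(2))
  then obtain N where N: "\<And>m. m \<ge> N \<Longrightarrow> absK (s (h m) - l) < t" by (auto simp: eventually_sequentially)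
  have "absK (s (h (Suc N)) - s (h N)) \<le> max (absK (s (h (Suc N)) - l)) (absK (s (h N) - l))"
    using abs_ultra_diff[of "s (h (Suc N)) - l" "s (h N) - l"] by simp
  also have "\<dots> < t" using N[of N] N[of "Suc N"] by simp
  finally have "absK (s (h (Suc N)) - s (h N)) < t" .
  moreover have "h N < h (Suc N)" using lh(1) by (simp add: strict_mono_def)
  ultimately show False using sep by fastforce
qed

end

lemma topspace_seminorm_top: "topspace (seminorm_top absK) = {\<gamma>. seminorm absK \<gamma>}"
  unfolding seminorm_top_def by (simp add: topspace_subtopology)

lemma topspace_mult_seminorm_top: "topspace (mult_seminorm_top absK) = {\<alpha>. mult_seminorm absK \<alpha>}"
  unfolding mult_seminorm_top_def by (simp add: topspace_subtopology)

lemma proj_cont_seminorm: "continuous_map (seminorm_top absK) euclideanreal (\<lambda>\<gamma>. \<gamma> v)"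
  unfolding seminorm_top_def
  by (rule continuous_map_from_subtopology) (rule continuous_map_product_projection, simp)

lemma proj_cont_mult: "continuous_map (mult_seminorm_top absK) euclideanreal (\<lambda>\<alpha>. \<alpha> f)"
  unfolding mult_seminorm_top_def
  by (rule continuous_map_from_subtopology) (rule continuous_map_product_projection, simp)

lemma nbhd_open:
  assumes "finite F" "\<eta> > 0"
  shows "openin (seminorm_top absK) {\<gamma>' \<in> topspace (seminorm_top absK). \<forall>v\<in>F. \<bar>\<gamma>' v - \<gamma> v\<bar> < \<eta>}"
  using assms(1)
proof (induction F rule: finite_induct)
  case empty then show ?case by simp
next
  case (insert v F)
  have o: "openin (seminorm_top absK) {\<gamma>' \<in> topspace (seminorm_top absK). \<gamma>' v \<in> {\<gamma> v - \<eta> <..< \<gamma> v + \<eta>}}"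
    by (rule openin_continuous_map_preimage[OF proj_cont_seminorm]) simp
  have eq: "{\<gamma>' \<in> topspace (seminorm_top absK). \<forall>v\<in>insert v F. \<bar>\<gamma>' v - \<gamma> v\<bar> < \<eta>}
     = {\<gamma>' \<in> topspace (seminorm_top absK). \<gamma>' v \<in> {\<gamma> v - \<eta> <..< \<gamma> v + \<eta>}} \<inter>
       {\<gamma>' \<in> topspace (seminorm_top absK). \<forall>v\<in>F. \<bar>\<gamma>' v - \<gamma> v\<bar> < \<eta>}"
    by (auto simp: abs_less_iff)
  show ?case unfolding eq by (rule openin_Int[OF o insert.IH])
qed

lemma cont_from_eps:
  assumes "\<And>x \<epsilon>. x \<in> topspace X \<Longrightarrow> \<epsilon> > 0 \<Longrightarrow> \<exists>U. openin X U \<and> x \<in> U \<and> (\<forall>y\<in>U. \<bar>f y - f x\<bar> \<le> \<epsilon>)"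
  shows "continuous_map X euclideanreal (f :: 'a \<Rightarrow> real)"
  unfolding continuous_map_def
proof (intro conjI allI impI)
  show "f \<in> topspace X \<rightarrow> topspace euclideanreal" by simp
  fix U :: "real set" assume "openin euclideanreal U"
  then have oU: "open U" by simp
  show "openin X {x \<in> topspace X. f x \<in> U}"
  proof (subst openin_subopen, intro ballI)
    fix x assume x: "x \<in> {x \<in> topspace X. f x \<in> U}"
    then obtain e where e: "e > 0" "\<And>y. \<bar>y - f x\<bar> < e \<Longrightarrow> y \<in> U"
      using oU unfolding open_dist dist_real_def by (metis mem_Collect_eq)
    obtain V where V: "openin X V" "x \<in> V" "\<And>y. y \<in> V \<Longrightarrow> \<bar>f y - f x\<bar> \<le> e / 2"
      using assms[of x "e / 2"] x e(1) by auto
    have "V \<subseteq> {x \<in> topspace X. f x \<in> U}"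
      using V e openin_subset[OF V(1)] by force
    then show "\<exists>T. openin X T \<and> x \<in> T \<and> T \<subseteq> {x \<in> topspace X. f x \<in> U}" using V by blast
  qed
qed

context nlf
begin

lemma seminorm_sn: "seminorm absK \<gamma> \<Longrightarrow> sn absK \<gamma>"
  unfolding seminorm_def sn_def by blast

lemma finite_funs_into: "finite E \<Longrightarrow> finite {v :: 'n::finite \<Rightarrow> 'k. \<forall>i. v i \<in> E}"
proof -
  assume E: "finite E"
  have "finite {v :: 'n \<Rightarrow> 'k. \<forall>x. (x \<in> UNIV \<longrightarrow> v x \<in> E) \<and> (x \<notin> UNIV \<longrightarrow> v x = 0)}"
    by (rule finite_set_of_finite_funs) (use E in auto)
  then show ?thesis by simp
qed

lemma unif_close:
  fixes \<gamma> :: "('n::finite \<Rightarrow> 'k) \<Rightarrow> real"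
  assumes sn: "sn absK \<gamma>" and eps: "\<epsilon> > 0"
  shows "\<exists>F \<eta>. finite F \<and> \<eta> > 0 \<and> (\<forall>\<gamma>'. sn absK \<gamma>' \<longrightarrow> (\<forall>v\<in>F. \<bar>\<gamma>' v - \<gamma> v\<bar> < \<eta>) \<longrightarrow>
       (\<forall>v. nrm absK v \<le> 1 \<longrightarrow> \<bar>\<gamma>' v - \<gamma> v\<bar> \<le> \<epsilon>))"
proof -
  define C where "C = Mx UNIV (\<lambda>i. \<gamma> (ev i :: 'n \<Rightarrow> 'k))"
  have C0: "C \<ge> 0" unfolding C_def by (rule Mx_nonneg) simp
  define \<eta> where "\<eta> = min 1 (\<epsilon> / 2)"
  define t where "t = \<epsilon> / (2 * (2 * C + 1))"
  have \<eta>: "\<eta> > 0" "\<eta> \<le> 1" "\<eta> \<le> \<epsilon> / 2" unfolding \<eta>_def using eps by auto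
  have t: "t > 0" unfolding t_def using eps C0 by simp
  obtain E where E: "finite E" "\<And>e. e \<in> E \<Longrightarrow> absK e \<le> 1" "\<And>a. absK a \<le> 1 \<Longrightarrow> \<exists>e\<in>E. absK (a - e) < t"
    using tot_bdd[OF t] by blast
  define F where "F = {v :: 'n \<Rightarrow> 'k. \<forall>i. v i \<in> E} \<union> range ev"
  have finF: "finite F" unfolding F_def using finite_funs_into[OF E(1)] by simp
  show ?thesis
  proof (intro exI[of _ F] exI[of _ \<eta>] conjI allI impI)
    fix \<gamma>' :: "('n \<Rightarrow> 'k) \<Rightarrow> real" and v :: "'n \<Rightarrow> 'k"
    assume sn': "sn absK \<gamma>'" and close: "\<forall>v\<in>F. \<bar>\<gamma>' v - \<gamma> v\<bar> < \<eta>" and v: "nrm absK v \<le> 1"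
    define C' where "C' = Mx UNIV (\<lambda>i. \<gamma>' (ev i :: 'n \<Rightarrow> 'k))"
    have "C' \<le> C + \<eta>" unfolding C'_def
    proof (rule Mx_le)
      fix i :: 'n
      have "\<bar>\<gamma>' (ev i) - \<gamma> (ev i)\<bar> < \<eta>" using close unfolding F_def by auto
      moreover have "\<gamma> (ev i) \<le> C" unfolding C_def by (rule Mx_ge) auto
      ultimately show "\<gamma>' (ev i) \<le> C + \<eta>" by linarith
    qed (use C0 \<eta> in auto)
    then have C'b: "C' \<le> C + 1" using \<eta> by linarith
    have "\<forall>i. \<exists>e. e \<in> E \<and> absK (v i - e) < t"
      using E(3) nrm_ge[of v] v by (meson order_trans)
    then obtain v0 where v0: "\<And>i. v0 i \<in> E" "\<And>i. absK (v i - v0 i) < t" by metis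
    have v0F: "v0 \<in> F" unfolding F_def using v0 by auto
    have nd: "nrm absK (\<lambda>i. v i - v0 i) \<le> t" by (rule nrm_le) (use v0 in \<open>auto intro: less_imp_le\<close>)
    have 1: "\<bar>\<gamma>' v - \<gamma>' v0\<bar> \<le> t * (C + 1)"
    proof -
      have "\<bar>\<gamma>' v - \<gamma>' v0\<bar> \<le> nrm absK (\<lambda>i. v i - v0 i) * C'"
        unfolding C'_def by (rule sn_cont_bound[OF sn'])
      also have "\<dots> \<le> t * (C + 1)" using nd C'b nrm_nonneg C0 t
        by (intro mult_mono) (auto simp: C'_def intro: Mx_nonneg)
      finally show ?thesis .
    qed
    have 2: "\<bar>\<gamma> v - \<gamma> v0\<bar> \<le> t * C"
    proof -
      have "\<bar>\<gamma> v - \<gamma> v0\<bar> \<le> nrm absK (\<lambda>i. v i - v0 i) * C"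
        unfolding C_def by (rule sn_cont_bound[OF sn])
      also have "\<dots> \<le> t * C" using nd C0 by (intro mult_right_mono) auto
      finally show ?thesis .
    qed
    have 3: "\<bar>\<gamma>' v0 - \<gamma> v0\<bar> < \<eta>" using close v0F by blast
    have "t * (2 * C + 1) = \<epsilon> / 2" unfolding t_def using C0 by (simp add: field_split_simps)
    moreover have "t * (C + 1) + t * C = t * (2 * C + 1)" by (simp add: algebra_simps)
    ultimately have "t * (C + 1) + t * C = \<epsilon> / 2" by simp
    then show "\<bar>\<gamma>' v - \<gamma> v\<bar> \<le> \<epsilon>" using 1 2 3 \<eta> by linarith
  qed (use finF \<eta> in auto)
qed

end

lemma exp_beats_linear: fixes q :: real assumes "q > 1" shows "\<exists>n. real n + 1 < q ^ n"
proof -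
  define h where "h = q - 1"
  have h: "h > 0" unfolding h_def using assms by simp
  obtain m :: nat where m: "3 / h ^ 2 < real m" using reals_Archimedean2 by blast
  have m1: "m \<ge> 1" using m h by (cases m) auto
  have "real m * h ^ 2 > 3" using m h by (simp add: divide_less_eq mult.commute)
  have B: "1 + real m * h \<le> q ^ m" using Bernoulli_inequality[of h m] h unfolding h_def by simp
  have "q ^ (2 * m) = (q ^ m) ^ 2" by (simp add: power_mult mult.commute)
  also have "\<dots> \<ge> (1 + real m * h) ^ 2" using B h by (intro power_mono) auto
  finally have "q ^ (2 * m) \<ge> (1 + real m * h) ^ 2" .
  moreover have "(1 + real m * h) ^ 2 > real m * (real m * h ^ 2)"
  proof -
    have e: "(1 + real m * h) ^ 2 = real m * (real m * h ^ 2) + (1 + 2 * real m * h)"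
      by (simp add: power2_eq_square algebra_simps)
    have "1 + 2 * real m * h > 0" using h by (simp add: add_pos_nonneg)
    then show ?thesis unfolding e by linarith
  qed
  moreover have "real m * (real m * h ^ 2) \<ge> real m * 3"
    using \<open>real m * h ^ 2 > 3\<close> by (intro mult_left_mono) auto
  moreover have "real m * 3 \<ge> real (2 * m) + 1" using m1 by simp
  ultimately show ?thesis by (intro exI[of _ "2 * m"]) linarith
qed

context nlf
begin

lemma J_def': "J \<gamma> f = Jr \<gamma> (Jb \<gamma>) f" unfolding J_def ..

lemma J_cont:
  fixes \<gamma> :: "('n::finite \<Rightarrow> 'k) \<Rightarrow> real"
  assumes sn: "sn absK \<gamma>" and eps: "\<epsilon> > 0"
  shows "\<exists>F \<eta>. finite F \<and> \<eta> > 0 \<and> (\<forall>\<gamma>'. sn absK \<gamma>' \<longrightarrow> (\<forall>v\<in>F. \<bar>\<gamma>' v - \<gamma> v\<bar> < \<eta>) \<longrightarrow>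
       \<bar>J \<gamma>' f - J \<gamma> f\<bar> \<le> \<epsilon>)"
proof -
  obtain D where D: "degle D f" using degle_exists by blast
  define k where "k = Jb \<gamma>"
  define C where "C = Mx UNIV (\<lambda>i. \<gamma> (ev i :: 'n \<Rightarrow> 'k))"
  have C0: "C \<ge> 0" unfolding C_def by (rule Mx_nonneg) simp
  define M where "M = C + 2"
  have M1: "M \<ge> 1" unfolding M_def using C0 by simp
  define G where "G = gauss absK (\<lambda>_. 1) f"
  define K0 where "K0 = G * (D * M ^ D)"
  have K0: "K0 \<ge> 0" unfolding K0_def G_def using M1 by (auto intro!: mult_nonneg_nonneg gauss_nonneg)
  define \<delta> where "\<delta> = min 1 (\<epsilon> / (K0 + 1))"
  have \<delta>: "\<delta> > 0" "\<delta> \<le> 1" "\<delta> \<le> \<epsilon> / (K0 + 1)" unfolding \<delta>_def using eps K0 by auto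
  have K0d: "K0 * \<delta> \<le> \<epsilon>"
  proof -
    have "K0 * \<delta> \<le> K0 * (\<epsilon> / (K0 + 1))" using \<delta> K0 by (intro mult_left_mono) auto
    also have "\<dots> \<le> \<epsilon>" using K0 eps by (simp add: field_simps)
    finally show ?thesis .
  qed
  obtain F \<eta> where F: "finite F" "\<eta> > 0" and
    uc: "\<And>\<gamma>'. sn absK \<gamma>' \<Longrightarrow> (\<forall>v\<in>F. \<bar>\<gamma>' v - \<gamma> v\<bar> < \<eta>) \<Longrightarrow> (\<forall>v. nrm absK v \<le> 1 \<longrightarrow> \<bar>\<gamma>' v - \<gamma> v\<bar> \<le> \<delta>)"
    using unif_close[OF sn \<delta>(1)] by blast
  show ?thesis
  proof (intro exI[of _ F] exI[of _ \<eta>] conjI allI impI)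
    fix \<gamma>' :: "('n \<Rightarrow> 'k) \<Rightarrow> real"
    assume sn': "sn absK \<gamma>'" and close: "\<forall>v\<in>F. \<bar>\<gamma>' v - \<gamma> v\<bar> < \<eta>"
    have ucl: "\<bar>\<gamma>' v - \<gamma> v\<bar> \<le> \<delta>" if "nrm absK v \<le> 1" for v using uc[OF sn' close] that by blast
    have bnd: "0 \<le> \<gamma> v \<and> \<gamma> v \<le> M \<and> 0 \<le> \<gamma>' v \<and> \<gamma>' v \<le> M" if "nrm absK v \<le> 1" for v
    proof -
      have "\<gamma> v \<le> nrm absK v * C" unfolding C_def by (rule sn_bound_nrm[OF sn])
      also have "\<dots> \<le> C" using that C0 nrm_nonneg[of v] by (simp add: mult_left_le_one_le)
      finally have "\<gamma> v \<le> C" .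
      then show ?thesis using ucl[OF that] \<delta> sn_nonneg[OF sn, of v] sn_nonneg[OF sn', of v] unfolding M_def by linarith
    qed
    have key: "\<bar>gauss absK (\<lambda>i. \<gamma> (u i)) (subst (winv u) f) - gauss absK (\<lambda>i. \<gamma>' (u i)) (subst (winv u) f)\<bar> \<le> K0 * \<delta>"
      if u: "canonical_wrt absK (nrm absK) u" "\<And>j. nrm absK (u j) = 1" for u
    proof -
      have "\<bar>gauss absK (\<lambda>i. \<gamma> (u i)) (subst (winv u) f) - gauss absK (\<lambda>i. \<gamma>' (u i)) (subst (winv u) f)\<bar>
          \<le> gauss absK (\<lambda>_. 1) (subst (winv u) f) * (D * M ^ D * \<delta>)"
      proof (rule gauss_lip[OF _ M1])
        show "0 \<le> \<gamma> (u i) \<and> \<gamma> (u i) \<le> M \<and> 0 \<le> \<gamma>' (u i) \<and> \<gamma>' (u i) \<le> M" for i using bnd u(2) by simp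
        show "\<bar>\<gamma> (u i) - \<gamma>' (u i)\<bar> \<le> \<delta>" for i using ucl[of "u i"] u(2) by (simp add: abs_minus_commute)
        show "degle D (subst (winv u) f)" by (rule degle_subst[OF D])
      qed
      also have "\<dots> = K0 * \<delta>" unfolding coeff_bound[OF u] K0_def G_def by (simp add: mult_ac)
      finally show ?thesis .
    qed
    have kc: "canonical_wrt absK \<gamma> k" "canonical_wrt absK (nrm absK) k" "\<And>j. nrm absK (k j) = 1"
      unfolding k_def using Jb[OF sn] by auto
    define k' where "k' = Jb \<gamma>'"
    have kc': "canonical_wrt absK \<gamma>' k'" "canonical_wrt absK (nrm absK) k'" "\<And>j. nrm absK (k' j) = 1"
      unfolding k'_def using Jb[OF sn'] by auto
    have up: "J \<gamma>' f \<le> J \<gamma> f + K0 * \<delta>"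
    proof -
      have "J \<gamma>' f = Jr \<gamma>' k' f" unfolding J_def' k'_def ..
      also have "\<dots> \<le> gauss absK (\<lambda>i. \<gamma>' (k i)) (subst (winv k) f)"
        by (rule Jr_min[OF sn' kc'(1) canonical_basis[OF kc(1)]])
      also have "\<dots> \<le> gauss absK (\<lambda>i. \<gamma> (k i)) (subst (winv k) f) + K0 * \<delta>"
        using key[OF kc(2,3)] by linarith
      also have "gauss absK (\<lambda>i. \<gamma> (k i)) (subst (winv k) f) = J \<gamma> f"
        unfolding J_def' k_def[symmetric] Jr_def ..
      finally show ?thesis .
    qed
    have down: "J \<gamma> f \<le> J \<gamma>' f + K0 * \<delta>"
    proof -
      have "J \<gamma> f = Jr \<gamma> k f" unfolding J_def' k_def ..
      also have "\<dots> \<le> gauss absK (\<lambda>i. \<gamma> (k' i)) (subst (winv k') f)"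
        by (rule Jr_min[OF sn kc(1) canonical_basis[OF kc'(1)]])
      also have "\<dots> \<le> gauss absK (\<lambda>i. \<gamma>' (k' i)) (subst (winv k') f) + K0 * \<delta>"
        using key[OF kc'(2,3)] by linarith
      also have "gauss absK (\<lambda>i. \<gamma>' (k' i)) (subst (winv k') f) = J \<gamma>' f"
        unfolding J_def' k'_def[symmetric] Jr_def ..
      finally show ?thesis .
    qed
    show "\<bar>J \<gamma>' f - J \<gamma> f\<bar> \<le> \<epsilon>" using up down K0d by linarith
  qed (use F in auto)
qed

lemma J_continuous: "continuous_map (seminorm_top absK) euclideanreal (\<lambda>\<gamma>::('n::finite \<Rightarrow> 'k) \<Rightarrow> real. J \<gamma> f)"
proof (rule cont_from_eps)
  fix \<gamma> :: "('n \<Rightarrow> 'k) \<Rightarrow> real" and \<epsilon> :: real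
  assume \<gamma>: "\<gamma> \<in> topspace (seminorm_top absK)" and eps: "\<epsilon> > 0"
  then have sn: "sn absK \<gamma>" using seminorm_sn topspace_seminorm_top by auto
  obtain F \<eta> where F: "finite F" "\<eta> > 0"
    "\<And>\<gamma>'. sn absK \<gamma>' \<Longrightarrow> (\<forall>v\<in>F. \<bar>\<gamma>' v - \<gamma> v\<bar> < \<eta>) \<Longrightarrow> \<bar>J \<gamma>' f - J \<gamma> f\<bar> \<le> \<epsilon>"
    using J_cont[OF sn eps, of f] by blast
  let ?U = "{\<gamma>' \<in> topspace (seminorm_top absK). \<forall>v\<in>F. \<bar>\<gamma>' v - \<gamma> v\<bar> < \<eta>}"
  show "\<exists>U. openin (seminorm_top absK) U \<and> \<gamma> \<in> U \<and> (\<forall>y\<in>U. \<bar>J y f - J \<gamma> f\<bar> \<le> \<epsilon>)"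
  proof (intro exI[of _ ?U] conjI ballI)
    show "openin (seminorm_top absK) ?U" by (rule nbhd_open[OF F(1,2)])
    show "\<gamma> \<in> ?U" using \<gamma> F(2) by simp
    fix y assume "y \<in> ?U"
    then show "\<bar>J y f - J \<gamma> f\<bar> \<le> \<epsilon>" using F(3) seminorm_sn topspace_seminorm_top by auto
  qed
qed

lemma J_mult_seminorm: assumes "seminorm absK \<gamma>" shows "mult_seminorm absK (J \<gamma>)"
proof -
  have sn: "sn absK \<gamma>" by (rule seminorm_sn[OF assms])
  obtain x where x: "\<gamma> x \<noteq> 0" using assms unfolding seminorm_def by blast
  show ?thesis unfolding mult_seminorm_def J_def'
  proof (intro conjI allI)
    show "Jr \<gamma> (Jb \<gamma>) f \<ge> 0" for f by (rule Jr_nonneg)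
    show "Jr \<gamma> (Jb \<gamma>) (f + g) \<le> Jr \<gamma> (Jb \<gamma>) f + Jr \<gamma> (Jb \<gamma>) g" for f g
      using Jr_add[OF sn, of "Jb \<gamma>" f g] Jr_nonneg[of \<gamma> "Jb \<gamma>" f] Jr_nonneg[of \<gamma> "Jb \<gamma>" g]
      by (simp add: max_def split: if_splits)
    show "Jr \<gamma> (Jb \<gamma>) (f * g) = Jr \<gamma> (Jb \<gamma>) f * Jr \<gamma> (Jb \<gamma>) g" for f g by (rule Jr_mult[OF sn])
    show "Jr \<gamma> (Jb \<gamma>) (pconst c) = absK c" for c by (rule Jr_pconst[OF sn])
    show "\<exists>v. Jr \<gamma> (Jb \<gamma>) (lin v) \<noteq> 0" using x Jr_lin[OF sn Jb(1)[OF sn]] by metis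
  qed
qed

lemma J_lin: "sn absK \<gamma> \<Longrightarrow> J \<gamma> (lin v) = \<gamma> v"
  unfolding J_def' by (rule Jr_lin) (auto intro: Jb)

lemma J_scale: assumes sn: "sn absK \<gamma>" and c: "c \<ge> 0" and h: "homogeneous d f"
  shows "J (\<lambda>x. c * \<gamma> x) f = c ^ d * J \<gamma> f"
proof -
  have can: "canonical_wrt absK (\<lambda>x. c * \<gamma> x) (Jb \<gamma>)" by (rule canonical_scale[OF sn Jb(1)[OF sn] c])
  have "J (\<lambda>x. c * \<gamma> x) f = Jr (\<lambda>x. c * \<gamma> x) (Jb \<gamma>) f" by (rule J_eq[OF sn_scale[OF sn c] can])
  also have "\<dots> = c ^ d * J \<gamma> f" unfolding J_def' by (rule Jr_scale[OF h c])
  finally show ?thesis .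
qed

lemma J_cont_map: "continuous_map (seminorm_top absK) (mult_seminorm_top absK) (J :: (('n::finite \<Rightarrow> 'k) \<Rightarrow> real) \<Rightarrow> _)"
  unfolding mult_seminorm_top_def
proof (rule continuous_map_into_subtopology)
  show "continuous_map (seminorm_top absK) (product_topology (\<lambda>_. euclideanreal) UNIV) (J :: (('n \<Rightarrow> 'k) \<Rightarrow> real) \<Rightarrow> _)"
    unfolding continuous_map_componentwise_UNIV using J_continuous by blast
  show "J \<in> topspace (seminorm_top absK) \<rightarrow> {\<alpha>. mult_seminorm absK \<alpha>}"
    using J_mult_seminorm topspace_seminorm_top by auto
qed

lemma mult_ultra:
  fixes \<alpha> :: "('n::finite, 'k) sympoly \<Rightarrow> real"
  assumes ms: "mult_seminorm absK \<alpha>"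
  shows "\<alpha> (f + g) \<le> max (\<alpha> f) (\<alpha> g)"
proof -
  have nn: "\<And>f. \<alpha> f \<ge> 0" and sa: "\<And>f g. \<alpha> (f + g) \<le> \<alpha> f + \<alpha> g"
    and mu: "\<And>f g. \<alpha> (f * g) = \<alpha> f * \<alpha> g" and pc: "\<And>c. \<alpha> (pconst c) = absK c"
    using ms unfolding mult_seminorm_def by auto
  have a0: "\<alpha> 0 = 0" using pc[of 0] by simp
  have apow: "\<alpha> (x ^ n) = \<alpha> x ^ n" for x n by (induction n) (auto simp: mu pc[of 1, simplified])
  have anat: "\<alpha> (of_nat m) \<le> 1" for m using pc[of "of_nat m"] abs_of_nat[of m] by (simp add: pconst_of_nat)
  have asum: "\<alpha> (sum F S) \<le> (\<Sum>s\<in>S. \<alpha> (F s))" for F and S :: "nat set"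
    by (induction S rule: infinite_finite_induct) (auto simp: a0 intro: order_trans[OF sa])
  define M where "M = max (\<alpha> f) (\<alpha> g)"
  have M0: "M \<ge> 0" unfolding M_def using nn[of f] by simp
  have pw: "\<alpha> (f + g) ^ n \<le> (real n + 1) * M ^ n" for n
  proof -
    have "\<alpha> (f + g) ^ n = \<alpha> ((f + g) ^ n)" by (simp add: apow)
    also have "\<dots> = \<alpha> (\<Sum>k\<le>n. of_nat (n choose k) * f ^ k * g ^ (n - k))" by (simp add: binomial_ring)
    also have "\<dots> \<le> (\<Sum>k\<le>n. \<alpha> (of_nat (n choose k) * f ^ k * g ^ (n - k)))" by (rule asum)
    also have "\<dots> \<le> (\<Sum>k\<le>n. M ^ n)"
    proof (rule sum_mono)
      fix k assume k: "k \<in> {..n}"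
      have "\<alpha> (of_nat (n choose k) * f ^ k * g ^ (n - k)) = \<alpha> (of_nat (n choose k)) * \<alpha> f ^ k * \<alpha> g ^ (n - k)"
        by (simp add: mu apow)
      also have "\<dots> \<le> 1 * M ^ k * M ^ (n - k)"
      proof -
        have fM: "\<alpha> f \<le> M" "\<alpha> g \<le> M" unfolding M_def by auto
        show ?thesis using anat nn fM M0 by (intro mult_mono power_mono) auto
      qed
      also have "\<dots> = M ^ n" using k by (simp add: power_add[symmetric])
      finally show "\<alpha> (of_nat (n choose k) * f ^ k * g ^ (n - k)) \<le> M ^ n" .
    qed
    also have "\<dots> = (real n + 1) * M ^ n" by simp
    finally show ?thesis .
  qed
  show ?thesis
  proof (rule ccontr)
    assume "\<not> ?thesis"
    then have gt: "\<alpha> (f + g) > M" unfolding M_def by linarith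
    show False
    proof (cases "M = 0")
      case True then show False using pw[of 1] gt by simp
    next
      case False
      then have Mpos: "M > 0" using M0 by simp
      define q where "q = \<alpha> (f + g) / M"
      have q1: "q > 1" unfolding q_def using gt Mpos by simp
      obtain n where n: "real n + 1 < q ^ n" using exp_beats_linear[OF q1] by blast
      have "q ^ n * M ^ n = \<alpha> (f + g) ^ n" unfolding q_def using Mpos by (simp add: power_divide)
      also have "\<dots> \<le> (real n + 1) * M ^ n" by (rule pw)
      finally have "q ^ n \<le> real n + 1" using Mpos by simp
      then show False using n by simp
    qed
  qed
qed

end

section \<open>Quotient topology\<close>

lemma qt_istop: "istopology (\<lambda>U. U \<subseteq> f ` topspace X \<and> openin X {x \<in> topspace X. f x \<in> U})"
  unfolding istopology_def
proof (intro conjI; intro allI impI)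
  fix S T assume S: "S \<subseteq> f ` topspace X \<and> openin X {x \<in> topspace X. f x \<in> S}"
    and T: "T \<subseteq> f ` topspace X \<and> openin X {x \<in> topspace X. f x \<in> T}"
  have "{x \<in> topspace X. f x \<in> S \<inter> T} = {x \<in> topspace X. f x \<in> S} \<inter> {x \<in> topspace X. f x \<in> T}" by auto
  then show "S \<inter> T \<subseteq> f ` topspace X \<and> openin X {x \<in> topspace X. f x \<in> S \<inter> T}"
    using S T by (auto intro: openin_Int)
next
  fix K assume K: "\<forall>S\<in>K. S \<subseteq> f ` topspace X \<and> openin X {x \<in> topspace X. f x \<in> S}"
  have "{x \<in> topspace X. f x \<in> \<Union>K} = \<Union>((\<lambda>S. {x \<in> topspace X. f x \<in> S}) ` K)" by auto
  then show "\<Union>K \<subseteq> f ` topspace X \<and> openin X {x \<in> topspace X. f x \<in> \<Union>K}"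
    using K by (auto intro!: openin_Union)
qed

lemma qt_open: "openin (quotient_topology X f) U \<longleftrightarrow> U \<subseteq> f ` topspace X \<and> openin X {x \<in> topspace X. f x \<in> U}"
  unfolding quotient_topology_def by (subst topology_inverse'[OF qt_istop]) (rule refl)

lemma qt_topspace: "topspace (quotient_topology X f) = f ` topspace X"
proof -
  have "{x \<in> topspace X. f x \<in> f ` topspace X} = topspace X" by auto
  then have "openin (quotient_topology X f) (f ` topspace X)" unfolding qt_open by simp
  then have "f ` topspace X \<subseteq> topspace (quotient_topology X f)" by (rule openin_subset)
  moreover have "topspace (quotient_topology X f) \<subseteq> f ` topspace X"
  proof
    fix y assume "y \<in> topspace (quotient_topology X f)"
    then obtain U where U: "openin (quotient_topology X f) U" "y \<in> U" unfolding topspace_def by auto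
    then show "y \<in> f ` topspace X" unfolding qt_open by blast
  qed
  ultimately show ?thesis by blast
qed

lemma qt_cont: "continuous_map X (quotient_topology X f) f"
  unfolding continuous_map_def qt_topspace by (auto simp: qt_open)

lemma qt_univ: assumes "continuous_map X Y (\<lambda>x. g (f x))"
  shows "continuous_map (quotient_topology X f) Y g"
  unfolding continuous_map_def qt_topspace
proof (intro conjI allI impI)
  show "g \<in> f ` topspace X \<rightarrow> topspace Y" using assms unfolding continuous_map_def by auto
  fix V assume V: "openin Y V"
  have "{x \<in> topspace X. f x \<in> {y \<in> f ` topspace X. g y \<in> V}} = {x \<in> topspace X. g (f x) \<in> V}" by auto
  then show "openin (quotient_topology X f) {y \<in> f ` topspace X. g y \<in> V}"
    unfolding qt_open using assms V unfolding continuous_map_def by auto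
qed

lemma qt_closed: "closedin (quotient_topology X f) A \<longleftrightarrow>
    A \<subseteq> f ` topspace X \<and> closedin X {x \<in> topspace X. f x \<in> A}"
proof -
  have e: "{x \<in> topspace X. f x \<in> f ` topspace X - A} = topspace X - {x \<in> topspace X. f x \<in> A}" by auto
  show ?thesis unfolding closedin_def qt_topspace qt_open e by auto
qed

context nlf
begin

section \<open>Equivalence classes\<close>

lemma sclass_mem: "seminorm absK \<gamma> \<Longrightarrow> \<gamma> \<in> seminorm_class absK \<gamma>"
  unfolding seminorm_class_def by (auto intro: exI[of _ 1])

lemma sclass_scale: assumes "seminorm absK \<gamma>" "c > 0"
  shows "seminorm_class absK (\<lambda>x. c * \<gamma> x) = seminorm_class absK \<gamma>"
proof
  show "seminorm_class absK (\<lambda>x. c * \<gamma> x) \<subseteq> seminorm_class absK \<gamma>"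
  proof
    fix \<delta> assume "\<delta> \<in> seminorm_class absK (\<lambda>x. c * \<gamma> x)"
    then obtain e where "seminorm absK \<delta>" "e > 0" "\<forall>x. \<delta> x = e * (c * \<gamma> x)" unfolding seminorm_class_def by blast
    then show "\<delta> \<in> seminorm_class absK \<gamma>" unfolding seminorm_class_def using assms(2)
      by (auto intro!: exI[of _ "e * c"])
  qed
  show "seminorm_class absK \<gamma> \<subseteq> seminorm_class absK (\<lambda>x. c * \<gamma> x)"
  proof
    fix \<delta> assume "\<delta> \<in> seminorm_class absK \<gamma>"
    then obtain e where "seminorm absK \<delta>" "e > 0" "\<forall>x. \<delta> x = e * \<gamma> x" unfolding seminorm_class_def by blast
    then show "\<delta> \<in> seminorm_class absK (\<lambda>x. c * \<gamma> x)" unfolding seminorm_class_def using assms(2)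
      by (auto intro!: exI[of _ "e / c"])
  qed
qed

lemma sclass_topspace: "topspace (S_top absK) = seminorm_class absK ` {\<gamma>. seminorm absK \<gamma>}"
  unfolding S_top_def qt_topspace topspace_seminorm_top ..

lemma mclass_mem: "mult_seminorm absK \<alpha> \<Longrightarrow> \<alpha> \<in> mult_class absK \<alpha>"
  unfolding mult_class_def by (auto intro: exI[of _ 1])

lemma mclass_eq: assumes "mult_seminorm absK \<beta>" "\<beta> \<in> mult_class absK \<alpha>"
  shows "mult_class absK \<beta> = mult_class absK \<alpha>"
proof -
  obtain c where c: "c > 0" "\<And>d f. homogeneous d f \<Longrightarrow> \<beta> f = c ^ d * \<alpha> f"
    using assms(2) unfolding mult_class_def by blast
  show ?thesis
  proof
    show "mult_class absK \<beta> \<subseteq> mult_class absK \<alpha>"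
    proof
      fix \<gamma> assume "\<gamma> \<in> mult_class absK \<beta>"
      then obtain e where "mult_seminorm absK \<gamma>" "e > 0" "\<And>d f. homogeneous d f \<Longrightarrow> \<gamma> f = e ^ d * \<beta> f"
        unfolding mult_class_def by blast
      then show "\<gamma> \<in> mult_class absK \<alpha>" unfolding mult_class_def using c
        by (auto intro!: exI[of _ "e * c"] simp: power_mult_distrib)
    qed
    show "mult_class absK \<alpha> \<subseteq> mult_class absK \<beta>"
    proof
      fix \<gamma> assume "\<gamma> \<in> mult_class absK \<alpha>"
      then obtain e where e: "mult_seminorm absK \<gamma>" "e > 0" "\<And>d f. homogeneous d f \<Longrightarrow> \<gamma> f = e ^ d * \<alpha> f"
        unfolding mult_class_def by blast
      have "\<gamma> f = (e / c) ^ d * \<beta> f" if "homogeneous d f" for d f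
        using e(3)[OF that] c(2)[OF that] c(1) by (simp add: power_divide)
      then show "\<gamma> \<in> mult_class absK \<beta>" unfolding mult_class_def using e c by (auto intro!: exI[of _ "e / c"])
    qed
  qed
qed

lemma lin_seminorm: assumes "mult_seminorm absK \<alpha>" shows "seminorm absK (\<alpha> \<circ> lin)"
  unfolding seminorm_def o_def
proof (intro conjI allI)
  show "\<alpha> (lin x) \<ge> 0" for x using assms unfolding mult_seminorm_def by blast
  show "\<exists>x. \<alpha> (lin x) \<noteq> 0" using assms unfolding mult_seminorm_def by blast
  show "\<alpha> (lin (vsmul c x)) = absK c * \<alpha> (lin x)" for c x
    using assms unfolding mult_seminorm_def lin_vsmul by simp
  show "\<alpha> (lin (vadd x y)) \<le> max (\<alpha> (lin x)) (\<alpha> (lin y))" for x y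
    unfolding lin_vadd by (rule mult_ultra[OF assms])
qed

lemma r_class: assumes "mult_seminorm absK \<alpha>"
  shows "r_map absK (mult_class absK \<alpha>) = seminorm_class absK (\<alpha> \<circ> lin)"
proof -
  have "seminorm_class absK (\<beta> \<circ> lin) = seminorm_class absK (\<alpha> \<circ> lin)" if \<beta>: "\<beta> \<in> mult_class absK \<alpha>" for \<beta>
  proof -
    obtain c where c: "c > 0" "\<And>d f. homogeneous d f \<Longrightarrow> \<beta> f = c ^ d * \<alpha> f"
      using \<beta> unfolding mult_class_def by blast
    have "\<beta> \<circ> lin = (\<lambda>x. c * (\<alpha> \<circ> lin) x)" using c(2)[OF hom_lin] by (auto simp: o_def)
    then show ?thesis using sclass_scale[OF lin_seminorm[OF assms] c(1)] by simp
  qed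
  then have "(\<Union>\<beta>\<in>mult_class absK \<alpha>. seminorm_class absK (\<beta> \<circ> lin))
      = (\<Union>\<beta>\<in>mult_class absK \<alpha>. seminorm_class absK (\<alpha> \<circ> lin))"
    by (intro SUP_cong) simp_all
  also have "\<dots> = seminorm_class absK (\<alpha> \<circ> lin)"
  proof -
    have "mult_class absK \<alpha> \<noteq> {}" using mclass_mem[OF assms] by blast
    then show ?thesis by (simp add: UN_constant)
  qed
  finally show ?thesis unfolding r_map_def .
qed

lemma J_eq_fun: "sn absK \<gamma> \<Longrightarrow> canonical_wrt absK \<gamma> w \<Longrightarrow> J \<gamma> = Jr \<gamma> w"
  using J_eq by blast

lemma j_class: assumes "seminorm absK \<gamma>"
  shows "j_map absK (seminorm_class absK \<gamma>) = mult_class absK (J \<gamma>)"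
proof -
  have sn: "sn absK \<gamma>" by (rule seminorm_sn[OF assms])
  have each: "mult_class absK (j_rep absK \<gamma>' w) = mult_class absK (J \<gamma>)"
    if g': "\<gamma>' \<in> seminorm_class absK \<gamma>" and w: "canonical_wrt absK \<gamma>' w" for \<gamma>' w
  proof -
    obtain c where c: "seminorm absK \<gamma>'" "c > 0" "\<forall>x. \<gamma>' x = c * \<gamma> x"
      using g' unfolding seminorm_class_def by blast
    have eq: "\<gamma>' = (\<lambda>x. c * \<gamma> x)" using c(3) by auto
    have sn': "sn absK \<gamma>'" by (rule seminorm_sn[OF c(1)])
    have "j_rep absK \<gamma>' w = Jr \<gamma>' w" by (intro ext j_rep_eq canonical_basis[OF w])
    also have "\<dots> = J \<gamma>'" by (rule J_eq_fun[OF sn' w, symmetric])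
    finally have 1: "j_rep absK \<gamma>' w = J \<gamma>'" .
    have "J \<gamma>' \<in> mult_class absK (J \<gamma>)"
      unfolding mult_class_def using J_mult_seminorm[OF c(1)] c(2) J_scale[OF sn less_imp_le[OF c(2)]] eq
      by auto
    then show ?thesis unfolding 1 by (rule mclass_eq[OF J_mult_seminorm[OF c(1)]])
  qed
  have "j_map absK (seminorm_class absK \<gamma>) =
      (\<Union>\<gamma>'\<in>seminorm_class absK \<gamma>. \<Union>w\<in>{w. canonical_wrt absK \<gamma>' w}. mult_class absK (J \<gamma>))"
    unfolding j_map_def by (intro SUP_cong refl) (simp add: each)
  also have "\<dots> = mult_class absK (J \<gamma>)"
  proof
    show "(\<Union>\<gamma>'\<in>seminorm_class absK \<gamma>. \<Union>w\<in>{w. canonical_wrt absK \<gamma>' w}. mult_class absK (J \<gamma>)) \<subseteq> mult_class absK (J \<gamma>)"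
      by (rule UN_least) (rule UN_least, rule subset_refl)
    show "mult_class absK (J \<gamma>) \<subseteq> (\<Union>\<gamma>'\<in>seminorm_class absK \<gamma>. \<Union>w\<in>{w. canonical_wrt absK \<gamma>' w}. mult_class absK (J \<gamma>))"
      using sclass_mem[OF assms] Jb(1)[OF sn] by blast
  qed
  finally show ?thesis .
qed

end

context nlf
begin

lemma lin_cont: "continuous_map (mult_seminorm_top absK) (seminorm_top absK) (\<lambda>\<alpha>::('n::finite, 'k) sympoly \<Rightarrow> real. \<alpha> \<circ> lin)"
  unfolding seminorm_top_def
proof (rule continuous_map_into_subtopology)
  show "continuous_map (mult_seminorm_top absK) (product_topology (\<lambda>_. euclideanreal) UNIV) (\<lambda>\<alpha>::('n, 'k) sympoly \<Rightarrow> real. \<alpha> \<circ> lin)"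
    unfolding continuous_map_componentwise_UNIV o_def by (intro allI proj_cont_mult)
  show "(\<lambda>\<alpha>::('n, 'k) sympoly \<Rightarrow> real. \<alpha> \<circ> lin) \<in> topspace (mult_seminorm_top absK) \<rightarrow> {\<gamma>. seminorm absK \<gamma>}"
    using lin_seminorm topspace_mult_seminorm_top by auto
qed

lemma J_lin_fun: "sn absK \<gamma> \<Longrightarrow> J \<gamma> \<circ> lin = \<gamma>"
  by (rule ext) (simp add: J_lin)

lemma main_nlf:
  "continuous_map (Pan_top absK) (S_top absK) (r_map absK :: (('n::finite, 'k) sympoly \<Rightarrow> real) set \<Rightarrow> _)
   \<and> continuous_map (S_top absK) (Pan_top absK) (j_map absK :: (('n \<Rightarrow> 'k) \<Rightarrow> real) set \<Rightarrow> _)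
   \<and> (\<forall>C \<in> topspace (S_top absK). r_map absK (j_map absK C :: (('n, 'k) sympoly \<Rightarrow> real) set) = C)
   \<and> homeomorphic_map (S_top absK) (subtopology (Pan_top absK) (j_map absK ` topspace (S_top absK)))
        (j_map absK :: (('n \<Rightarrow> 'k) \<Rightarrow> real) set \<Rightarrow> (('n, 'k) sympoly \<Rightarrow> real) set)
   \<and> closedin (Pan_top absK) ((j_map absK :: (('n \<Rightarrow> 'k) \<Rightarrow> real) set \<Rightarrow> (('n, 'k) sympoly \<Rightarrow> real) set) ` topspace (S_top absK))"
proof -
  let ?S = "S_top absK :: (('n \<Rightarrow> 'k) \<Rightarrow> real) set topology"
  let ?P = "Pan_top absK :: (('n, 'k) sympoly \<Rightarrow> real) set topology"
  let ?r = "r_map absK :: (('n, 'k) sympoly \<Rightarrow> real) set \<Rightarrow> (('n \<Rightarrow> 'k) \<Rightarrow> real) set"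
  let ?j = "j_map absK :: (('n \<Rightarrow> 'k) \<Rightarrow> real) set \<Rightarrow> (('n, 'k) sympoly \<Rightarrow> real) set"
  have rcont: "continuous_map ?P ?S ?r"
    unfolding Pan_top_def
  proof (rule qt_univ)
    have "continuous_map (mult_seminorm_top absK) ?S (\<lambda>\<alpha>::('n, 'k) sympoly \<Rightarrow> real. seminorm_class absK (\<alpha> \<circ> lin))"
      unfolding S_top_def using continuous_map_compose[OF lin_cont qt_cont] by (simp add: o_def)
    then show "continuous_map (mult_seminorm_top absK) ?S (\<lambda>\<alpha>. ?r (mult_class absK \<alpha>))"
      by (rule continuous_map_eq) (simp add: topspace_mult_seminorm_top r_class)
  qed
  have jcont: "continuous_map ?S ?P ?j"
    unfolding S_top_def
  proof (rule qt_univ)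
    have "continuous_map (seminorm_top absK) ?P (\<lambda>\<gamma>::('n \<Rightarrow> 'k) \<Rightarrow> real. mult_class absK (J \<gamma>))"
      unfolding Pan_top_def using continuous_map_compose[OF J_cont_map qt_cont] by (simp add: o_def)
    then show "continuous_map (seminorm_top absK) ?P (\<lambda>\<gamma>. ?j (seminorm_class absK \<gamma>))"
      by (rule continuous_map_eq) (simp add: topspace_seminorm_top j_class)
  qed
  have jC: "\<exists>\<gamma>. seminorm absK \<gamma> \<and> C = seminorm_class absK \<gamma> \<and> ?j C = mult_class absK (J \<gamma>)"
    if "C \<in> topspace ?S" for C
    using that unfolding sclass_topspace by (auto simp: j_class)
  have rj: "\<forall>C \<in> topspace ?S. ?r (?j C) = C"
  proof
    fix C assume "C \<in> topspace ?S"
    then obtain \<gamma> where g: "seminorm absK \<gamma>" "C = seminorm_class absK \<gamma>" "?j C = mult_class absK (J \<gamma>)"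
      using jC by blast
    have "?r (?j C) = seminorm_class absK (J \<gamma> \<circ> lin)"
      unfolding g(3) by (rule r_class[OF J_mult_seminorm[OF g(1)]])
    also have "J \<gamma> \<circ> lin = \<gamma>" by (rule J_lin_fun[OF seminorm_sn[OF g(1)]])
    finally show "?r (?j C) = C" using g(2) by simp
  qed
  have homeo: "homeomorphic_map ?S (subtopology ?P (?j ` topspace ?S)) ?j"
    unfolding homeomorphic_map_maps
  proof (intro exI[of _ ?r])
    show "homeomorphic_maps ?S (subtopology ?P (?j ` topspace ?S)) ?j ?r"
      unfolding homeomorphic_maps_def
    proof (intro conjI)
      show "continuous_map ?S (subtopology ?P (?j ` topspace ?S)) ?j"
        by (rule continuous_map_into_subtopology[OF jcont]) auto
      show "continuous_map (subtopology ?P (?j ` topspace ?S)) ?S ?r"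
        by (rule continuous_map_from_subtopology[OF rcont])
      show "\<forall>x\<in>topspace ?S. ?r (?j x) = x" by (rule rj)
      show "\<forall>y\<in>topspace (subtopology ?P (?j ` topspace ?S)). ?j (?r y) = y"
        using rj by (auto simp: topspace_subtopology)
    qed
  qed
  define H :: "(('n, 'k) sympoly \<Rightarrow> real) set" where "H = {\<alpha> \<in> topspace (mult_seminorm_top absK). \<forall>d f. homogeneous d f \<longrightarrow> \<alpha> f = J (\<alpha> \<circ> lin) f}"
  have Heq: "{\<alpha> \<in> topspace (mult_seminorm_top absK). mult_class absK \<alpha> \<in> ?j ` topspace ?S} = H"
  proof
    show "{\<alpha> \<in> topspace (mult_seminorm_top absK). mult_class absK \<alpha> \<in> ?j ` topspace ?S} \<subseteq> H"
    proof
      fix \<alpha> assume a: "\<alpha> \<in> {\<alpha> \<in> topspace (mult_seminorm_top absK). mult_class absK \<alpha> \<in> ?j ` topspace ?S}"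
      then have ms: "mult_seminorm absK \<alpha>" using topspace_mult_seminorm_top by auto
      obtain C where C: "C \<in> topspace ?S" "mult_class absK \<alpha> = ?j C" using a by auto
      obtain \<gamma> where g: "seminorm absK \<gamma>" "?j C = mult_class absK (J \<gamma>)" using jC[OF C(1)] by blast
      have sn: "sn absK \<gamma>" by (rule seminorm_sn[OF g(1)])
      have "\<alpha> \<in> mult_class absK (J \<gamma>)" using mclass_mem[OF ms] C(2) g(2) by simp
      then obtain c where c: "c > 0" "\<And>d f. homogeneous d f \<Longrightarrow> \<alpha> f = c ^ d * J \<gamma> f"
        unfolding mult_class_def by blast
      have al: "\<alpha> \<circ> lin = (\<lambda>x. c * \<gamma> x)"
        using c(2)[OF hom_lin] J_lin[OF sn] by (auto simp: o_def)
      have "\<alpha> f = J (\<alpha> \<circ> lin) f" if "homogeneous d f" for d f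
        unfolding al J_scale[OF sn less_imp_le[OF c(1)] that] c(2)[OF that] ..
      then show "\<alpha> \<in> H" unfolding H_def using a by blast
    qed
    show "H \<subseteq> {\<alpha> \<in> topspace (mult_seminorm_top absK). mult_class absK \<alpha> \<in> ?j ` topspace ?S}"
    proof
      fix \<alpha> assume a: "\<alpha> \<in> H"
      then have ms: "mult_seminorm absK \<alpha>" and top: "\<alpha> \<in> topspace (mult_seminorm_top absK)"
        unfolding H_def using topspace_mult_seminorm_top by auto
      have sg: "seminorm absK (\<alpha> \<circ> lin)" by (rule lin_seminorm[OF ms])
      have "\<alpha> \<in> mult_class absK (J (\<alpha> \<circ> lin))"
        unfolding mult_class_def using ms a unfolding H_def by (auto intro!: exI[of _ 1])
      then have "mult_class absK \<alpha> = mult_class absK (J (\<alpha> \<circ> lin))" by (rule mclass_eq[OF ms])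
      also have "\<dots> = ?j (seminorm_class absK (\<alpha> \<circ> lin))" by (rule j_class[OF sg, symmetric])
      finally have "mult_class absK \<alpha> \<in> ?j ` topspace ?S"
        unfolding sclass_topspace using sg by auto
      then show "\<alpha> \<in> {\<alpha> \<in> topspace (mult_seminorm_top absK). mult_class absK \<alpha> \<in> ?j ` topspace ?S}"
        using top by simp
    qed
  qed
  have Hclosed: "closedin (mult_seminorm_top absK) H"
  proof -
    define K where "K = (\<lambda>f. {\<alpha> \<in> topspace (mult_seminorm_top absK). \<alpha> f = J (\<alpha> \<circ> lin) f}) ` {f :: ('n, 'k) sympoly. \<exists>d. homogeneous d f}"
    have "K \<noteq> {}" unfolding K_def using hom_zero by blast
    moreover have "closedin (mult_seminorm_top absK) S" if SK: "S \<in> K" for S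
    proof -
      obtain f where f: "S = {\<alpha> \<in> topspace (mult_seminorm_top absK). \<alpha> f = J (\<alpha> \<circ> lin) f}"
        using SK unfolding K_def by blast
      have c2: "continuous_map (mult_seminorm_top absK) euclideanreal (\<lambda>\<alpha>::('n, 'k) sympoly \<Rightarrow> real. J (\<alpha> \<circ> lin) f)"
        using continuous_map_compose[OF lin_cont J_continuous[of f]] by (simp add: o_def)
      show ?thesis unfolding f
        by (rule closedin_continuous_maps_eq[OF Hausdorff_space_euclidean proj_cont_mult c2])
    qed
    ultimately have "closedin (mult_seminorm_top absK) (\<Inter>K)" by (rule closedin_Inter)
    moreover have "\<Inter>K = H" unfolding K_def H_def using hom_zero by auto
    ultimately show ?thesis by simp
  qed
  have closed: "closedin ?P (?j ` topspace ?S)"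
    unfolding Pan_top_def qt_closed
  proof
    show "?j ` topspace ?S \<subseteq> mult_class absK ` topspace (mult_seminorm_top absK)"
      using jC J_mult_seminorm topspace_mult_seminorm_top by fastforce
    show "closedin (mult_seminorm_top absK) {\<alpha> \<in> topspace (mult_seminorm_top absK). mult_class absK \<alpha> \<in> ?j ` topspace ?S}"
      unfolding Heq by (rule Hclosed)
  qed
  show ?thesis using rcont jcont rj homeo closed by blast
qed

end

theorem proposition6p1:
  fixes absK :: "'k::field \<Rightarrow> real"
    and r :: "(('n::finite, 'k) sympoly \<Rightarrow> real) set \<Rightarrow> (('n \<Rightarrow> 'k) \<Rightarrow> real) set"
    and j :: "(('n \<Rightarrow> 'k) \<Rightarrow> real) set \<Rightarrow> (('n, 'k) sympoly \<Rightarrow> real) set"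
  assumes "nonarch_local_field absK"
    and "r = r_map absK"
    and "j = j_map absK"
  shows "continuous_map (Pan_top absK) (S_top absK) r
       \<and> continuous_map (S_top absK) (Pan_top absK) j
       \<and> (\<forall>C \<in> topspace (S_top absK). r (j C) = C)
       \<and> homeomorphic_map (S_top absK) (subtopology (Pan_top absK) (j ` topspace (S_top absK))) j
       \<and> closedin (Pan_top absK) (j ` topspace (S_top absK))"
proof -
  interpret nlf absK by (rule nlf.intro) (rule assms(1))
  show ?thesis unfolding assms(2,3) by (rule main_nlf)
qed

end
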